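(* Let $(T,\mathbf r)$ be the ranked fission tree of $Q$ and $\mathbf U$ the kernel flag of $Q$ (defined below). Then (i) $\operatorname{Stab}_{W_{\mathfrak g}}(\mathbf U)\cong\widetilde{\mathrm{Aut}}(T,\mathbf r)$, where for any ranked tree the group $\widetilde{\mathrm{Aut}}$ is defined recursively by $\widetilde{\mathrm{Aut}}(\text{single node of rank } r)=\mathrm S_r$ and $$\widetilde{\mathrm{Aut}}(T,\mathbf r)=\prod_{t\in\widetilde{\mathcal T}}\mathrm S_{n(t)}\wr\widetilde{\mathrm{Aut}}(t,\mathbf r|_t);$$ (ii) the automorphism group satisfies $\mathrm{Aut}(T,\mathbf r)\cong\prod_{t\in\widetilde{\mathcal T}}\mathrm S_{n(t)}\wr\mathrm{Aut}(t,\mathbf r|_t)$, and the automorphism group of a single-node ranked tree is trivial (so $\mathrm{Aut}(T,\mathbf r)$ is obtained by the same recursion as $\widetilde{\mathrm{Aut}}$ with trivial groups at the leaves).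
   Context: Let $n\ge2$, $\mathfrak g=\mathfrak{sl}_n(\mathbb C)$, $\mathfrak t=\{x\in\mathbb C^n:\sum x_a=0\}$, $W_{\mathfrak g}=\mathrm S_n$ permuting coordinates. Fix $p\ge1$, $A_1,\dots,A_p\in\mathfrak t$. For $l\in\{1,\dots,p+1\}$ let $P_l$ be the partition of $\underline n=\{1,\dots,n\}$ in which $a,b$ lie in the same part iff $(A_j)_a=(A_j)_b$ for all $j$ with $l\le j\le p$ (so $P_{p+1}=\{\underline n\}$). Let $U_l=\{x\in\mathfrak t: x_a=x_b$ whenever $a,b$ are in the same part of $P_l\}$ and $\operatorname{Stab}_{W_{\mathfrak g}}(\mathbf U)=\{w\in\mathrm S_n: w(U_l)\subseteq U_l\ \forall l\in\{1,\dots,p\}\}$. Ranked fission tree $(T,\mathbf r)$: nodes are pairs $(l,L)$ with $L$ a part of $P_l$, $1\le l\le p+1$; the root is $(p+1,\underline n)$; the parent of $(l,L)$, $l\le p$, is $(l+1,L')$ with $L'\supseteq L$ the part of $P_{l+1}$; the rank is $\mathbf r(l,L)=|L|$; leaves are the nodes at level 1. In general a ranked tree is a rooted tree with a positive-integer rank on nodes; an isomorphism of ranked trees is a bijection of node sets sending root to root, commuting with the parent maps and preserving ranks; $\mathrm{Aut}(T,\mathbf r)$ is the group of self-isomorphisms. The maximal proper subtrees of $T$ are the subtrees $t$ consisting of a child of the root and all its descendants, with restricted rank $\mathbf r|_t$; $\widetilde{\mathcal T}$ is a set of representatives of their isomorphism classes and $n(t)$ is the number of maximal proper subtrees isomorphic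 to $t$. For a group $P$ and $m\ge0$, $\mathrm S_m\wr P=\mathrm S_m\ltimes P^m$ with $\sigma\cdot(x_1,\dots,x_m)=(x_{\sigma^{-1}(1)},\dots,x_{\sigma^{-1}(m)})$. *)

theory Defs
  imports Complex_Main "HOL-Algebra.Sym_Groups"
begin

definition symg :: "nat \<Rightarrow> (nat \<Rightarrow> nat) monoid" where
  "symg r = \<lparr>carrier = {s. s permutes {..<r}}, mult = (\<circ>), one = id\<rparr>"

text \<open>Wreath product S_m wr P = S_m semidirect P^m, elements (s, [x_0,...,x_(m-1)]),
  with s.(x_0,...,x_(m-1)) = (x_(s^-1 0), ..., x_(s^-1 (m-1))) and
  (s,x)(t,y) = (s t, x (s.y)).\<close>
definition wreath :: "nat \<Rightarrow> ('a, 'b) monoid_scheme \<Rightarrow> ((nat \<Rightarrow> nat) \<times> 'a list) monoid" where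
  "wreath m P = \<lparr>carrier = {(s, xs). s permutes {..<m} \<and> length xs = m \<and> set xs \<subseteq> carrier P},
     mult = (\<lambda>(s, xs) (t, ys). (s \<circ> t, map (\<lambda>i. mult P (xs ! i) (ys ! (inv_into UNIV s i))) [0..<m])),
     one = (id, replicate m (one P))\<rparr>"

definition dprod :: "('a, 'b) monoid_scheme list \<Rightarrow> 'a list monoid" where
  "dprod Gs = \<lparr>carrier = {xs. length xs = length Gs \<and> (\<forall>i<length Gs. xs ! i \<in> carrier (Gs ! i))},
     mult = (\<lambda>xs ys. map (\<lambda>i. mult (Gs ! i) (xs ! i) (ys ! i)) [0..<length Gs]),
     one = map (\<lambda>G. one G) Gs\<rparr>"

text \<open>Transport of a group structure along an (injective) map; used only to put
  all groups occurring in the recursive definition of tilde-Aut on one element type.\<close>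
definition transport :: "('a \<Rightarrow> 'c) \<Rightarrow> ('a, 'b) monoid_scheme \<Rightarrow> 'c monoid" where
  "transport f G = \<lparr>carrier = f ` carrier G,
     mult = (\<lambda>x y. f (mult G (inv_into (carrier G) f x) (inv_into (carrier G) f y))),
     one = f (one G)\<rparr>"

datatype gel = GPerm "nat \<Rightarrow> nat" | GWr "nat \<Rightarrow> nat" "gel list" | GProd "gel list"

definition gsym :: "nat \<Rightarrow> gel monoid" where
  "gsym r = transport GPerm (symg r)"

definition gwreath :: "nat \<Rightarrow> gel monoid \<Rightarrow> gel monoid" where
  "gwreath m P = transport (\<lambda>(s, xs). GWr s xs) (wreath m P)"

definition gprod :: "gel monoid list \<Rightarrow> gel monoid" where
  "gprod Gs = transport GProd (dprod Gs)"

record 'v rtree =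
  rt_nodes :: "'v set"
  rt_root :: 'v
  rt_par :: "'v \<Rightarrow> 'v"
  rt_rank :: "'v \<Rightarrow> nat"

definition rt_iso :: "'v rtree \<Rightarrow> 'w rtree \<Rightarrow> ('v \<Rightarrow> 'w) \<Rightarrow> bool" where
  "rt_iso T1 T2 f \<longleftrightarrow> bij_betw f (rt_nodes T1) (rt_nodes T2) \<and> f (rt_root T1) = rt_root T2 \<and>
     (\<forall>v\<in>rt_nodes T1 - {rt_root T1}. f (rt_par T1 v) = rt_par T2 (f v)) \<and>
     (\<forall>v\<in>rt_nodes T1. rt_rank T2 (f v) = rt_rank T1 v)"

definition rt_isomorphic :: "'v rtree \<Rightarrow> 'w rtree \<Rightarrow> bool" where
  "rt_isomorphic T1 T2 \<longleftrightarrow> (\<exists>f. rt_iso T1 T2 f)"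

definition rt_aut :: "'v rtree \<Rightarrow> ('v \<Rightarrow> 'v) monoid" where
  "rt_aut T = \<lparr>carrier = {f. rt_iso T T f \<and> (\<forall>x. x \<notin> rt_nodes T \<longrightarrow> f x = x)},
     mult = (\<circ>), one = id\<rparr>"

definition rt_children :: "'v rtree \<Rightarrow> 'v set" where
  "rt_children T = {c \<in> rt_nodes T. c \<noteq> rt_root T \<and> rt_par T c = rt_root T}"

definition rt_subtree :: "'v rtree \<Rightarrow> 'v \<Rightarrow> 'v rtree" where
  "rt_subtree T c = \<lparr>rt_nodes = {v \<in> rt_nodes T. \<exists>k. (rt_par T ^^ k) v = c},
     rt_root = c, rt_par = rt_par T, rt_rank = rt_rank T\<rparr>"

definition rt_reps :: "'v rtree \<Rightarrow> 'v list \<Rightarrow> bool" where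
  "rt_reps T cs \<longleftrightarrow> set cs \<subseteq> rt_children T \<and>
     (\<forall>c\<in>rt_children T. \<exists>d\<in>set cs. rt_isomorphic (rt_subtree T c) (rt_subtree T d)) \<and>
     (\<forall>i<length cs. \<forall>j<length cs. i \<noteq> j \<longrightarrow>
        \<not> rt_isomorphic (rt_subtree T (cs ! i)) (rt_subtree T (cs ! j)))"

definition rt_some_reps :: "'v rtree \<Rightarrow> 'v list" where
  "rt_some_reps T = (SOME cs. rt_reps T cs)"

definition rt_mult :: "'v rtree \<Rightarrow> 'v \<Rightarrow> nat" where
  "rt_mult T c = card {d \<in> rt_children T. rt_isomorphic (rt_subtree T d) (rt_subtree T c)}"

fun atilde_aux :: "nat \<Rightarrow> 'v rtree \<Rightarrow> gel monoid" where
  "atilde_aux 0 T = gsym (rt_rank T (rt_root T))"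
| "atilde_aux (Suc k) T =
     (if rt_nodes T = {rt_root T} then gsym (rt_rank T (rt_root T))
      else gprod (map (\<lambda>c. gwreath (rt_mult T c) (atilde_aux k (rt_subtree T c)))
                      (rt_some_reps T)))"

definition atilde :: "'v rtree \<Rightarrow> gel monoid" where
  "atilde T = atilde_aux (card (rt_nodes T)) T"

text \<open>A j a is the a-th coordinate of A_j (1 \<le> j \<le> p, 1 \<le> a \<le> n).
  Vectors of C^n are functions nat \<Rightarrow> complex vanishing off {1..n}.\<close>
definition cartan_t :: "nat \<Rightarrow> (nat \<Rightarrow> complex) set" where
  "cartan_t n = {x. (\<forall>a. a \<notin> {1..n} \<longrightarrow> x a = 0) \<and> (\<Sum>a=1..n. x a) = 0}"

definition same_part :: "nat \<Rightarrow> (nat \<Rightarrow> nat \<Rightarrow> complex) \<Rightarrow> nat \<Rightarrow> nat \<Rightarrow> nat \<Rightarrow> bool" where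
  "same_part p A l a b \<longleftrightarrow> (\<forall>j. l \<le> j \<and> j \<le> p \<longrightarrow> A j a = A j b)"

definition parts :: "nat \<Rightarrow> nat \<Rightarrow> (nat \<Rightarrow> nat \<Rightarrow> complex) \<Rightarrow> nat \<Rightarrow> nat set set" where
  "parts n p A l = (\<lambda>a. {b \<in> {1..n}. same_part p A l a b}) ` {1..n}"

definition Ukf :: "nat \<Rightarrow> nat \<Rightarrow> (nat \<Rightarrow> nat \<Rightarrow> complex) \<Rightarrow> nat \<Rightarrow> (nat \<Rightarrow> complex) set" where
  "Ukf n p A l = {x \<in> cartan_t n. \<forall>a\<in>{1..n}. \<forall>b\<in>{1..n}. same_part p A l a b \<longrightarrow> x a = x b}"

definition perm_act :: "(nat \<Rightarrow> nat) \<Rightarrow> (nat \<Rightarrow> complex) \<Rightarrow> (nat \<Rightarrow> complex)" where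
  "perm_act w x = (\<lambda>a. x (inv_into UNIV w a))"

definition stab_group :: "nat \<Rightarrow> nat \<Rightarrow> (nat \<Rightarrow> nat \<Rightarrow> complex) \<Rightarrow> (nat \<Rightarrow> nat) monoid" where
  "stab_group n p A = \<lparr>carrier = {w. w permutes {1..n} \<and>
        (\<forall>l\<in>{1..p}. perm_act w ` Ukf n p A l \<subseteq> Ukf n p A l)},
     mult = (\<circ>), one = id\<rparr>"

definition fission_tree :: "nat \<Rightarrow> nat \<Rightarrow> (nat \<Rightarrow> nat \<Rightarrow> complex) \<Rightarrow> (nat \<times> nat set) rtree" where
  "fission_tree n p A = \<lparr>rt_nodes = {(l, L). l \<in> {1..p+1} \<and> L \<in> parts n p A l},
     rt_root = (p + 1, {1..n}),
     rt_par = (\<lambda>(l, L). (l + 1, THE L'. L' \<in> parts n p A (l + 1) \<and> L \<subseteq> L')),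
     rt_rank = (\<lambda>(l, L). card L)\<rparr>"

end

theory Submission
  imports Defs
begin

definition rcomp :: "'a set \<Rightarrow> ('a \<Rightarrow> 'a) \<Rightarrow> ('a \<Rightarrow> 'a) \<Rightarrow> 'a \<Rightarrow> 'a" where
  "rcomp X g f = (\<lambda>x. if x \<in> X then g (f x) else x)"
definition rinv :: "'a set \<Rightarrow> ('a \<Rightarrow> 'a) \<Rightarrow> 'a \<Rightarrow> 'a" where
  "rinv X f = (\<lambda>x. if x \<in> f ` X then inv_into X f x else x)"
definition rs :: "'a set \<Rightarrow> ('a \<Rightarrow> 'a) \<Rightarrow> 'a \<Rightarrow> 'a" where
  "rs X w = (\<lambda>x. if x \<in> X then w x else x)"
definition rb :: "'a set \<Rightarrow> 'a set \<Rightarrow> ('a \<Rightarrow> 'a) set" where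
  "rb X Y = {f. bij_betw f X Y \<and> (\<forall>x. x \<notin> X \<longrightarrow> f x = x)}"

lemma rb_in: "f \<in> rb X Y \<Longrightarrow> x \<in> X \<Longrightarrow> f x \<in> Y"
  unfolding rb_def bij_betw_def by auto
lemma rb_out: "f \<in> rb X Y \<Longrightarrow> x \<notin> X \<Longrightarrow> f x = x"
  unfolding rb_def by auto
lemma rb_inj: "f \<in> rb X Y \<Longrightarrow> x \<in> X \<Longrightarrow> y \<in> X \<Longrightarrow> f x = f y \<Longrightarrow> x = y"
  unfolding rb_def bij_betw_def inj_on_def by auto
lemma rb_img: "f \<in> rb X Y \<Longrightarrow> f ` X = Y"
  unfolding rb_def bij_betw_def by auto
lemma rinv_in: "f \<in> rb X Y \<Longrightarrow> y \<in> Y \<Longrightarrow> rinv X f y \<in> X"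
  unfolding rb_def rinv_def bij_betw_def by (auto intro: inv_into_into)
lemma rinv_right: "f \<in> rb X Y \<Longrightarrow> y \<in> Y \<Longrightarrow> f (rinv X f y) = y"
  unfolding rb_def rinv_def bij_betw_def by (auto simp: f_inv_into_f)
lemma rinv_left: "f \<in> rb X Y \<Longrightarrow> x \<in> X \<Longrightarrow> rinv X f (f x) = x"
  unfolding rb_def rinv_def bij_betw_def by (auto simp: inv_into_f_f)
lemma rinv_out: "f \<in> rb X Y \<Longrightarrow> y \<notin> Y \<Longrightarrow> rinv X f y = y"
  unfolding rb_def rinv_def bij_betw_def by auto
lemma rcomp_in: "x \<in> X \<Longrightarrow> rcomp X g f x = g (f x)"
  unfolding rcomp_def by auto
lemma rcomp_out: "x \<notin> X \<Longrightarrow> rcomp X g f x = x"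
  unfolding rcomp_def by auto
lemma rs_in: "x \<in> X \<Longrightarrow> rs X g x = g x"
  unfolding rs_def by auto
lemma rs_out: "x \<notin> X \<Longrightarrow> rs X g x = x"
  unfolding rs_def by auto

lemma rb_comp: "f \<in> rb X Y \<Longrightarrow> g \<in> rb Y Z \<Longrightarrow> rcomp X g f \<in> rb X Z"
proof -
  assume f: "f \<in> rb X Y" and g: "g \<in> rb Y Z"
  have b1: "bij_betw f X Y" and b2: "bij_betw g Y Z" using f g unfolding rb_def by auto
  have "bij_betw (g \<circ> f) X Z" using bij_betw_trans[OF b1 b2] .
  moreover have "\<And>x. x \<in> X \<Longrightarrow> rcomp X g f x = (g \<circ> f) x" by (simp add: rcomp_in)
  ultimately have "bij_betw (rcomp X g f) X Z" using bij_betw_cong[of X "rcomp X g f" "g \<circ> f" Z] by simp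
  moreover have "\<forall>x. x \<notin> X \<longrightarrow> rcomp X g f x = x" by (simp add: rcomp_out)
  ultimately show ?thesis unfolding rb_def by simp
qed

lemma rb_rinv: "f \<in> rb X Y \<Longrightarrow> rinv X f \<in> rb Y X"
proof -
  assume f: "f \<in> rb X Y"
  have b: "bij_betw f X Y" using f unfolding rb_def by auto
  have "bij_betw (inv_into X f) Y X" using bij_betw_inv_into[OF b] .
  moreover have "\<And>y. y \<in> Y \<Longrightarrow> rinv X f y = inv_into X f y" using b unfolding rinv_def bij_betw_def by auto
  ultimately have "bij_betw (rinv X f) Y X" using bij_betw_cong[of Y "rinv X f" "inv_into X f" X] by simp
  moreover have "\<forall>y. y \<notin> Y \<longrightarrow> rinv X f y = y" using rinv_out[OF f] by blast
  ultimately show ?thesis unfolding rb_def by simp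
qed

lemma rb_id: "id \<in> rb X X"
  unfolding rb_def by auto

locale rbij =
  fixes C :: "'c set" and S :: "'c \<Rightarrow> 'a set" and Iso :: "'c \<Rightarrow> 'c \<Rightarrow> ('a \<Rightarrow> 'a) set"
  assumes finC: "finite C"
    and S_ne: "c \<in> C \<Longrightarrow> S c \<noteq> {}"
    and S_disj: "c \<in> C \<Longrightarrow> d \<in> C \<Longrightarrow> c \<noteq> d \<Longrightarrow> S c \<inter> S d = {}"
    and Iso_rb: "c \<in> C \<Longrightarrow> d \<in> C \<Longrightarrow> f \<in> Iso c d \<Longrightarrow> f \<in> rb (S c) (S d)"
    and Iso_id: "c \<in> C \<Longrightarrow> id \<in> Iso c c"
    and Iso_comp: "c \<in> C \<Longrightarrow> d \<in> C \<Longrightarrow> e \<in> C \<Longrightarrow> f \<in> Iso c d \<Longrightarrow> g \<in> Iso d e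
        \<Longrightarrow> rcomp (S c) g f \<in> Iso c e"
    and Iso_inv: "c \<in> C \<Longrightarrow> d \<in> C \<Longrightarrow> f \<in> Iso c d \<Longrightarrow> rinv (S c) f \<in> Iso d c"
begin

definition glob :: "(('c \<Rightarrow> 'c) \<times> ('c \<Rightarrow> 'a \<Rightarrow> 'a)) monoid" where
  "glob = \<lparr>carrier = {(\<pi>, \<phi>). \<pi> permutes C \<and> (\<forall>c\<in>C. \<phi> c \<in> Iso c (\<pi> c)) \<and> (\<forall>c. c \<notin> C \<longrightarrow> \<phi> c = undefined)},
     mult = (\<lambda>(\<pi>, \<phi>) (\<pi>', \<phi>'). (\<pi> \<circ> \<pi>', \<lambda>c. if c \<in> C then rcomp (S c) (\<phi> (\<pi>' c)) (\<phi>' c) else undefined)),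
     one = (id, \<lambda>c. if c \<in> C then id else undefined)\<rparr>"

lemma Iso_target_unique:
  assumes "c \<in> C" "d \<in> C" "d' \<in> C" "f \<in> Iso c d" "f \<in> Iso c d'"
  shows "d = d'"
proof -
  have "f ` S c = S d" "f ` S c = S d'" using assms Iso_rb rb_img by blast+
  then show ?thesis using S_ne S_disj assms by fastforce
qed

lemma cell_unique: "c \<in> C \<Longrightarrow> d \<in> C \<Longrightarrow> x \<in> S c \<Longrightarrow> x \<in> S d \<Longrightarrow> c = d"
  using S_disj by blast

lemma glob_iso:
  fixes G :: "('a \<Rightarrow> 'a) monoid"
  assumes carrG: "carrier G = {w. (\<forall>x. x \<notin> (\<Union>c\<in>C. S c) \<longrightarrow> w x = x) \<and>
                    (\<exists>\<pi>. \<pi> permutes C \<and> (\<forall>c\<in>C. rs (S c) w \<in> Iso c (\<pi> c)))}"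
    and multG: "\<And>x y. x \<in> carrier G \<Longrightarrow> y \<in> carrier G \<Longrightarrow> mult G x y = x \<circ> y"
  shows "G \<cong> glob"
proof -
  define pw where "pw w = (\<lambda>c. if c \<in> C then (THE d. d \<in> C \<and> rs (S c) w \<in> Iso c d) else c)" for w
  define Phi where "Phi w = (pw w, \<lambda>c. if c \<in> C then rs (S c) w else undefined)" for w
  have carrD: "\<exists>\<pi>. \<pi> permutes C \<and> (\<forall>c\<in>C. rs (S c) w \<in> Iso c (\<pi> c))" if "w \<in> carrier G" for w
    using that unfolding carrG by blast
  have carrD2: "w x = x" if "w \<in> carrier G" "\<forall>c\<in>C. x \<notin> S c" for w x
    using that unfolding carrG by blast
  have pw_eq: "pw w = \<pi>" if "\<pi> permutes C" "\<forall>c\<in>C. rs (S c) w \<in> Iso c (\<pi> c)" for w \<pi>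
  proof
    fix c show "pw w c = \<pi> c"
    proof (cases "c \<in> C")
      case True
      have pc: "\<pi> c \<in> C" using permutes_in_image[OF that(1)] True by simp
      have "(THE d. d \<in> C \<and> rs (S c) w \<in> Iso c d) = \<pi> c"
        apply (rule the_equality)
        using pc that(2) True apply blast
        using Iso_target_unique pc that(2) True by blast
      then show ?thesis unfolding pw_def using True by simp
    next
      case False then show ?thesis unfolding pw_def using that(1) permutes_not_in by metis
    qed
  qed
  have Phi_in: "Phi w \<in> carrier glob" if wG: "w \<in> carrier G" for w
  proof -
    obtain \<pi> where p: "\<pi> permutes C" "\<forall>c\<in>C. rs (S c) w \<in> Iso c (\<pi> c)" using carrD[OF wG] by blast
    show ?thesis unfolding Phi_def glob_def pw_eq[OF p] using p by simp
  qed
  have hom: "Phi (mult G x y) = mult glob (Phi x) (Phi y)" if xyG: "x \<in> carrier G" "y \<in> carrier G" for x y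
  proof -
    obtain \<pi> where p: "\<pi> permutes C" "\<forall>c\<in>C. rs (S c) x \<in> Iso c (\<pi> c)" using carrD[OF xyG(1)] by blast
    obtain \<pi>' where p': "\<pi>' permutes C" "\<forall>c\<in>C. rs (S c) y \<in> Iso c (\<pi>' c)" using carrD[OF xyG(2)] by blast
    have inC: "\<pi>' c \<in> C" "\<pi> (\<pi>' c) \<in> C" if "c \<in> C" for c
      using permutes_in_image[OF p(1)] permutes_in_image[OF p'(1)] that by simp_all
    have eq: "rs (S c) (x \<circ> y) = rcomp (S c) (rs (S (\<pi>' c)) x) (rs (S c) y)" if c: "c \<in> C" for c
    proof
      fix z show "rs (S c) (x \<circ> y) z = rcomp (S c) (rs (S (\<pi>' c)) x) (rs (S c) y) z"
      proof (cases "z \<in> S c")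
        case True
        have "rs (S c) y \<in> rb (S c) (S (\<pi>' c))" using Iso_rb[OF c inC(1)[OF c]] p'(2) c by blast
        then have "rs (S c) y z \<in> S (\<pi>' c)" using rb_in True by metis
        then have "y z \<in> S (\<pi>' c)" using True by (simp add: rs_in)
        then show ?thesis using True by (simp add: rs_in rcomp_in)
      next
        case False then show ?thesis by (simp add: rs_out rcomp_out)
      qed
    qed
    have "\<forall>c\<in>C. rs (S c) (x \<circ> y) \<in> Iso c ((\<pi> \<circ> \<pi>') c)"
    proof
      fix c assume c: "c \<in> C"
      show "rs (S c) (x \<circ> y) \<in> Iso c ((\<pi> \<circ> \<pi>') c)"
      proof -
        have a: "rs (S c) y \<in> Iso c (\<pi>' c)" using p'(2) c by blast
        have b: "rs (S (\<pi>' c)) x \<in> Iso (\<pi>' c) (\<pi> (\<pi>' c))" using p(2) inC(1)[OF c] by blast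
        show ?thesis unfolding eq[OF c] comp_apply using Iso_comp[OF c inC[OF c] a b] .
      qed
    qed
    then have pwxy: "pw (x \<circ> y) = \<pi> \<circ> \<pi>'" using pw_eq permutes_compose[OF p'(1) p(1)] by blast
    have 2: "(\<lambda>c. if c \<in> C then rs (S c) (x \<circ> y) else undefined) =
       (\<lambda>c. if c \<in> C then rcomp (S c) ((\<lambda>c. if c \<in> C then rs (S c) x else undefined) (\<pi>' c))
                      ((\<lambda>c. if c \<in> C then rs (S c) y else undefined) c) else undefined)"
    proof
      fix c show "(if c \<in> C then rs (S c) (x \<circ> y) else undefined) =
        (if c \<in> C then rcomp (S c) ((\<lambda>c. if c \<in> C then rs (S c) x else undefined) (\<pi>' c))
                      ((\<lambda>c. if c \<in> C then rs (S c) y else undefined) c) else undefined)"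
        using eq inC by simp
    qed
    show ?thesis unfolding multG[OF xyG] Phi_def glob_def pwxy pw_eq[OF p] pw_eq[OF p']
      using 2 by simp
  qed
  have inj: "inj_on Phi (carrier G)"
  proof
    fix x y assume xy: "x \<in> carrier G" "y \<in> carrier G" "Phi x = Phi y"
    show "x = y"
    proof
      fix z
      show "x z = y z"
      proof (cases "\<exists>c\<in>C. z \<in> S c")
        case True
        then obtain c where c: "c \<in> C" "z \<in> S c" by blast
        have "(\<lambda>c. if c \<in> C then rs (S c) x else undefined) = (\<lambda>c. if c \<in> C then rs (S c) y else undefined)"
          using xy(3) unfolding Phi_def by simp
        then have "rs (S c) x = rs (S c) y" using c(1) by metis
        then show ?thesis using c by (metis rs_in)
      next
        case False then show ?thesis using carrD2 xy by metis
      qed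
    qed
  qed
  have surj: "carrier glob \<subseteq> Phi ` carrier G"
  proof
    fix g assume g: "g \<in> carrier glob"
    obtain \<pi> \<phi> where g': "g = (\<pi>, \<phi>)" by fastforce
    have p: "\<pi> permutes C" "\<forall>c\<in>C. \<phi> c \<in> Iso c (\<pi> c)" "\<forall>c. c \<notin> C \<longrightarrow> \<phi> c = undefined"
      using g unfolding g' glob_def by simp_all
    define w where "w = (\<lambda>z. if \<exists>c\<in>C. z \<in> S c then \<phi> (THE c. c \<in> C \<and> z \<in> S c) z else z)"
    have rsw: "rs (S c) w = \<phi> c" if c: "c \<in> C" for c
    proof
      fix z show "rs (S c) w z = \<phi> c z"
      proof (cases "z \<in> S c")
        case True
        have "(THE c. c \<in> C \<and> z \<in> S c) = c" using True c cell_unique by blast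
        then show ?thesis using True c unfolding w_def by (auto simp: rs_in)
      next
        case False
        have "\<pi> c \<in> C" using permutes_in_image[OF p(1)] c by simp
        then have "\<phi> c \<in> rb (S c) (S (\<pi> c))" using Iso_rb c p(2) by blast
        then show ?thesis using False rb_out by (metis rs_out)
      qed
    qed
    have out: "\<forall>x. x \<notin> (\<Union>c\<in>C. S c) \<longrightarrow> w x = x" unfolding w_def by auto
    have wG: "w \<in> carrier G" unfolding carrG using rsw p(1,2) out by (simp; blast)
    have "(\<lambda>c. if c \<in> C then rs (S c) w else undefined) = \<phi>"
      using rsw p(3) by (auto intro!: ext)
    then have "Phi w = g" unfolding Phi_def g' using pw_eq[OF p(1)] rsw p(2) by simp
    then show "g \<in> Phi ` carrier G" using wG by blast
  qed
  have "Phi \<in> iso G glob"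
    unfolding iso_def hom_def bij_betw_def using Phi_in hom inj surj by auto
  then show ?thesis unfolding is_iso_def by blast
qed

end

context rbij begin

lemma R_refl: "c \<in> C \<Longrightarrow> Iso c c \<noteq> {}"
  using Iso_id by blast
lemma R_sym: "c \<in> C \<Longrightarrow> d \<in> C \<Longrightarrow> Iso c d \<noteq> {} \<Longrightarrow> Iso d c \<noteq> {}"
  using Iso_inv by blast
lemma R_trans: "c \<in> C \<Longrightarrow> d \<in> C \<Longrightarrow> e \<in> C \<Longrightarrow> Iso c d \<noteq> {} \<Longrightarrow> Iso d e \<noteq> {} \<Longrightarrow> Iso c e \<noteq> {}"
  using Iso_comp by blast

lemma glob_D:
  assumes "(\<pi>, \<phi>) \<in> carrier glob"
  shows "\<pi> permutes C" "\<And>c. c \<in> C \<Longrightarrow> \<phi> c \<in> Iso c (\<pi> c)" "\<And>c. c \<notin> C \<Longrightarrow> \<phi> c = undefined"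
  using assms unfolding glob_def by auto

lemma glob_mult: "mult glob (\<pi>, \<phi>) (\<pi>', \<phi>') =
   (\<pi> \<circ> \<pi>', \<lambda>c. if c \<in> C then rcomp (S c) (\<phi> (\<pi>' c)) (\<phi>' c) else undefined)"
  unfolding glob_def by simp

end

locale rbij_reps = rbij C S Iso for C :: "'c set" and S :: "'c \<Rightarrow> 'a set" and Iso +
  fixes cs :: "'c list" and mm :: "'c \<Rightarrow> nat" and H :: "'c \<Rightarrow> ('a \<Rightarrow> 'a) monoid"
  assumes cs_sub: "set cs \<subseteq> C"
    and cs_cover: "\<And>c. c \<in> C \<Longrightarrow> \<exists>d\<in>set cs. Iso c d \<noteq> {}"
    and cs_dist: "\<And>i j. i < length cs \<Longrightarrow> j < length cs \<Longrightarrow> i \<noteq> j \<Longrightarrow> Iso (cs!i) (cs!j) = {}"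
    and mm_eq: "\<And>c. c \<in> set cs \<Longrightarrow> mm c = card {d\<in>C. Iso d c \<noteq> {}}"
    and H_carr: "\<And>c. c \<in> set cs \<Longrightarrow> carrier (H c) = Iso c c"
    and H_mult: "\<And>c x y. c \<in> set cs \<Longrightarrow> x \<in> Iso c c \<Longrightarrow> y \<in> Iso c c \<Longrightarrow> mult (H c) x y = rcomp (S c) x y"
begin

definition "cls d = (THE k. k < length cs \<and> Iso (cs!k) d \<noteq> {})"
definition "K k = {d\<in>C. Iso (cs!k) d \<noteq> {}}"
definition "N k = card (K k)"
definition "en k = (SOME h. bij_betw h {..<N k} (K k))"
definition "ien k = inv_into {..<N k} (en k)"
definition "ps d = (SOME f. f \<in> Iso (cs ! cls d) d)"
definition "nz \<pi> \<phi> d = rcomp (S (cs ! cls d)) (rinv (S (cs ! cls d)) (ps (\<pi> d))) (rcomp (S (cs ! cls d)) (\<phi> d) (ps d))"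
definition "sg \<pi> k = (\<lambda>i. if i < N k then ien k (\<pi> (en k i)) else i)"
definition "Fm g = map (\<lambda>k. (sg (fst g) k, map (\<lambda>i. nz (fst g) (snd g) (inv_into UNIV (fst g) (en k i))) [0..<N k])) [0..<length cs]"

lemma csk_in: "k < length cs \<Longrightarrow> cs ! k \<in> C"
  using cs_sub nth_mem by blast

lemma cls_prop: assumes d: "d \<in> C" shows "cls d < length cs" "Iso (cs ! cls d) d \<noteq> {}"
proof -
  obtain e where e: "e \<in> set cs" "Iso d e \<noteq> {}" using cs_cover[OF d] by blast
  obtain k where k: "k < length cs" "cs ! k = e" using e(1) by (metis in_set_conv_nth)
  have k2: "Iso (cs ! k) d \<noteq> {}" using R_sym[OF d csk_in[OF k(1)]] e(2) k(2) by blast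
  have uniq: "j = k" if "j < length cs" "Iso (cs ! j) d \<noteq> {}" for j
  proof (rule ccontr)
    assume "j \<noteq> k"
    then have "Iso (cs!j) (cs!k) = {}" using cs_dist that(1) k(1) by blast
    moreover have "Iso (cs!j) (cs!k) \<noteq> {}"
      using R_trans[OF csk_in[OF that(1)] d csk_in[OF k(1)] that(2) R_sym[OF csk_in[OF k(1)] d k2]] .
    ultimately show False by blast
  qed
  have "cls d = k" unfolding cls_def
    apply (rule the_equality)
    using k(1) k2 apply blast
    using uniq by blast
  then show "cls d < length cs" "Iso (cs ! cls d) d \<noteq> {}" using k(1) k2 by auto
qed

lemma cls_eq: assumes "d \<in> C" "k < length cs" "Iso (cs!k) d \<noteq> {}" shows "cls d = k"
proof (rule ccontr)
  assume ne: "cls d \<noteq> k"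
  note c = cls_prop[OF assms(1)]
  have "Iso (cs!cls d) (cs!k) = {}" using cs_dist c(1) assms(2) ne by blast
  moreover have "Iso (cs!cls d) (cs!k) \<noteq> {}"
    using R_trans[OF csk_in[OF c(1)] assms(1) csk_in[OF assms(2)] c(2) R_sym[OF csk_in[OF assms(2)] assms(1) assms(3)]] .
  ultimately show False by blast
qed

lemma K_iff: "k < length cs \<Longrightarrow> d \<in> K k \<longleftrightarrow> d \<in> C \<and> cls d = k"
  unfolding K_def using cls_eq cls_prop by blast

lemma K_sub: "K k \<subseteq> C" unfolding K_def by blast

lemma N_mm: assumes k: "k < length cs" shows "N k = mm (cs!k)"
proof -
  have "K k = {d\<in>C. Iso d (cs!k) \<noteq> {}}"
    unfolding K_def using R_sym csk_in[OF k] by blast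
  then show ?thesis unfolding N_def using mm_eq[of "cs!k"] k by simp
qed

lemma en_bij: "bij_betw (en k) {..<N k} (K k)"
proof -
  have "finite (K k)" using finC K_sub finite_subset by blast
  then have "\<exists>h. bij_betw h {..<N k} (K k)" unfolding N_def
    using ex_bij_betw_nat_finite lessThan_atLeast0 by metis
  then show ?thesis unfolding en_def by (rule someI_ex)
qed

lemma en_in: "i < N k \<Longrightarrow> en k i \<in> K k"
  using en_bij unfolding bij_betw_def by blast
lemma ien_en: "i < N k \<Longrightarrow> ien k (en k i) = i"
  unfolding ien_def using en_bij bij_betw_inv_into_left by (metis lessThan_iff)
lemma en_ien: "d \<in> K k \<Longrightarrow> en k (ien k d) = d"
  unfolding ien_def using en_bij bij_betw_inv_into_right by metis
lemma ien_lt: "d \<in> K k \<Longrightarrow> ien k d < N k"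
proof -
  assume "d \<in> K k"
  then have "ien k d \<in> {..<N k}" unfolding ien_def using en_bij
    by (metis bij_betw_def inv_into_into)
  then show ?thesis by simp
qed
lemma en_inj: "i < N k \<Longrightarrow> j < N k \<Longrightarrow> en k i = en k j \<Longrightarrow> i = j"
  using ien_en by metis
lemma ien_inj: "d \<in> K k \<Longrightarrow> e \<in> K k \<Longrightarrow> ien k d = ien k e \<Longrightarrow> d = e"
  using en_ien by metis

lemma ps_in: assumes "d \<in> C" shows "ps d \<in> Iso (cs ! cls d) d"
proof -
  have "\<exists>f. f \<in> Iso (cs ! cls d) d" using cls_prop[OF assms] by blast
  then show ?thesis unfolding ps_def by (rule someI_ex)
qed

lemma rep_in: "d \<in> C \<Longrightarrow> cs ! cls d \<in> C"
  using csk_in cls_prop by blast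

context
  fixes \<pi> \<phi>
  assumes g: "(\<pi>, \<phi>) \<in> carrier glob"
begin

lemma pg: "\<pi> permutes C" using glob_D[OF g] by blast
lemma phig: "c \<in> C \<Longrightarrow> \<phi> c \<in> Iso c (\<pi> c)" using glob_D[OF g] by blast
lemma pi_in: "c \<in> C \<Longrightarrow> \<pi> c \<in> C" using permutes_in_image[OF pg] by simp
lemma ipi_in: "c \<in> C \<Longrightarrow> inv_into UNIV \<pi> c \<in> C"
  using permutes_in_image[OF permutes_inv[OF pg]] by simp
lemma pi_ipi: "\<pi> (inv_into UNIV \<pi> c) = c" using permutes_inverses(1)[OF pg] by simp

lemma cls_pi: assumes d: "d \<in> C" shows "cls (\<pi> d) = cls d"
proof -
  have "Iso (cs ! cls d) (\<pi> d) \<noteq> {}"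
    using R_trans[OF rep_in[OF d] d pi_in[OF d] cls_prop(2)[OF d]] phig[OF d] by blast
  then show ?thesis using cls_eq[OF pi_in[OF d] cls_prop(1)[OF d]] by blast
qed

lemma cls_ipi: assumes d: "d \<in> C" shows "cls (inv_into UNIV \<pi> d) = cls d"
  using cls_pi[OF ipi_in[OF d]] pi_ipi by simp

lemma nz_in: assumes d: "d \<in> C" shows "nz \<pi> \<phi> d \<in> Iso (cs ! cls d) (cs ! cls d)"
proof -
  define r where "r = cs ! cls d"
  have r: "r \<in> C" unfolding r_def using rep_in[OF d] .
  have a: "ps d \<in> Iso r d" unfolding r_def using ps_in[OF d] .
  have b: "ps (\<pi> d) \<in> Iso r (\<pi> d)" unfolding r_def using ps_in[OF pi_in[OF d]] cls_pi[OF d] by simp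
  have 1: "rcomp (S r) (\<phi> d) (ps d) \<in> Iso r (\<pi> d)" using Iso_comp[OF r d pi_in[OF d] a phig[OF d]] .
  have 2: "rinv (S r) (ps (\<pi> d)) \<in> Iso (\<pi> d) r" using Iso_inv[OF r pi_in[OF d] b] .
  show ?thesis unfolding nz_def r_def[symmetric] using Iso_comp[OF r pi_in[OF d] r 1 2] .
qed

lemma pi_K: assumes k: "k < length cs" shows "bij_betw \<pi> (K k) (K k)"
proof -
  have inj: "inj_on \<pi> (K k)" using permutes_inj[OF pg] by (meson inj_on_subset subset_UNIV)
  have "\<pi> ` K k = K k"
  proof
    show "\<pi> ` K k \<subseteq> K k" using K_iff[OF k] pi_in cls_pi by auto
    show "K k \<subseteq> \<pi> ` K k"
    proof
      fix d assume d: "d \<in> K k"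
      then have "inv_into UNIV \<pi> d \<in> K k" using K_iff[OF k] ipi_in cls_ipi by auto
      then show "d \<in> \<pi> ` K k" using pi_ipi by (metis image_eqI)
    qed
  qed
  then show ?thesis using inj unfolding bij_betw_def by blast
qed

lemma sg_perm: assumes k: "k < length cs" shows "sg \<pi> k permutes {..<N k}"
proof -
  have b1: "bij_betw (en k) {..<N k} (K k)" using en_bij .
  have b3: "bij_betw (ien k) (K k) {..<N k}" unfolding ien_def using bij_betw_inv_into[OF en_bij] .
  have "bij_betw (ien k \<circ> \<pi> \<circ> en k) {..<N k} {..<N k}"
    using bij_betw_trans[OF bij_betw_trans[OF b1 pi_K[OF k]] b3] by (simp add: o_assoc)
  moreover have "\<And>i. i \<in> {..<N k} \<Longrightarrow> sg \<pi> k i = (ien k \<circ> \<pi> \<circ> en k) i" unfolding sg_def by simp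
  ultimately have "bij_betw (sg \<pi> k) {..<N k} {..<N k}"
    using bij_betw_cong[of "{..<N k}" "sg \<pi> k" "ien k \<circ> \<pi> \<circ> en k"] by simp
  moreover have "\<And>i. i \<notin> {..<N k} \<Longrightarrow> sg \<pi> k i = i" unfolding sg_def by simp
  ultimately show ?thesis by (rule bij_imp_permutes)
qed

lemma sg_inv: assumes k: "k < length cs" and i: "i < N k"
  shows "inv_into UNIV (sg \<pi> k) i = ien k (inv_into UNIV \<pi> (en k i))"
proof -
  have e: "en k i \<in> K k" using en_in[OF i] .
  have j: "inv_into UNIV \<pi> (en k i) \<in> K k" using e K_iff[OF k] ipi_in cls_ipi by auto
  have "sg \<pi> k (ien k (inv_into UNIV \<pi> (en k i))) = i"
    unfolding sg_def using ien_lt[OF j] en_ien[OF j] pi_ipi ien_en[OF i] by simp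
  then show ?thesis using permutes_inv_eq[OF sg_perm[OF k]] by blast
qed

lemma Fm_nth: assumes k: "k < length cs"
  shows "Fm (\<pi>, \<phi>) ! k = (sg \<pi> k, map (\<lambda>i. nz \<pi> \<phi> (inv_into UNIV \<pi> (en k i))) [0..<N k])"
  unfolding Fm_def using k by simp

end

abbreviation "Gs \<equiv> map (\<lambda>c. wreath (mm c) (H c)) cs"

lemma Gs_nth: "k < length cs \<Longrightarrow> Gs ! k = wreath (N k) (H (cs!k))"
  using N_mm by simp

lemma Fm_in: assumes g: "(\<pi>, \<phi>) \<in> carrier glob" shows "Fm (\<pi>, \<phi>) \<in> carrier (dprod Gs)"
proof -
  have "Fm (\<pi>, \<phi>) ! k \<in> carrier (Gs ! k)" if k: "k < length cs" for k
  proof -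
    have "set (map (\<lambda>i. nz \<pi> \<phi> (inv_into UNIV \<pi> (en k i))) [0..<N k]) \<subseteq> Iso (cs!k) (cs!k)"
    proof
      fix x assume "x \<in> set (map (\<lambda>i. nz \<pi> \<phi> (inv_into UNIV \<pi> (en k i))) [0..<N k])"
      then obtain i where i: "i < N k" "x = nz \<pi> \<phi> (inv_into UNIV \<pi> (en k i))" by auto
      have e: "en k i \<in> K k" using en_in[OF i(1)] .
      have j: "inv_into UNIV \<pi> (en k i) \<in> K k" using e K_iff[OF k] ipi_in[OF g] cls_ipi[OF g] by auto
      then have "inv_into UNIV \<pi> (en k i) \<in> C" "cls (inv_into UNIV \<pi> (en k i)) = k" using K_iff[OF k] by auto
      then show "x \<in> Iso (cs!k) (cs!k)" using nz_in[OF g] i(2) by metis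
    qed
    then show ?thesis
      unfolding Fm_nth[OF g k] Gs_nth[OF k] wreath_def using sg_perm[OF g k] H_carr[of "cs!k"] k N_mm[OF k]
      by simp
  qed
  then show ?thesis unfolding dprod_def Fm_def by simp
qed

end

context rbij_reps begin

lemma nz_mult:
  assumes g: "(\<pi>, \<phi>) \<in> carrier glob" and h: "(\<pi>', \<phi>') \<in> carrier glob" and d: "d \<in> C"
  shows "nz (\<pi> \<circ> \<pi>') (\<lambda>c. if c \<in> C then rcomp (S c) (\<phi> (\<pi>' c)) (\<phi>' c) else undefined) d
       = rcomp (S (cs ! cls d)) (nz \<pi> \<phi> (\<pi>' d)) (nz \<pi>' \<phi>' d)"
proof
  fix x
  define r where "r = cs ! cls d"
  have r: "r \<in> C" unfolding r_def using rep_in[OF d] .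
  have d1: "\<pi>' d \<in> C" using pi_in[OF h d] .
  have d2: "\<pi> (\<pi>' d) \<in> C" using pi_in[OF g d1] .
  have c1: "cls (\<pi>' d) = cls d" using cls_pi[OF h d] .
  have c2: "cls (\<pi> (\<pi>' d)) = cls d" using cls_pi[OF g d1] c1 by simp
  have a: "ps d \<in> rb (S r) (S d)" using Iso_rb[OF r d] ps_in[OF d] unfolding r_def by blast
  have b: "ps (\<pi>' d) \<in> rb (S r) (S (\<pi>' d))" using Iso_rb[OF r d1] ps_in[OF d1] c1 unfolding r_def by simp
  have u: "\<phi>' d \<in> rb (S d) (S (\<pi>' d))" using Iso_rb[OF d d1] phig[OF h d] by blast
  have v: "\<phi> (\<pi>' d) \<in> rb (S (\<pi>' d)) (S (\<pi> (\<pi>' d)))" using Iso_rb[OF d1 d2] phig[OF g d1] by blast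
  show "nz (\<pi> \<circ> \<pi>') (\<lambda>c. if c \<in> C then rcomp (S c) (\<phi> (\<pi>' c)) (\<phi>' c) else undefined) d x
       = rcomp (S (cs ! cls d)) (nz \<pi> \<phi> (\<pi>' d)) (nz \<pi>' \<phi>' d) x"
  proof (cases "x \<in> S r")
    case True
    have ax: "ps d x \<in> S d" using rb_in[OF a True] .
    have ux: "\<phi>' d (ps d x) \<in> S (\<pi>' d)" using rb_in[OF u ax] .
    define z where "z = rinv (S r) (ps (\<pi>' d)) (\<phi>' d (ps d x))"
    have z: "z \<in> S r" unfolding z_def using rinv_in[OF b ux] .
    have bz: "ps (\<pi>' d) z = \<phi>' d (ps d x)" unfolding z_def using rinv_right[OF b ux] .
    have L: "nz (\<pi> \<circ> \<pi>') (\<lambda>c. if c \<in> C then rcomp (S c) (\<phi> (\<pi>' c)) (\<phi>' c) else undefined) d x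
        = rinv (S r) (ps (\<pi> (\<pi>' d))) (\<phi> (\<pi>' d) (\<phi>' d (ps d x)))"
      unfolding nz_def r_def[symmetric] using True d ax by (simp add: rcomp_in)
    have R2: "nz \<pi>' \<phi>' d x = z" unfolding nz_def r_def[symmetric] z_def using True by (simp add: rcomp_in)
    have R1: "nz \<pi> \<phi> (\<pi>' d) z = rinv (S r) (ps (\<pi> (\<pi>' d))) (\<phi> (\<pi>' d) (\<phi>' d (ps d x)))"
      unfolding nz_def c1 r_def[symmetric] using z bz by (simp add: rcomp_in)
    show ?thesis unfolding r_def[symmetric] using True L R1 R2 by (simp add: rcomp_in)
  next
    case False
    then show ?thesis unfolding nz_def r_def[symmetric] by (simp add: rcomp_out)
  qed
qed

lemma Fm_hom:
  assumes g: "(\<pi>, \<phi>) \<in> carrier glob" and h: "(\<pi>', \<phi>') \<in> carrier glob"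
  shows "Fm (mult glob (\<pi>, \<phi>) (\<pi>', \<phi>')) = mult (dprod Gs) (Fm (\<pi>, \<phi>)) (Fm (\<pi>', \<phi>'))"
proof -
  define \<Phi> where "\<Phi> = (\<lambda>c. if c \<in> C then rcomp (S c) (\<phi> (\<pi>' c)) (\<phi>' c) else undefined)"
  have gh: "(\<pi> \<circ> \<pi>', \<Phi>) \<in> carrier glob"
  proof -
    have "\<pi> \<circ> \<pi>' permutes C" using permutes_compose[OF pg[OF h] pg[OF g]] .
    moreover have "\<forall>c\<in>C. \<Phi> c \<in> Iso c ((\<pi> \<circ> \<pi>') c)"
      unfolding \<Phi>_def using Iso_comp pi_in[OF g] pi_in[OF h] phig[OF g] phig[OF h] by (simp; metis)
    moreover have "\<forall>c. c \<notin> C \<longrightarrow> \<Phi> c = undefined" unfolding \<Phi>_def by simp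
    ultimately show ?thesis unfolding glob_def by simp
  qed
  have M: "mult glob (\<pi>, \<phi>) (\<pi>', \<phi>') = (\<pi> \<circ> \<pi>', \<Phi>)" unfolding \<Phi>_def glob_mult ..
  have invc: "inv_into UNIV (\<pi> \<circ> \<pi>') = inv_into UNIV \<pi>' \<circ> inv_into UNIV \<pi>"
    using o_inv_distrib permutes_bij[OF pg[OF g]] permutes_bij[OF pg[OF h]] by blast
  have k_eq: "Fm (\<pi> \<circ> \<pi>', \<Phi>) ! k = mult (Gs ! k) (Fm (\<pi>, \<phi>) ! k) (Fm (\<pi>', \<phi>') ! k)"
    if k: "k < length cs" for k
  proof -
    define r where "r = cs ! k"
    have rs: "r \<in> set cs" unfolding r_def using k by simp
    have sgc: "sg (\<pi> \<circ> \<pi>') k = sg \<pi> k \<circ> sg \<pi>' k"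
    proof
      fix i show "sg (\<pi> \<circ> \<pi>') k i = (sg \<pi> k \<circ> sg \<pi>' k) i"
      proof (cases "i < N k")
        case True
        have e: "en k i \<in> K k" using en_in[OF True] .
        have e2: "\<pi>' (en k i) \<in> K k" using e K_iff[OF k] pi_in[OF h] cls_pi[OF h] by auto
        show ?thesis unfolding sg_def using True ien_lt[OF e2] en_ien[OF e2] by simp
      next
        case False then show ?thesis unfolding sg_def by simp
      qed
    qed
    have ent: "nz (\<pi> \<circ> \<pi>') \<Phi> (inv_into UNIV (\<pi> \<circ> \<pi>') (en k i)) =
        mult (H r) (nz \<pi> \<phi> (inv_into UNIV \<pi> (en k i)))
           (nz \<pi>' \<phi>' (inv_into UNIV \<pi>' (en k (inv_into UNIV (sg \<pi> k) i))))"
      if i: "i < N k" for i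
    proof -
      have e: "en k i \<in> K k" using en_in[OF i] .
      define d1 where "d1 = inv_into UNIV \<pi> (en k i)"
      have d1: "d1 \<in> K k" unfolding d1_def using e K_iff[OF k] ipi_in[OF g] cls_ipi[OF g] by auto
      define d where "d = inv_into UNIV \<pi>' d1"
      have d: "d \<in> K k" unfolding d_def using d1 K_iff[OF k] ipi_in[OF h] cls_ipi[OF h] by auto
      have dC: "d \<in> C" and cd: "cls d = k" using d K_iff[OF k] by auto
      have pd: "\<pi>' d = d1" unfolding d_def using pi_ipi[OF h] .
      have si: "inv_into UNIV (sg \<pi> k) i = ien k d1" using sg_inv[OF g k i] unfolding d1_def .
      have 1: "inv_into UNIV (\<pi> \<circ> \<pi>') (en k i) = d" unfolding invc d_def d1_def by simp
      have n1: "nz \<pi> \<phi> d1 \<in> Iso r r" using nz_in[OF g] d1 K_iff[OF k] unfolding r_def by metis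
      have n2: "nz \<pi>' \<phi>' d \<in> Iso r r" using nz_in[OF h dC] cd unfolding r_def by simp
      have "nz (\<pi> \<circ> \<pi>') \<Phi> d = rcomp (S r) (nz \<pi> \<phi> d1) (nz \<pi>' \<phi>' d)"
        using nz_mult[OF g h dC] unfolding \<Phi>_def pd cd r_def .
      then show ?thesis unfolding 1 si en_ien[OF d1] d1_def[symmetric] pd[symmetric] d_def[symmetric]
        using H_mult[OF rs n1 n2] pd en_ien[OF d1] d_def by simp
    qed
    have ilt: "\<And>x. x < N k \<Longrightarrow> inv_into UNIV (sg \<pi> k) x < N k"
      using permutes_in_image[OF permutes_inv[OF sg_perm[OF g k]]] by simp
    show ?thesis
      unfolding Fm_nth[OF gh k] Fm_nth[OF g k] Fm_nth[OF h k] Gs_nth[OF k]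
      unfolding wreath_def r_def[symmetric]
      using sgc ent ilt by simp
  qed
  show ?thesis unfolding M
  proof (rule nth_equalityI)
    show "length (Fm (\<pi> \<circ> \<pi>', \<Phi>)) = length (mult (dprod Gs) (Fm (\<pi>, \<phi>)) (Fm (\<pi>', \<phi>')))"
      unfolding Fm_def dprod_def by simp
    fix k assume "k < length (Fm (\<pi> \<circ> \<pi>', \<Phi>))"
    then have k: "k < length cs" unfolding Fm_def by simp
    show "Fm (\<pi> \<circ> \<pi>', \<Phi>) ! k = mult (dprod Gs) (Fm (\<pi>, \<phi>)) (Fm (\<pi>', \<phi>')) ! k"
      using k_eq[OF k] k unfolding dprod_def by simp
  qed
qed

end

context rbij_reps begin

lemma nz_cancel:
  assumes g: "(\<pi>, \<phi>) \<in> carrier glob" and h: "(\<pi>, \<phi>') \<in> carrier glob" and d: "d \<in> C"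
    and eq: "nz \<pi> \<phi> d = nz \<pi> \<phi>' d"
  shows "\<phi> d = \<phi>' d"
proof
  fix y
  define r where "r = cs ! cls d"
  have r: "r \<in> C" unfolding r_def using rep_in[OF d] .
  have pd: "\<pi> d \<in> C" using pi_in[OF g d] .
  have a: "ps d \<in> rb (S r) (S d)" using Iso_rb[OF r d] ps_in[OF d] unfolding r_def by blast
  have b: "ps (\<pi> d) \<in> rb (S r) (S (\<pi> d))" using Iso_rb[OF r pd] ps_in[OF pd] cls_pi[OF g d] unfolding r_def by simp
  have u: "\<phi> d \<in> rb (S d) (S (\<pi> d))" using Iso_rb[OF d pd] phig[OF g d] by blast
  have u': "\<phi>' d \<in> rb (S d) (S (\<pi> d))" using Iso_rb[OF d pd] phig[OF h d] by blast
  show "\<phi> d y = \<phi>' d y"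
  proof (cases "y \<in> S d")
    case True
    define x where "x = rinv (S r) (ps d) y"
    have x: "x \<in> S r" unfolding x_def using rinv_in[OF a True] .
    have ax: "ps d x = y" unfolding x_def using rinv_right[OF a True] .
    have "nz \<pi> \<phi> d x = rinv (S r) (ps (\<pi> d)) (\<phi> d y)"
      unfolding nz_def r_def[symmetric] using x ax by (simp add: rcomp_in)
    moreover have "nz \<pi> \<phi>' d x = rinv (S r) (ps (\<pi> d)) (\<phi>' d y)"
      unfolding nz_def r_def[symmetric] using x ax by (simp add: rcomp_in)
    ultimately have e: "rinv (S r) (ps (\<pi> d)) (\<phi> d y) = rinv (S r) (ps (\<pi> d)) (\<phi>' d y)" using eq by simp
    have "rinv (S r) (ps (\<pi> d)) \<in> rb (S (\<pi> d)) (S r)" using rb_rinv[OF b] .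
    then show ?thesis using rb_inj e rb_in[OF u True] rb_in[OF u' True] by metis
  next
    case False
    then show ?thesis using rb_out[OF u False] rb_out[OF u' False] by simp
  qed
qed

lemma Fm_inj: "inj_on Fm (carrier glob)"
proof
  fix g h assume g0: "g \<in> carrier glob" and h0: "h \<in> carrier glob" and eq: "Fm g = Fm h"
  obtain \<pi> \<phi> where gg: "g = (\<pi>, \<phi>)" by fastforce
  obtain \<pi>' \<phi>' where hh: "h = (\<pi>', \<phi>')" by fastforce
  have g: "(\<pi>, \<phi>) \<in> carrier glob" using g0 gg by simp
  have h: "(\<pi>', \<phi>') \<in> carrier glob" using h0 hh by simp
  have eqk: "Fm (\<pi>, \<phi>) ! k = Fm (\<pi>', \<phi>') ! k" for k using eq gg hh by simp
  have sgeq: "sg \<pi> k = sg \<pi>' k" if k: "k < length cs" for k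
    using eqk[of k] unfolding Fm_nth[OF g k] Fm_nth[OF h k] by simp
  have peq: "\<pi> = \<pi>'"
  proof
    fix d show "\<pi> d = \<pi>' d"
    proof (cases "d \<in> C")
      case True
      define k where "k = cls d"
      have k: "k < length cs" unfolding k_def using cls_prop[OF True] by simp
      have dK: "d \<in> K k" using K_iff[OF k] True k_def by simp
      have p1: "\<pi> d \<in> K k" using K_iff[OF k] dK pi_in[OF g] cls_pi[OF g] by auto
      have p2: "\<pi>' d \<in> K k" using K_iff[OF k] dK pi_in[OF h] cls_pi[OF h] by auto
      have "sg \<pi> k (ien k d) = sg \<pi>' k (ien k d)" using sgeq[OF k] by simp
      then have "ien k (\<pi> d) = ien k (\<pi>' d)" unfolding sg_def using ien_lt[OF dK] en_ien[OF dK] by simp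
      then show ?thesis using ien_inj[OF p1 p2] by blast
    next
      case False
      then show ?thesis using permutes_not_in[OF pg[OF g]] permutes_not_in[OF pg[OF h]] by metis
    qed
  qed
  have feq: "\<phi> = \<phi>'"
  proof
    fix d show "\<phi> d = \<phi>' d"
    proof (cases "d \<in> C")
      case True
      define k where "k = cls d"
      have k: "k < length cs" unfolding k_def using cls_prop[OF True] by simp
      have dK: "d \<in> K k" using K_iff[OF k] True k_def by simp
      have p1: "\<pi> d \<in> K k" using K_iff[OF k] dK pi_in[OF g] cls_pi[OF g] by auto
      define i where "i = ien k (\<pi> d)"
      have i: "i < N k" unfolding i_def using ien_lt[OF p1] .
      have ei: "inv_into UNIV \<pi> (en k i) = d" unfolding i_def en_ien[OF p1]
        using permutes_inverses(2)[OF pg[OF g]] by simp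
      have "map (\<lambda>i. nz \<pi> \<phi> (inv_into UNIV \<pi> (en k i))) [0..<N k] = map (\<lambda>i. nz \<pi> \<phi>' (inv_into UNIV \<pi> (en k i))) [0..<N k]"
        using eqk[of k] Fm_nth[OF g k] Fm_nth[OF h k] peq by simp
      then have "nz \<pi> \<phi> (inv_into UNIV \<pi> (en k i)) = nz \<pi> \<phi>' (inv_into UNIV \<pi> (en k i))"
        using i by (metis (no_types, lifting) diff_zero length_map length_upt nth_map nth_upt plus_nat.add_0)
      then have "nz \<pi> \<phi> d = nz \<pi> \<phi>' d" using ei by simp
      then show ?thesis using nz_cancel[OF g _ True] h peq by simp
    next
      case False
      then show ?thesis using glob_D(3)[OF g] glob_D(3)[OF h] by simp
    qed
  qed
  show "g = h" using gg hh peq feq by simp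
qed

end

context rbij_reps begin

lemma Fm_surj: "carrier (dprod Gs) \<subseteq> Fm ` carrier glob"
proof
  fix ys assume ys: "ys \<in> carrier (dprod Gs)"
  have len: "length ys = length cs" using ys unfolding dprod_def by simp
  define s where "s k = fst (ys ! k)" for k
  define xs where "xs k = snd (ys ! k)" for k
  have yk: "s k permutes {..<N k} \<and> length (xs k) = N k \<and> set (xs k) \<subseteq> Iso (cs!k) (cs!k)"
    if k: "k < length cs" for k
  proof -
    have "ys ! k \<in> carrier (Gs ! k)" using ys k unfolding dprod_def by simp
    then show ?thesis unfolding Gs_nth[OF k] wreath_def s_def xs_def using H_carr[of "cs!k"] k N_mm[OF k]
      by (auto simp: case_prod_beta)
  qed
  define \<pi> where "\<pi> d = (if d \<in> C then en (cls d) (s (cls d) (ien (cls d) d)) else d)" for d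
  define \<phi> where "\<phi> d = (if d \<in> C then rcomp (S d) (rcomp (S (cs ! cls d)) (ps (\<pi> d)) (xs (cls d) ! (s (cls d) (ien (cls d) d))))
      (rinv (S (cs ! cls d)) (ps d)) else undefined)" for d
  have piK: "\<pi> d \<in> K (cls d)" "s (cls d) (ien (cls d) d) < N (cls d)" if d: "d \<in> C" for d
  proof -
    define k where "k = cls d"
    have k: "k < length cs" unfolding k_def using cls_prop[OF d] by simp
    have dK: "d \<in> K k" using K_iff[OF k] d k_def by simp
    have "s k (ien k d) < N k" using permutes_in_image[OF conjunct1[OF yk[OF k]]] ien_lt[OF dK] by simp
    then show "\<pi> d \<in> K (cls d)" "s (cls d) (ien (cls d) d) < N (cls d)"
      unfolding \<pi>_def k_def[symmetric] using d en_in by simp_all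
  qed
  have piC: "\<pi> d \<in> C" and clspi: "cls (\<pi> d) = cls d" if d: "d \<in> C" for d
    using piK(1)[OF d] K_iff cls_prop[OF d] by blast+
  have pinj: "inj_on \<pi> C"
  proof
    fix d e assume d: "d \<in> C" and e: "e \<in> C" and eq: "\<pi> d = \<pi> e"
    have ce: "cls d = cls e" using clspi[OF d] clspi[OF e] eq by simp
    define k where "k = cls d"
    have k: "k < length cs" unfolding k_def using cls_prop[OF d] by simp
    have dK: "d \<in> K k" using K_iff[OF k] d k_def by simp
    have eK: "e \<in> K k" using K_iff[OF k] e k_def ce by simp
    have "en k (s k (ien k d)) = en k (s k (ien k e))" using eq d e ce unfolding \<pi>_def k_def by simp
    then have "s k (ien k d) = s k (ien k e)" using en_inj piK(2)[OF d] piK(2)[OF e] ce k_def by metis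
    then have "ien k d = ien k e" using permutes_inj[OF conjunct1[OF yk[OF k]]] by (meson injD)
    then show "d = e" using ien_inj[OF dK eK] by blast
  qed
  have pimg: "\<pi> ` C = C" using endo_inj_surj[OF finC _ pinj] piC by blast
  have pperm: "\<pi> permutes C"
    using bij_imp_permutes[of \<pi> C] pinj pimg unfolding bij_betw_def \<pi>_def by simp
  have phiI: "\<phi> d \<in> Iso d (\<pi> d)" if d: "d \<in> C" for d
  proof -
    define k where "k = cls d"
    define r where "r = cs ! k"
    have k: "k < length cs" unfolding k_def using cls_prop[OF d] by simp
    have r: "r \<in> C" unfolding r_def using csk_in[OF k] .
    have x: "xs k ! (s k (ien k d)) \<in> Iso r r" using yk[OF k] piK(2)[OF d] unfolding k_def r_def
      by (metis nth_mem subsetD)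
    have a: "ps d \<in> Iso r d" using ps_in[OF d] unfolding r_def k_def .
    have b: "ps (\<pi> d) \<in> Iso r (\<pi> d)" using ps_in[OF piC[OF d]] clspi[OF d] unfolding r_def k_def by simp
    have 1: "rcomp (S r) (ps (\<pi> d)) (xs k ! (s k (ien k d))) \<in> Iso r (\<pi> d)"
      using Iso_comp[OF r r piC[OF d] x b] .
    have 2: "rinv (S r) (ps d) \<in> Iso d r" using Iso_inv[OF r d a] .
    show ?thesis unfolding \<phi>_def k_def[symmetric] r_def[symmetric] using d Iso_comp[OF d r piC[OF d] 2 1] by simp
  qed
  have gl: "(\<pi>, \<phi>) \<in> carrier glob" unfolding glob_def using pperm phiI by (simp add: \<phi>_def)
  have "Fm (\<pi>, \<phi>) = ys"
  proof (rule nth_equalityI)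
    show "length (Fm (\<pi>, \<phi>)) = length ys" using len unfolding Fm_def by simp
    fix k assume "k < length (Fm (\<pi>, \<phi>))"
    then have k: "k < length cs" unfolding Fm_def by simp
    define r where "r = cs ! k"
    have r: "r \<in> C" unfolding r_def using csk_in[OF k] .
    have sgk: "sg \<pi> k = s k"
    proof
      fix i show "sg \<pi> k i = s k i"
      proof (cases "i < N k")
        case True
        have e: "en k i \<in> K k" using en_in[OF True] .
        have eC: "en k i \<in> C" and ce: "cls (en k i) = k" using e K_iff[OF k] by auto
        have "s k i < N k" using permutes_in_image[OF conjunct1[OF yk[OF k]]] True by simp
        then show ?thesis unfolding sg_def \<pi>_def using True eC ce ien_en by simp
      next
        case False
        then show ?thesis unfolding sg_def using permutes_not_in[OF conjunct1[OF yk[OF k]]] by simp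
      qed
    qed
    have ent: "nz \<pi> \<phi> (inv_into UNIV \<pi> (en k i)) = xs k ! i" if i: "i < N k" for i
    proof
      fix y
      have e: "en k i \<in> K k" using en_in[OF i] .
      define d where "d = inv_into UNIV \<pi> (en k i)"
      have pd: "\<pi> d = en k i" unfolding d_def using permutes_inverses(1)[OF pperm] by simp
      have dK: "d \<in> K k" using e K_iff[OF k] unfolding d_def
        using permutes_in_image[OF permutes_inv[OF pperm]] pd clspi by (metis d_def)
      have dC: "d \<in> C" and cd: "cls d = k" using dK K_iff[OF k] by auto
      have sd: "s k (ien k d) = i" using pd unfolding \<pi>_def using dC cd en_inj[OF piK(2)[OF dC, unfolded cd] i] by simp
      have x: "xs k ! i \<in> rb (S r) (S r)" using yk[OF k] i Iso_rb[OF r r] unfolding r_def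
        by (metis nth_mem subsetD)
      have a: "ps d \<in> rb (S r) (S d)" using Iso_rb[OF r dC] ps_in[OF dC] cd unfolding r_def by simp
      have b: "ps (\<pi> d) \<in> rb (S r) (S (\<pi> d))" using Iso_rb[OF r piC[OF dC]] ps_in[OF piC[OF dC]] clspi[OF dC] cd
        unfolding r_def by simp
      have phd: "\<phi> d = rcomp (S d) (rcomp (S r) (ps (\<pi> d)) (xs k ! i)) (rinv (S r) (ps d))"
        unfolding \<phi>_def using dC cd sd unfolding r_def by simp
      show "nz \<pi> \<phi> d y = (xs k ! i) y" unfolding d_def[symmetric]
      proof (cases "y \<in> S r")
        case True
        have ay: "ps d y \<in> S d" using rb_in[OF a True] .
        have xy: "(xs k ! i) y \<in> S r" using rb_in[OF x True] .
        have "\<phi> d (ps d y) = ps (\<pi> d) ((xs k ! i) y)"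
          unfolding phd using ay rinv_left[OF a True] True by (simp add: rcomp_in)
        then show ?thesis unfolding nz_def cd r_def[symmetric] using True ay rinv_left[OF b xy]
          by (simp add: rcomp_in)
      next
        case False
        then show ?thesis unfolding nz_def cd r_def[symmetric] using rb_out[OF x False] by (simp add: rcomp_out)
      qed
    qed
    have "ys ! k = (s k, xs k)" unfolding s_def xs_def by simp
    moreover have "map (\<lambda>i. nz \<pi> \<phi> (inv_into UNIV \<pi> (en k i))) [0..<N k] = xs k"
      using ent yk[OF k] by (simp add: list_eq_iff_nth_eq)
    ultimately show "Fm (\<pi>, \<phi>) ! k = ys ! k" unfolding Fm_nth[OF gl k] sgk by simp
  qed
  then show "ys \<in> Fm ` carrier glob" using gl by blast
qed

theorem glob_dprod: "glob \<cong> dprod Gs"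
proof -
  have "Fm \<in> iso glob (dprod Gs)"
    unfolding iso_def hom_def bij_betw_def
  proof (intro CollectI conjI)
    show "Fm \<in> carrier glob \<rightarrow> carrier (dprod Gs)" using Fm_in by auto
    show "\<forall>x\<in>carrier glob. \<forall>y\<in>carrier glob. Fm (x \<otimes>\<^bsub>glob\<^esub> y) = Fm x \<otimes>\<^bsub>dprod Gs\<^esub> Fm y"
      using Fm_hom by auto
    show "inj_on Fm (carrier glob)" using Fm_inj .
    show "Fm ` carrier glob = carrier (dprod Gs)" using Fm_surj Fm_in by auto
  qed
  then show ?thesis unfolding is_iso_def by blast
qed

end

lemma iso_transport: assumes "inj_on f (carrier G)" shows "G \<cong> transport f G"
proof -
  have "f \<in> iso G (transport f G)"
    unfolding iso_def hom_def bij_betw_def transport_def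
    using assms by (simp add: inv_into_f_f)
  then show ?thesis unfolding is_iso_def by blast
qed

lemma iso_wreath:
  assumes h: "h \<in> iso P Q"
  shows "wreath m P \<cong> wreath m Q"
proof -
  have hc: "\<And>x. x \<in> carrier P \<Longrightarrow> h x \<in> carrier Q" using h unfolding iso_def hom_def by auto
  have hm: "\<And>x y. x \<in> carrier P \<Longrightarrow> y \<in> carrier P \<Longrightarrow> h (mult P x y) = mult Q (h x) (h y)"
    using h unfolding iso_def hom_def by auto
  have hi: "inj_on h (carrier P)" and hs: "h ` carrier P = carrier Q"
    using h unfolding iso_def bij_betw_def by auto
  define F where "F = (\<lambda>(s::nat\<Rightarrow>nat, xs). (s, map h xs))"
  have Fin: "F x \<in> carrier (wreath m Q)" if "x \<in> carrier (wreath m P)" for x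
    using that hc unfolding F_def wreath_def by (fastforce simp: subset_iff)
  have Fhom: "F (mult (wreath m P) x y) = mult (wreath m Q) (F x) (F y)"
    if x: "x \<in> carrier (wreath m P)" and y: "y \<in> carrier (wreath m P)" for x y
  proof -
    obtain s xs where xx: "x = (s, xs)" by fastforce
    obtain t ys where yy: "y = (t, ys)" by fastforce
    have s: "s permutes {..<m}" and lx: "length xs = m" and sx: "set xs \<subseteq> carrier P"
      using x xx unfolding wreath_def by auto
    have ly: "length ys = m" and sy: "set ys \<subseteq> carrier P"
      using y yy unfolding wreath_def by auto
    have il: "\<And>i. i < m \<Longrightarrow> inv_into UNIV s i < m"
      using permutes_in_image[OF permutes_inv[OF s]] by simp
    have "\<And>i. i < m \<Longrightarrow> h (mult P (xs ! i) (ys ! inv_into UNIV s i)) = mult Q (map h xs ! i) (map h ys ! inv_into UNIV s i)"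
      using hm lx ly sx sy il by (simp add: subset_code(1))
    then show ?thesis unfolding xx yy F_def wreath_def by simp
  qed
  have Finj: "inj_on F (carrier (wreath m P))"
  proof
    fix x y assume x: "x \<in> carrier (wreath m P)" and y: "y \<in> carrier (wreath m P)" and e: "F x = F y"
    obtain s xs where xx: "x = (s, xs)" by fastforce
    obtain t ys where yy: "y = (t, ys)" by fastforce
    have "set xs \<subseteq> carrier P" "set ys \<subseteq> carrier P" using x xx y yy unfolding wreath_def by auto
    moreover have "map h xs = map h ys" "s = t" using e unfolding xx yy F_def by auto
    ultimately show "x = y" unfolding xx yy using hi
      by (metis inj_on_map_eq_map inj_on_subset subset_code(1) Un_subset_iff set_append)
  qed
  have Fsurj: "carrier (wreath m Q) \<subseteq> F ` carrier (wreath m P)"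
  proof
    fix z assume z: "z \<in> carrier (wreath m Q)"
    obtain s zs where zz: "z = (s, zs)" by fastforce
    have s: "s permutes {..<m}" and lz: "length zs = m" and sz: "set zs \<subseteq> carrier Q"
      using z zz unfolding wreath_def by auto
    define xs where "xs = map (inv_into (carrier P) h) zs"
    have "set xs \<subseteq> carrier P" unfolding xs_def using sz hs by (auto simp: subset_iff intro!: inv_into_into)
    moreover have "map h xs = zs" unfolding xs_def using sz hs
      by (simp add: map_idI f_inv_into_f subset_iff)
    ultimately show "z \<in> F ` carrier (wreath m P)" unfolding zz F_def wreath_def
      using s lz by (auto simp: xs_def intro!: image_eqI[of _ _ "(s, xs)"])
  qed
  have "F \<in> iso (wreath m P) (wreath m Q)"
    unfolding iso_def hom_def bij_betw_def using Fin Fhom Finj Fsurj by auto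
  then show ?thesis unfolding is_iso_def by blast
qed

lemma iso_dprod:
  assumes len: "length Gs = length Hs" and isos: "\<And>i. i < length Gs \<Longrightarrow> Gs ! i \<cong> Hs ! i"
  shows "dprod Gs \<cong> dprod Hs"
proof -
  define h where "h i = (SOME f. f \<in> iso (Gs ! i) (Hs ! i))" for i
  have hiso: "h i \<in> iso (Gs ! i) (Hs ! i)" if "i < length Gs" for i
    unfolding h_def using isos[OF that] unfolding is_iso_def by (simp add: some_in_eq)
  have hc: "\<And>i x. i < length Gs \<Longrightarrow> x \<in> carrier (Gs ! i) \<Longrightarrow> h i x \<in> carrier (Hs ! i)"
    using hiso unfolding iso_def hom_def by auto
  have hm: "\<And>i x y. i < length Gs \<Longrightarrow> x \<in> carrier (Gs ! i) \<Longrightarrow> y \<in> carrier (Gs ! i) \<Longrightarrow>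
      h i (mult (Gs ! i) x y) = mult (Hs ! i) (h i x) (h i y)"
    using hiso unfolding iso_def hom_def by auto
  have hi: "\<And>i. i < length Gs \<Longrightarrow> inj_on (h i) (carrier (Gs ! i))"
    using hiso unfolding iso_def bij_betw_def by auto
  have hs: "\<And>i. i < length Gs \<Longrightarrow> h i ` carrier (Gs ! i) = carrier (Hs ! i)"
    using hiso unfolding iso_def bij_betw_def by auto
  define F where "F xs = map (\<lambda>i. h i (xs ! i)) [0..<length Gs]" for xs
  have Fin: "F x \<in> carrier (dprod Hs)" if "x \<in> carrier (dprod Gs)" for x
    using that hc len unfolding F_def dprod_def by auto
  have Fhom: "F (mult (dprod Gs) x y) = mult (dprod Hs) (F x) (F y)"
    if x: "x \<in> carrier (dprod Gs)" and y: "y \<in> carrier (dprod Gs)" for x y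
    using x y hm len unfolding F_def dprod_def by auto
  have Finj: "inj_on F (carrier (dprod Gs))"
  proof
    fix x y assume x: "x \<in> carrier (dprod Gs)" and y: "y \<in> carrier (dprod Gs)" and e: "F x = F y"
    have lx: "length x = length Gs" and ly: "length y = length Gs" using x y unfolding dprod_def by auto
    show "x = y"
    proof (rule nth_equalityI)
      show "length x = length y" using lx ly by simp
      fix i assume "i < length x"
      then have i: "i < length Gs" using lx by simp
      have "h i (x ! i) = h i (y ! i)" using e i unfolding F_def by (metis (no_types, lifting) add_0 diff_zero length_map length_upt nth_map nth_upt)
      moreover have "x ! i \<in> carrier (Gs ! i)" "y ! i \<in> carrier (Gs ! i)" using x y i unfolding dprod_def by auto
      ultimately show "x ! i = y ! i" using hi[OF i] unfolding inj_on_def by blast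
    qed
  qed
  have Fsurj: "carrier (dprod Hs) \<subseteq> F ` carrier (dprod Gs)"
  proof
    fix z assume z: "z \<in> carrier (dprod Hs)"
    have lz: "length z = length Gs" and zc: "\<And>i. i < length Gs \<Longrightarrow> z ! i \<in> carrier (Hs ! i)"
      using z len unfolding dprod_def by auto
    define x where "x = map (\<lambda>i. inv_into (carrier (Gs ! i)) (h i) (z ! i)) [0..<length Gs]"
    have xc: "x \<in> carrier (dprod Gs)" unfolding x_def dprod_def using zc hs
      by (auto intro: inv_into_into)
    have "F x = z"
    proof (rule nth_equalityI)
      show "length (F x) = length z" unfolding F_def using lz by simp
      fix i assume "i < length (F x)"
      then have i: "i < length Gs" unfolding F_def by simp
      show "F x ! i = z ! i" unfolding F_def x_def using i zc[OF i] hs[OF i] by (simp add: f_inv_into_f)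
    qed
    then show "z \<in> F ` carrier (dprod Gs)" using xc by blast
  qed
  have "F \<in> iso (dprod Gs) (dprod Hs)"
    unfolding iso_def hom_def bij_betw_def using Fin Fhom Finj Fsurj by auto
  then show ?thesis unfolding is_iso_def by blast
qed

lemma iso_perm_symg:
  assumes fin: "finite M"
  shows "\<lparr>carrier = {w. w permutes M}, mult = (\<circ>), one = id\<rparr> \<cong> symg (card M)"
proof -
  define r where "r = card M"
  obtain \<beta> where \<beta>: "bij_betw \<beta> {..<r} M" using ex_bij_betw_nat_finite[OF fin] lessThan_atLeast0 r_def by metis
  define \<gamma> where "\<gamma> = inv_into {..<r} \<beta>"
  have \<gamma>: "bij_betw \<gamma> M {..<r}" unfolding \<gamma>_def using bij_betw_inv_into[OF \<beta>] .
  have gb: "\<And>i. i < r \<Longrightarrow> \<gamma> (\<beta> i) = i" unfolding \<gamma>_def using \<beta> bij_betw_inv_into_left by fastforce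
  have bg: "\<And>x. x \<in> M \<Longrightarrow> \<beta> (\<gamma> x) = x" unfolding \<gamma>_def using \<beta> bij_betw_inv_into_right by fastforce
  have bM: "\<And>i. i < r \<Longrightarrow> \<beta> i \<in> M" using \<beta> unfolding bij_betw_def by auto
  have gM: "\<And>x. x \<in> M \<Longrightarrow> \<gamma> x < r" using \<gamma> unfolding bij_betw_def by auto
  define F where "F w = (\<lambda>i. if i < r then \<gamma> (w (\<beta> i)) else i)" for w :: "'a \<Rightarrow> 'a"
  define G where "G s = (\<lambda>x. if x \<in> M then \<beta> (s (\<gamma> x)) else x)" for s
  have Fp: "F w permutes {..<r}" if w: "w permutes M" for w
  proof -
    have "bij_betw (\<gamma> \<circ> w \<circ> \<beta>) {..<r} {..<r}"
      using bij_betw_trans[OF bij_betw_trans[OF \<beta> permutes_imp_bij[OF w]] \<gamma>] by (simp add: o_assoc)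
    then have "bij_betw (F w) {..<r} {..<r}" using bij_betw_cong[of "{..<r}" "F w" "\<gamma> \<circ> w \<circ> \<beta>"]
      unfolding F_def by simp
    then show ?thesis by (rule bij_imp_permutes, simp add: F_def)
  qed
  have Gp: "G s permutes M" if s: "s permutes {..<r}" for s
  proof -
    have "bij_betw (\<beta> \<circ> s \<circ> \<gamma>) M M"
      using bij_betw_trans[OF bij_betw_trans[OF \<gamma> permutes_imp_bij[OF s]] \<beta>] by (simp add: o_assoc)
    then have "bij_betw (G s) M M" using bij_betw_cong[of M "G s" "\<beta> \<circ> s \<circ> \<gamma>"]
      unfolding G_def by simp
    then show ?thesis by (rule bij_imp_permutes, simp add: G_def)
  qed
  have FG: "F (G s) = s" if s: "s permutes {..<r}" for s
  proof
    fix i show "F (G s) i = s i"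
    proof (cases "i < r")
      case True
      have "s i < r" using permutes_in_image[OF s] True by simp
      then show ?thesis unfolding F_def G_def using True bM gb by simp
    next
      case False then show ?thesis unfolding F_def using permutes_not_in[OF s] by simp
    qed
  qed
  have Fhom: "F (w \<circ> v) = F w \<circ> F v" if w: "w permutes M" and v: "v permutes M" for w v
  proof
    fix i show "F (w \<circ> v) i = (F w \<circ> F v) i"
    proof (cases "i < r")
      case True
      have "v (\<beta> i) \<in> M" using permutes_in_image[OF v] bM[OF True] by simp
      then show ?thesis unfolding F_def using True bg gM by simp
    next
      case False then show ?thesis unfolding F_def by simp
    qed
  qed
  have Finj: "inj_on F {w. w permutes M}"
  proof
    fix w v assume w: "w \<in> {w. w permutes M}" and v: "v \<in> {w. w permutes M}" and e: "F w = F v"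
    show "w = v"
    proof
      fix x show "w x = v x"
      proof (cases "x \<in> M")
        case True
        have "F w (\<gamma> x) = F v (\<gamma> x)" using e by simp
        then have "\<gamma> (w x) = \<gamma> (v x)" unfolding F_def using gM[OF True] bg[OF True] by simp
        moreover have "w x \<in> M" "v x \<in> M" using permutes_in_image[of w M] permutes_in_image[of v M] w v True by auto
        ultimately show ?thesis using bg by metis
      next
        case False then show ?thesis using permutes_not_in w v by (metis mem_Collect_eq)
      qed
    qed
  qed
  have "F \<in> iso \<lparr>carrier = {w. w permutes M}, mult = (\<circ>), one = id\<rparr> (symg r)"
    unfolding iso_def hom_def bij_betw_def symg_def
  proof (intro CollectI conjI)
    show "F \<in> carrier \<lparr>carrier = {w. w permutes M}, mult = (\<circ>), one = id\<rparr> \<rightarrow>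
        carrier \<lparr>carrier = {s. s permutes {..<r}}, mult = (\<circ>), one = id\<rparr>" using Fp by auto
    show "\<forall>x\<in>carrier \<lparr>carrier = {w. w permutes M}, mult = (\<circ>), one = id\<rparr>.
       \<forall>y\<in>carrier \<lparr>carrier = {w. w permutes M}, mult = (\<circ>), one = id\<rparr>.
          F (x \<otimes>\<^bsub>\<lparr>carrier = {w. w permutes M}, mult = (\<circ>), one = id\<rparr>\<^esub> y) =
          F x \<otimes>\<^bsub>\<lparr>carrier = {s. s permutes {..<r}}, mult = (\<circ>), one = id\<rparr>\<^esub> F y"
      using Fhom by simp
    show "inj_on F (carrier \<lparr>carrier = {w. w permutes M}, mult = (\<circ>), one = id\<rparr>)" using Finj by simp
    show "F ` carrier \<lparr>carrier = {w. w permutes M}, mult = (\<circ>), one = id\<rparr> =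
        carrier \<lparr>carrier = {s. s permutes {..<r}}, mult = (\<circ>), one = id\<rparr>"
      using Fp FG Gp by (auto intro!: image_eqI)
  qed
  then show ?thesis unfolding is_iso_def r_def by blast
qed


definition gt :: "(nat \<times> 'b) rtree \<Rightarrow> bool" where
  "gt T \<longleftrightarrow> finite (rt_nodes T) \<and> rt_root T \<in> rt_nodes T \<and> (\<forall>v. fst (rt_par T v) = Suc (fst v))
     \<and> (\<forall>v\<in>rt_nodes T. \<exists>k. (rt_par T ^^ k) v = rt_root T)
     \<and> (\<forall>v\<in>rt_nodes T - {rt_root T}. rt_par T v \<in> rt_nodes T)"

lemma fst_parpow: fixes P :: "nat \<times> 'b \<Rightarrow> nat \<times> 'b" assumes h: "\<forall>v. fst (P v) = Suc (fst v)" shows "fst ((P ^^ k) v) = fst v + k"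
proof (induction k)
  case 0 show ?case by simp
next
  case (Suc k)
  have "fst ((P ^^ Suc k) v) = Suc (fst ((P ^^ k) v))" using h[rule_format, of "(P ^^ k) v"] by simp
  then show ?case using Suc by simp
qed

context
  fixes T :: "(nat \<times> 'b) rtree"
  assumes gt: "gt T"
begin

lemma gt_fin: "finite (rt_nodes T)" using gt unfolding gt_def by blast
lemma gt_root: "rt_root T \<in> rt_nodes T" using gt unfolding gt_def by blast
lemma gt_fst: "fst (rt_par T v) = Suc (fst v)" using gt unfolding gt_def by blast
lemma gt_pp: "fst ((rt_par T ^^ k) v) = fst v + k" using fst_parpow gt_fst by blast
lemma gt_reach: "v \<in> rt_nodes T \<Longrightarrow> \<exists>k. (rt_par T ^^ k) v = rt_root T" using gt unfolding gt_def by blast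
lemma gt_clos: "v \<in> rt_nodes T \<Longrightarrow> v \<noteq> rt_root T \<Longrightarrow> rt_par T v \<in> rt_nodes T" using gt unfolding gt_def by blast

lemma gt_le: assumes "v \<in> rt_nodes T" shows "fst v \<le> fst (rt_root T)"
  "(rt_par T ^^ (fst (rt_root T) - fst v)) v = rt_root T"
proof -
  obtain k where k: "(rt_par T ^^ k) v = rt_root T" using gt_reach[OF assms] by blast
  have "fst (rt_root T) = fst v + k" using gt_pp[of k v] k by simp
  then show "fst v \<le> fst (rt_root T)" "(rt_par T ^^ (fst (rt_root T) - fst v)) v = rt_root T" using k by auto
qed

lemma gt_pow_nodes: "v \<in> rt_nodes T \<Longrightarrow> fst v + j \<le> fst (rt_root T) \<Longrightarrow> (rt_par T ^^ j) v \<in> rt_nodes T"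
proof (induction j)
  case 0 then show ?case by simp
next
  case (Suc j)
  have a: "(rt_par T ^^ j) v \<in> rt_nodes T" using Suc by simp
  have "fst ((rt_par T ^^ j) v) < fst (rt_root T)" using gt_pp Suc(3) by simp
  then have "(rt_par T ^^ j) v \<noteq> rt_root T" by auto
  then show ?case using gt_clos[OF a] by simp
qed

lemma gt_root_unique_level: "v \<in> rt_nodes T \<Longrightarrow> fst v = fst (rt_root T) \<Longrightarrow> v = rt_root T"
  using gt_le(2) by fastforce

lemma sub_nodes: "rt_nodes (rt_subtree T c) = {v \<in> rt_nodes T. \<exists>k. (rt_par T ^^ k) v = c}"
  unfolding rt_subtree_def by simp

lemma sub_le: assumes "v \<in> rt_nodes (rt_subtree T c)"
  shows "fst v \<le> fst c" "(rt_par T ^^ (fst c - fst v)) v = c" "v \<in> rt_nodes T"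
proof -
  obtain k where k: "(rt_par T ^^ k) v = c" "v \<in> rt_nodes T" using assms sub_nodes by blast
  have "fst c = fst v + k" using gt_pp[of k v] k by simp
  then show "fst v \<le> fst c" "(rt_par T ^^ (fst c - fst v)) v = c" "v \<in> rt_nodes T" using k by auto
qed

lemma gt_sub: assumes c: "c \<in> rt_nodes T" shows "gt (rt_subtree T c)"
proof -
  have r: "c \<in> rt_nodes (rt_subtree T c)" using c unfolding sub_nodes by (auto intro: exI[of _ 0])
  have cl: "rt_par T v \<in> rt_nodes (rt_subtree T c)" if v: "v \<in> rt_nodes (rt_subtree T c)" "v \<noteq> c" for v
  proof -
    have vn: "v \<in> rt_nodes T" and l: "fst v \<le> fst c" and p: "(rt_par T ^^ (fst c - fst v)) v = c"
      using sub_le[OF v(1)] by auto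
    have lt: "fst v < fst c" using l p v(2) by (metis diff_self_eq_0 funpow_0 le_neq_implies_less)
    have "fst c \<le> fst (rt_root T)" using gt_le(1)[OF c] .
    then have "v \<noteq> rt_root T" using lt vn gt_le(1)[OF vn] by auto
    then have pn: "rt_par T v \<in> rt_nodes T" using gt_clos vn by blast
    have "(rt_par T ^^ (fst c - fst v - 1)) (rt_par T v) = c"
      using p lt by (metis Suc_diff_Suc diff_Suc_1 funpow_Suc_right o_apply zero_less_diff)
    then show ?thesis unfolding sub_nodes using pn by blast
  qed
  have fin: "finite (rt_nodes (rt_subtree T c))" using gt_fin unfolding sub_nodes by simp
  show ?thesis unfolding gt_def using r cl fin gt_fst unfolding rt_subtree_def by auto
qed

lemma sub_sub: assumes "d \<in> rt_nodes (rt_subtree T c)"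
  shows "rt_subtree (rt_subtree T c) d = rt_subtree T d"
proof -
  have "rt_nodes (rt_subtree (rt_subtree T c) d) = rt_nodes (rt_subtree T d)"
  proof
    show "rt_nodes (rt_subtree (rt_subtree T c) d) \<subseteq> rt_nodes (rt_subtree T d)"
      unfolding rt_subtree_def by auto
    show "rt_nodes (rt_subtree T d) \<subseteq> rt_nodes (rt_subtree (rt_subtree T c) d)"
    proof
      fix v assume v: "v \<in> rt_nodes (rt_subtree T d)"
      then obtain i where i: "(rt_par T ^^ i) v = d" "v \<in> rt_nodes T" unfolding sub_nodes by blast
      obtain j where j: "(rt_par T ^^ j) d = c" using assms unfolding sub_nodes by blast
      have "(rt_par T ^^ (j + i)) v = c" using i j by (simp add: funpow_add)
      then have "v \<in> rt_nodes (rt_subtree T c)" unfolding sub_nodes using i by blast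
      then show "v \<in> rt_nodes (rt_subtree (rt_subtree T c) d)" using i unfolding rt_subtree_def by auto
    qed
  qed
  then show ?thesis unfolding rt_subtree_def by simp
qed

lemma sub_root_self: "rt_subtree T (rt_root T) = T"
proof -
  have "rt_nodes (rt_subtree T (rt_root T)) = rt_nodes T" unfolding sub_nodes using gt_reach by blast
  then show ?thesis unfolding rt_subtree_def by simp
qed

lemma child_fst: "c \<in> rt_children T \<Longrightarrow> Suc (fst c) = fst (rt_root T)"
  unfolding rt_children_def using gt_fst by (metis (mono_tags, lifting) mem_Collect_eq)

lemma children_sub: "rt_children T \<subseteq> rt_nodes T" unfolding rt_children_def by blast

lemma child_in_sub: "c \<in> rt_nodes T \<Longrightarrow> c \<in> rt_nodes (rt_subtree T c)"
  unfolding sub_nodes by (auto intro: exI[of _ 0])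

lemma root_notin_sub: assumes c: "c \<in> rt_children T" shows "rt_root T \<notin> rt_nodes (rt_subtree T c)"
  using sub_le(1) child_fst[OF c] by fastforce

lemma sub_disj: assumes c: "c \<in> rt_children T" and d: "d \<in> rt_children T"
   and v: "v \<in> rt_nodes (rt_subtree T c)" "v \<in> rt_nodes (rt_subtree T d)"
 shows "c = d"
proof -
  have "fst c = fst d" using child_fst[OF c] child_fst[OF d] by simp
  then show ?thesis using sub_le(2)[OF v(1)] sub_le(2)[OF v(2)] by metis
qed

lemma sub_cover: assumes v: "v \<in> rt_nodes T" "v \<noteq> rt_root T"
  shows "\<exists>c\<in>rt_children T. v \<in> rt_nodes (rt_subtree T c)"
proof -
  define k where "k = fst (rt_root T) - fst v"
  have le: "fst v \<le> fst (rt_root T)" and pk: "(rt_par T ^^ k) v = rt_root T" using gt_le[OF v(1)] k_def by auto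
  have k0: "k \<noteq> 0"
  proof
    assume "k = 0" then show False using pk v(2) by simp
  qed
  define c where "c = (rt_par T ^^ (k - 1)) v"
  have cn: "c \<in> rt_nodes T" unfolding c_def using gt_pow_nodes[OF v(1)] k_def le k0 by simp
  have pc: "rt_par T c = rt_root T" unfolding c_def using pk k0
    by (metis Suc_diff_1 funpow_Suc_right funpow_swap1 neq0_conv o_apply)
  have "fst c < fst (rt_root T)" unfolding c_def using gt_pp k_def k0 le by simp
  then have "c \<noteq> rt_root T" by auto
  then have "c \<in> rt_children T" unfolding rt_children_def using cn pc by blast
  moreover have "v \<in> rt_nodes (rt_subtree T c)" unfolding sub_nodes c_def using v(1) by blast
  ultimately show ?thesis by blast
qed

lemma sub_union: "(\<Union>c\<in>rt_children T. rt_nodes (rt_subtree T c)) = rt_nodes T - {rt_root T}"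
  using sub_cover root_notin_sub sub_le(3) by blast

end

lemma rt_iso_cong:
  assumes gt: "gt T1" and e: "\<And>x. x \<in> rt_nodes T1 \<Longrightarrow> f x = g x" and f: "rt_iso T1 T2 f"
  shows "rt_iso T1 T2 g"
proof -
  have "bij_betw g (rt_nodes T1) (rt_nodes T2)" using f e bij_betw_cong unfolding rt_iso_def by metis
  moreover have "g (rt_root T1) = rt_root T2" using f e gt_root[OF gt] unfolding rt_iso_def by metis
  moreover have "\<forall>v\<in>rt_nodes T1 - {rt_root T1}. g (rt_par T1 v) = rt_par T2 (g v)"
    using f e gt_clos[OF gt] unfolding rt_iso_def by (metis DiffD1 DiffD2 insertI1)
  moreover have "\<forall>v\<in>rt_nodes T1. rt_rank T2 (g v) = rt_rank T1 v"
    using f e unfolding rt_iso_def by metis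
  ultimately show ?thesis unfolding rt_iso_def by blast
qed

lemma rt_iso_nonroot: assumes f: "rt_iso T1 T2 f" and v: "v \<in> rt_nodes T1" "v \<noteq> rt_root T1"
  and r: "rt_root T1 \<in> rt_nodes T1"
  shows "f v \<in> rt_nodes T2" "f v \<noteq> rt_root T2"
proof -
  have b: "bij_betw f (rt_nodes T1) (rt_nodes T2)" and fr: "f (rt_root T1) = rt_root T2" using f unfolding rt_iso_def by auto
  show "f v \<in> rt_nodes T2" using b v unfolding bij_betw_def by blast
  show "f v \<noteq> rt_root T2" using b v fr r unfolding bij_betw_def inj_on_def by metis
qed

lemma rt_iso_comp:
  assumes gt1: "gt T1" and f: "rt_iso T1 T2 f" and g: "rt_iso T2 T3 g"
  shows "rt_iso T1 T3 (g \<circ> f)"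
proof -
  have "bij_betw (g \<circ> f) (rt_nodes T1) (rt_nodes T3)" using f g bij_betw_trans unfolding rt_iso_def by blast
  moreover have "(g \<circ> f) (rt_root T1) = rt_root T3" using f g unfolding rt_iso_def by simp
  moreover have "\<forall>v\<in>rt_nodes T1 - {rt_root T1}. (g \<circ> f) (rt_par T1 v) = rt_par T3 ((g \<circ> f) v)"
  proof
    fix v assume v: "v \<in> rt_nodes T1 - {rt_root T1}"
    have "f v \<in> rt_nodes T2 - {rt_root T2}" using rt_iso_nonroot[OF f _ _ gt_root[OF gt1]] v by blast
    then show "(g \<circ> f) (rt_par T1 v) = rt_par T3 ((g \<circ> f) v)" using f g v unfolding rt_iso_def by simp
  qed
  moreover have "\<forall>v\<in>rt_nodes T1. rt_rank T3 ((g \<circ> f) v) = rt_rank T1 v"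
  proof
    fix v assume v: "v \<in> rt_nodes T1"
    have "f v \<in> rt_nodes T2" using f v unfolding rt_iso_def bij_betw_def by blast
    then show "rt_rank T3 ((g \<circ> f) v) = rt_rank T1 v" using f g v unfolding rt_iso_def by simp
  qed
  ultimately show ?thesis unfolding rt_iso_def by blast
qed

lemma rt_iso_inv:
  assumes gt1: "gt T1" and f: "rt_iso T1 T2 f"
  shows "rt_iso T2 T1 (inv_into (rt_nodes T1) f)"
proof -
  have b: "bij_betw f (rt_nodes T1) (rt_nodes T2)" using f unfolding rt_iso_def by blast
  define g where "g = inv_into (rt_nodes T1) f"
  have gb: "bij_betw g (rt_nodes T2) (rt_nodes T1)" unfolding g_def using bij_betw_inv_into[OF b] .
  have gf: "\<And>x. x \<in> rt_nodes T1 \<Longrightarrow> g (f x) = x" unfolding g_def using b bij_betw_inv_into_left by metis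
  have fg: "\<And>y. y \<in> rt_nodes T2 \<Longrightarrow> f (g y) = y" unfolding g_def using b bij_betw_inv_into_right by metis
  have gn: "\<And>y. y \<in> rt_nodes T2 \<Longrightarrow> g y \<in> rt_nodes T1" using gb unfolding bij_betw_def by blast
  have fr: "f (rt_root T1) = rt_root T2" using f unfolding rt_iso_def by blast
  have gr: "g (rt_root T2) = rt_root T1" using gf[OF gt_root[OF gt1]] fr by simp
  have "\<forall>v\<in>rt_nodes T2 - {rt_root T2}. g (rt_par T2 v) = rt_par T1 (g v)"
  proof
    fix v assume v: "v \<in> rt_nodes T2 - {rt_root T2}"
    have u: "g v \<in> rt_nodes T1" "g v \<noteq> rt_root T1" using gn v fg fr by (auto, metis)
    have "f (rt_par T1 (g v)) = rt_par T2 v" using f u fg v unfolding rt_iso_def by auto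
    then show "g (rt_par T2 v) = rt_par T1 (g v)" using gf gt_clos[OF gt1 u(1) u(2)] by metis
  qed
  moreover have "\<forall>v\<in>rt_nodes T2. rt_rank T1 (g v) = rt_rank T2 v"
    using f gn fg unfolding rt_iso_def by metis
  ultimately show ?thesis unfolding rt_iso_def g_def[symmetric] using gb gr by blast
qed

lemma rt_iso_pow:
  assumes gt1: "gt T1" and f: "rt_iso T1 T2 f" and v: "v \<in> rt_nodes T1" and k: "fst v + k \<le> fst (rt_root T1)"
  shows "f ((rt_par T1 ^^ k) v) = (rt_par T2 ^^ k) (f v)"
  using k
proof (induction k)
  case 0 then show ?case by simp
next
  case (Suc k)
  have a: "(rt_par T1 ^^ k) v \<in> rt_nodes T1" using gt_pow_nodes[OF gt1 v] Suc(2) by simp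
  have "fst ((rt_par T1 ^^ k) v) < fst (rt_root T1)" using gt_pp[OF gt1] Suc(2) by simp
  then have b: "(rt_par T1 ^^ k) v \<noteq> rt_root T1" by auto
  have "f (rt_par T1 ((rt_par T1 ^^ k) v)) = rt_par T2 (f ((rt_par T1 ^^ k) v))"
    using f a b unfolding rt_iso_def by blast
  then show ?case using Suc by simp
qed

lemma rt_iso_child:
  assumes gt1: "gt T1" and f: "rt_iso T1 T2 f" and c: "c \<in> rt_children T1"
  shows "f c \<in> rt_children T2"
proof -
  have cn: "c \<in> rt_nodes T1" "c \<noteq> rt_root T1" "rt_par T1 c = rt_root T1" using c unfolding rt_children_def by auto
  have "f c \<in> rt_nodes T2" "f c \<noteq> rt_root T2" using rt_iso_nonroot[OF f cn(1,2) gt_root[OF gt1]] by auto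
  moreover have "rt_par T2 (f c) = rt_root T2"
  proof -
    have "f (rt_par T1 c) = rt_par T2 (f c)" using f cn unfolding rt_iso_def by blast
    then show ?thesis using cn(3) f unfolding rt_iso_def by simp
  qed
  ultimately show ?thesis unfolding rt_children_def by blast
qed

lemma rt_iso_sub_img:
  assumes gt1: "gt T1" and gt2: "gt T2" and f: "rt_iso T1 T2 f" and c: "c \<in> rt_children T1"
  shows "f ` rt_nodes (rt_subtree T1 c) \<subseteq> rt_nodes (rt_subtree T2 (f c))"
proof
  fix w assume "w \<in> f ` rt_nodes (rt_subtree T1 c)"
  then obtain v where v: "v \<in> rt_nodes (rt_subtree T1 c)" "w = f v" by blast
  have vn: "v \<in> rt_nodes T1" using sub_le(3)[OF gt1 v(1)] .
  have k: "(rt_par T1 ^^ (fst c - fst v)) v = c" "fst v \<le> fst c" using sub_le[OF gt1 v(1)] by auto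
  have "fst v + (fst c - fst v) \<le> fst (rt_root T1)" using k(2) child_fst[OF gt1 c] by simp
  then have "f c = (rt_par T2 ^^ (fst c - fst v)) (f v)" using rt_iso_pow[OF gt1 f vn] k(1) by metis
  moreover have "f v \<in> rt_nodes T2" using f vn unfolding rt_iso_def bij_betw_def by blast
  ultimately show "w \<in> rt_nodes (rt_subtree T2 (f c))" unfolding sub_nodes[OF gt2] v(2) by (metis (mono_tags, lifting) mem_Collect_eq)
qed

lemma rt_iso_sub:
  assumes gt1: "gt T1" and gt2: "gt T2" and f: "rt_iso T1 T2 f" and c: "c \<in> rt_children T1"
  shows "f ` rt_nodes (rt_subtree T1 c) = rt_nodes (rt_subtree T2 (f c))"
    "rt_iso (rt_subtree T1 c) (rt_subtree T2 (f c)) f"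
proof -
  define g where "g = inv_into (rt_nodes T1) f"
  have g: "rt_iso T2 T1 g" unfolding g_def using rt_iso_inv[OF gt1 f] .
  have b: "bij_betw f (rt_nodes T1) (rt_nodes T2)" using f unfolding rt_iso_def by blast
  have gf: "\<And>x. x \<in> rt_nodes T1 \<Longrightarrow> g (f x) = x" unfolding g_def using b bij_betw_inv_into_left by metis
  have fg: "\<And>y. y \<in> rt_nodes T2 \<Longrightarrow> f (g y) = y" unfolding g_def using b bij_betw_inv_into_right by metis
  have fc: "f c \<in> rt_children T2" using rt_iso_child[OF gt1 f c] .
  have cn: "c \<in> rt_nodes T1" using c unfolding rt_children_def by blast
  have 1: "f ` rt_nodes (rt_subtree T1 c) \<subseteq> rt_nodes (rt_subtree T2 (f c))" using rt_iso_sub_img[OF gt1 gt2 f c] .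
  have 2: "g ` rt_nodes (rt_subtree T2 (f c)) \<subseteq> rt_nodes (rt_subtree T1 c)"
    using rt_iso_sub_img[OF gt2 gt1 g fc] gf[OF cn] by simp
  show img: "f ` rt_nodes (rt_subtree T1 c) = rt_nodes (rt_subtree T2 (f c))"
  proof
    show "rt_nodes (rt_subtree T2 (f c)) \<subseteq> f ` rt_nodes (rt_subtree T1 c)"
    proof
      fix y assume y: "y \<in> rt_nodes (rt_subtree T2 (f c))"
      have "y \<in> rt_nodes T2" using sub_le(3)[OF gt2 y] .
      then show "y \<in> f ` rt_nodes (rt_subtree T1 c)" using 2 y fg by (metis image_eqI image_subset_iff)
    qed
  qed (rule 1)
  have sn: "rt_nodes (rt_subtree T1 c) \<subseteq> rt_nodes T1" using sub_le(3)[OF gt1] by blast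
  have "bij_betw f (rt_nodes (rt_subtree T1 c)) (rt_nodes (rt_subtree T2 (f c)))"
    using img b sn unfolding bij_betw_def by (meson inj_on_subset)
  moreover have "\<forall>v\<in>rt_nodes (rt_subtree T1 c) - {c}. f (rt_par T1 v) = rt_par T2 (f v)"
  proof
    fix v assume v: "v \<in> rt_nodes (rt_subtree T1 c) - {c}"
    have "v \<in> rt_nodes T1" "v \<noteq> rt_root T1" using sn v root_notin_sub[OF gt1 c] by auto
    then show "f (rt_par T1 v) = rt_par T2 (f v)" using f unfolding rt_iso_def by blast
  qed
  moreover have "\<forall>v\<in>rt_nodes (rt_subtree T1 c). rt_rank T2 (f v) = rt_rank T1 v"
    using f sn unfolding rt_iso_def by blast
  ultimately show "rt_iso (rt_subtree T1 c) (rt_subtree T2 (f c)) f"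
    unfolding rt_iso_def rt_subtree_def by simp
qed


lemma reps_exist:
  assumes fin: "finite X"
    and refl: "\<And>x. x \<in> X \<Longrightarrow> R x x"
    and sym: "\<And>x y. x \<in> X \<Longrightarrow> y \<in> X \<Longrightarrow> R x y \<Longrightarrow> R y x"
    and trans: "\<And>x y z. x \<in> X \<Longrightarrow> y \<in> X \<Longrightarrow> z \<in> X \<Longrightarrow> R x y \<Longrightarrow> R y z \<Longrightarrow> R x z"
  shows "\<exists>cs. set cs \<subseteq> X \<and> (\<forall>x\<in>X. \<exists>y\<in>set cs. R x y) \<and>
          (\<forall>i<length cs. \<forall>j<length cs. i \<noteq> j \<longrightarrow> \<not> R (cs!i) (cs!j))"
proof -
  have "finite Y \<Longrightarrow> Y \<subseteq> X \<Longrightarrow> \<exists>cs. set cs \<subseteq> Y \<and> (\<forall>x\<in>Y. \<exists>y\<in>set cs. R x y) \<and>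
          (\<forall>i<length cs. \<forall>j<length cs. i \<noteq> j \<longrightarrow> \<not> R (cs!i) (cs!j))" for Y
  proof (induction Y rule: finite_induct)
    case empty then show ?case by (intro exI[of _ "[]"], simp)
  next
    case (insert x F)
    then obtain cs where cs: "set cs \<subseteq> F" "\<forall>x\<in>F. \<exists>y\<in>set cs. R x y"
       "\<forall>i<length cs. \<forall>j<length cs. i \<noteq> j \<longrightarrow> \<not> R (cs!i) (cs!j)" by blast
    have xX: "x \<in> X" and FX: "F \<subseteq> X" using insert by auto
    show ?case
    proof (cases "\<exists>y\<in>set cs. R x y")
      case True
      then show ?thesis using cs by (intro exI[of _ cs], auto)
    next
      case False
      have a: "set (cs @ [x]) \<subseteq> insert x F" using cs(1) by auto
      have b: "\<forall>z\<in>insert x F. \<exists>y\<in>set (cs @ [x]). R z y" using cs(2) refl xX by auto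
      have c: "\<forall>i<length (cs @ [x]). \<forall>j<length (cs @ [x]). i \<noteq> j \<longrightarrow> \<not> R ((cs @ [x])!i) ((cs @ [x])!j)"
      proof (intro allI impI)
        fix i j assume i: "i < length (cs @ [x])" and j: "j < length (cs @ [x])" and ij: "i \<noteq> j"
        show "\<not> R ((cs @ [x])!i) ((cs @ [x])!j)"
        proof (cases "i < length cs")
          case ic: True
          show ?thesis
          proof (cases "j < length cs")
            case True then show ?thesis using cs(3) ic ij by (simp add: nth_append)
          next
            case False
            have jj: "j = length cs" using j False by simp
            have ciX: "cs ! i \<in> X" using ic cs(1) FX nth_mem by blast
            have n1: "\<not> R x (cs ! i)" using \<open>\<not> (\<exists>y\<in>set cs. R x y)\<close> nth_mem[OF ic] by blast
            have n2: "\<not> R (cs ! i) x" using n1 sym[OF ciX xX] by blast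
            have "(cs @ [x]) ! i = cs ! i" "(cs @ [x]) ! j = x" using ic jj by (simp_all add: nth_append)
            then show ?thesis using n2 by simp
          qed
        next
          case False
          then have ii: "i = length cs" using i by simp
          then have jc: "j < length cs" using j ij by simp
          have n1: "\<not> R x (cs ! j)" using \<open>\<not> (\<exists>y\<in>set cs. R x y)\<close> nth_mem[OF jc] by blast
          have "(cs @ [x]) ! i = x" "(cs @ [x]) ! j = cs ! j" using ii jc by (simp_all add: nth_append)
          then show ?thesis using n1 by simp
        qed
      qed
      show ?thesis using a b c by blast
    qed
  qed
  then show ?thesis using fin by blast
qed

lemma sub_rank[simp]: "rt_rank (rt_subtree T c) = rt_rank T" unfolding rt_subtree_def by simp
lemma sub_par[simp]: "rt_par (rt_subtree T c) = rt_par T" unfolding rt_subtree_def by simp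
lemma sub_rt_root[simp]: "rt_root (rt_subtree T c) = c" unfolding rt_subtree_def by simp

definition tIso :: "(nat \<times> 'b) rtree \<Rightarrow> nat \<times> 'b \<Rightarrow> nat \<times> 'b \<Rightarrow> (nat \<times> 'b \<Rightarrow> nat \<times> 'b) set" where
  "tIso T c d = {f. rt_iso (rt_subtree T c) (rt_subtree T d) f \<and> (\<forall>x. x \<notin> rt_nodes (rt_subtree T c) \<longrightarrow> f x = x)}"

context
  fixes T :: "(nat \<times> 'b) rtree"
  assumes gt: "gt T"
begin

lemma ch_gt: "c \<in> rt_children T \<Longrightarrow> gt (rt_subtree T c)"
  using gt_sub[OF gt] children_sub[OF gt] by blast

lemma tIso_ne: assumes c: "c \<in> rt_children T" shows "tIso T c d \<noteq> {} \<longleftrightarrow> rt_isomorphic (rt_subtree T c) (rt_subtree T d)"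
proof
  assume "tIso T c d \<noteq> {}" then show "rt_isomorphic (rt_subtree T c) (rt_subtree T d)"
    unfolding tIso_def rt_isomorphic_def by blast
next
  assume "rt_isomorphic (rt_subtree T c) (rt_subtree T d)"
  then obtain f where f: "rt_iso (rt_subtree T c) (rt_subtree T d) f" unfolding rt_isomorphic_def by blast
  have "rt_iso (rt_subtree T c) (rt_subtree T d) (rs (rt_nodes (rt_subtree T c)) f)"
    using rt_iso_cong[OF ch_gt[OF c] _ f] by (simp add: rs_in)
  then have "rs (rt_nodes (rt_subtree T c)) f \<in> tIso T c d" unfolding tIso_def by (simp add: rs_out)
  then show "tIso T c d \<noteq> {}" by blast
qed

lemma tree_rbij: "rbij (rt_children T) (\<lambda>c. rt_nodes (rt_subtree T c)) (tIso T)"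
proof
  show "finite (rt_children T)" using gt_fin[OF gt] children_sub[OF gt] finite_subset by blast
next
  fix c assume c: "c \<in> rt_children T"
  show "rt_nodes (rt_subtree T c) \<noteq> {}" using child_in_sub[OF gt] children_sub[OF gt] c by blast
next
  fix c d assume "c \<in> rt_children T" "d \<in> rt_children T" "c \<noteq> d"
  then show "rt_nodes (rt_subtree T c) \<inter> rt_nodes (rt_subtree T d) = {}" using sub_disj[OF gt] by blast
next
  fix c d f assume "c \<in> rt_children T" "d \<in> rt_children T" "f \<in> tIso T c d"
  then show "f \<in> rb (rt_nodes (rt_subtree T c)) (rt_nodes (rt_subtree T d))"
    unfolding tIso_def rb_def rt_iso_def by blast
next
  fix c assume "c \<in> rt_children T"
  then show "id \<in> tIso T c c" unfolding tIso_def rt_iso_def by (simp add: bij_betw_id)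
next
  fix c d e f g assume c: "c \<in> rt_children T" and d: "d \<in> rt_children T" and e: "e \<in> rt_children T"
    and f: "f \<in> tIso T c d" and g: "g \<in> tIso T d e"
  have gf: "rt_iso (rt_subtree T c) (rt_subtree T e) (g \<circ> f)"
    using rt_iso_comp[OF ch_gt[OF c]] f g unfolding tIso_def by blast
  have "\<And>x. x \<in> rt_nodes (rt_subtree T c) \<Longrightarrow> (g \<circ> f) x = rcomp (rt_nodes (rt_subtree T c)) g f x"
    by (simp add: rcomp_in)
  then have "rt_iso (rt_subtree T c) (rt_subtree T e) (rcomp (rt_nodes (rt_subtree T c)) g f)"
    using rt_iso_cong[OF ch_gt[OF c] _ gf] by blast
  then show "rcomp (rt_nodes (rt_subtree T c)) g f \<in> tIso T c e" unfolding tIso_def by (simp add: rcomp_out)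
next
  fix c d f assume c: "c \<in> rt_children T" and d: "d \<in> rt_children T" and f: "f \<in> tIso T c d"
  have fi: "rt_iso (rt_subtree T c) (rt_subtree T d) f" using f unfolding tIso_def by blast
  have i: "rt_iso (rt_subtree T d) (rt_subtree T c) (inv_into (rt_nodes (rt_subtree T c)) f)"
    using rt_iso_inv[OF ch_gt[OF c] fi] .
  have img: "f ` rt_nodes (rt_subtree T c) = rt_nodes (rt_subtree T d)" using fi unfolding rt_iso_def bij_betw_def by blast
  have "rt_iso (rt_subtree T d) (rt_subtree T c) (rinv (rt_nodes (rt_subtree T c)) f)"
    using rt_iso_cong[OF ch_gt[OF d] _ i] img unfolding rinv_def by simp
  moreover have "\<forall>x. x \<notin> rt_nodes (rt_subtree T d) \<longrightarrow> rinv (rt_nodes (rt_subtree T c)) f x = x"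
    using img unfolding rinv_def by simp
  ultimately show "rinv (rt_nodes (rt_subtree T c)) f \<in> tIso T d c" unfolding tIso_def by simp
qed

interpretation tr: rbij "rt_children T" "\<lambda>c. rt_nodes (rt_subtree T c)" "tIso T"
  using tree_rbij .

lemma aut_glob: "rt_aut T \<cong> tr.glob"
proof (rule tr.glob_iso)
  show "\<And>x y. x \<in> carrier (rt_aut T) \<Longrightarrow> y \<in> carrier (rt_aut T) \<Longrightarrow> x \<otimes>\<^bsub>rt_aut T\<^esub> y = x \<circ> y"
    unfolding rt_aut_def by simp
  define X where "X = (\<Union>c\<in>rt_children T. rt_nodes (rt_subtree T c))"
  have X: "X = rt_nodes T - {rt_root T}" unfolding X_def using sub_union[OF gt] .
  show "carrier (rt_aut T) = {w. (\<forall>x. x \<notin> X \<longrightarrow> w x = x) \<and>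
      (\<exists>\<pi>. \<pi> permutes rt_children T \<and> (\<forall>c\<in>rt_children T. rs (rt_nodes (rt_subtree T c)) w \<in> tIso T c (\<pi> c)))}"
    unfolding X_def[symmetric]
  proof (intro equalityI subsetI CollectI)
    fix f assume "f \<in> carrier (rt_aut T)"
    then have f: "rt_iso T T f" and fo: "\<forall>x. x \<notin> rt_nodes T \<longrightarrow> f x = x" unfolding rt_aut_def by auto
    have fr: "f (rt_root T) = rt_root T" using f unfolding rt_iso_def by blast
    have out: "\<forall>x. x \<notin> X \<longrightarrow> f x = x" using fo fr X by blast
    define \<pi> where "\<pi> c = (if c \<in> rt_children T then f c else c)" for c
    have ch: "\<And>c. c \<in> rt_children T \<Longrightarrow> f c \<in> rt_children T" using rt_iso_child[OF gt f] .
    have fi: "inj_on f (rt_nodes T)" using f unfolding rt_iso_def bij_betw_def by blast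
    have inj: "inj_on \<pi> (rt_children T)"
    proof
      fix c d assume c: "c \<in> rt_children T" and d: "d \<in> rt_children T" and e: "\<pi> c = \<pi> d"
      then have "f c = f d" unfolding \<pi>_def by simp
      then show "c = d" using inj_onD[OF fi] c d children_sub[OF gt] by blast
    qed
    have sub: "\<pi> ` rt_children T \<subseteq> rt_children T" using ch unfolding \<pi>_def by auto
    have img: "\<pi> ` rt_children T = rt_children T" using endo_inj_surj[OF tr.finC sub inj] .
    have perm: "\<pi> permutes rt_children T"
      using bij_imp_permutes[of \<pi> "rt_children T"] inj img unfolding bij_betw_def \<pi>_def by simp
    have iso: "rs (rt_nodes (rt_subtree T c)) f \<in> tIso T c (\<pi> c)" if c: "c \<in> rt_children T" for c
    proof -
      have fc: "rt_iso (rt_subtree T c) (rt_subtree T (f c)) f" using rt_iso_sub(2)[OF gt gt f c] .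
      have "\<And>x. x \<in> rt_nodes (rt_subtree T c) \<Longrightarrow> f x = rs (rt_nodes (rt_subtree T c)) f x" by (simp add: rs_in)
      then have "rt_iso (rt_subtree T c) (rt_subtree T (f c)) (rs (rt_nodes (rt_subtree T c)) f)"
        using rt_iso_cong[OF ch_gt[OF c] _ fc] by blast
      then show ?thesis unfolding tIso_def \<pi>_def using c by (simp add: rs_out)
    qed
    show "(\<forall>x. x \<notin> X \<longrightarrow> f x = x) \<and> (\<exists>\<pi>. \<pi> permutes rt_children T \<and>
        (\<forall>c\<in>rt_children T. rs (rt_nodes (rt_subtree T c)) f \<in> tIso T c (\<pi> c)))"
      using out perm iso by blast
  next
    fix w assume "w \<in> {w. (\<forall>x. x \<notin> X \<longrightarrow> w x = x) \<and> (\<exists>\<pi>. \<pi> permutes rt_children T \<and>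
        (\<forall>c\<in>rt_children T. rs (rt_nodes (rt_subtree T c)) w \<in> tIso T c (\<pi> c)))}"
    then obtain \<pi> where out: "\<forall>x. x \<notin> X \<longrightarrow> w x = x" and perm: "\<pi> permutes rt_children T"
      and iso: "\<And>c. c \<in> rt_children T \<Longrightarrow> rs (rt_nodes (rt_subtree T c)) w \<in> tIso T c (\<pi> c)" by blast
    have pc: "\<And>c. c \<in> rt_children T \<Longrightarrow> \<pi> c \<in> rt_children T" using permutes_in_image[OF perm] by simp
    have rbw: "rs (rt_nodes (rt_subtree T c)) w \<in> rb (rt_nodes (rt_subtree T c)) (rt_nodes (rt_subtree T (\<pi> c)))"
      if c: "c \<in> rt_children T" for c using tr.Iso_rb[OF c pc[OF c] iso[OF c]] .
    have isoc: "rt_iso (rt_subtree T c) (rt_subtree T (\<pi> c)) (rs (rt_nodes (rt_subtree T c)) w)"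
      if c: "c \<in> rt_children T" for c using iso[OF c] unfolding tIso_def by blast
    have wS: "w v \<in> rt_nodes (rt_subtree T (\<pi> c))" if c: "c \<in> rt_children T" and v: "v \<in> rt_nodes (rt_subtree T c)" for c v
      using rb_in[OF rbw[OF c] v] v by (simp add: rs_in)
    have rootX: "rt_root T \<notin> X" using X by blast
    have wr: "w (rt_root T) = rt_root T" using out rootX by blast
    have Xn: "X \<subseteq> rt_nodes T" using X by blast
    have injX: "inj_on w X"
    proof
      fix x y assume x: "x \<in> X" and y: "y \<in> X" and e: "w x = w y"
      obtain c where c: "c \<in> rt_children T" "x \<in> rt_nodes (rt_subtree T c)" using x unfolding X_def by blast
      obtain d where d: "d \<in> rt_children T" "y \<in> rt_nodes (rt_subtree T d)" using y unfolding X_def by blast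
      have "\<pi> c = \<pi> d" using sub_disj[OF gt pc[OF c(1)] pc[OF d(1)] wS[OF c] ] wS[OF d] e by simp
      then have cd: "c = d" using permutes_inj[OF perm] by (meson injD)
      have "rs (rt_nodes (rt_subtree T c)) w x = rs (rt_nodes (rt_subtree T c)) w y"
        using e c(2) d(2) cd by (simp add: rs_in)
      then show "x = y" using rb_inj[OF rbw[OF c(1)] c(2)] d(2) cd by blast
    qed
    have imgX: "w ` X = X"
    proof
      show "w ` X \<subseteq> X" unfolding X_def using wS pc by blast
      show "X \<subseteq> w ` X"
      proof
        fix y assume "y \<in> X"
        then obtain d where d: "d \<in> rt_children T" "y \<in> rt_nodes (rt_subtree T d)" unfolding X_def by blast
        define c where "c = inv_into UNIV \<pi> d"
        have c: "c \<in> rt_children T" "\<pi> c = d" unfolding c_def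
          using permutes_in_image[OF permutes_inv[OF perm]] d(1) permutes_inverses(1)[OF perm] by auto
        have "y \<in> rs (rt_nodes (rt_subtree T c)) w ` rt_nodes (rt_subtree T c)"
          using rb_img[OF rbw[OF c(1)]] c(2) d(2) by simp
        then obtain x where x: "x \<in> rt_nodes (rt_subtree T c)" "y = w x" by (auto simp: rs_in)
        then show "y \<in> w ` X" unfolding X_def using c(1) by blast
      qed
    qed
    have bij: "bij_betw w (rt_nodes T) (rt_nodes T)"
    proof -
      have nT: "rt_nodes T = insert (rt_root T) X" using X gt_root[OF gt] by blast
      show ?thesis unfolding nT bij_betw_def using injX imgX wr rootX by (simp add: inj_on_insert) 
    qed
    have par: "\<forall>v\<in>rt_nodes T - {rt_root T}. w (rt_par T v) = rt_par T (w v)"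
    proof
      fix v assume v: "v \<in> rt_nodes T - {rt_root T}"
      then obtain c where c: "c \<in> rt_children T" "v \<in> rt_nodes (rt_subtree T c)" using sub_cover[OF gt] by blast
      show "w (rt_par T v) = rt_par T (w v)"
      proof (cases "v = c")
        case True
        have "rs (rt_nodes (rt_subtree T c)) w c = \<pi> c" using isoc[OF c(1)] unfolding rt_iso_def rt_subtree_def by simp
        then have "w c = \<pi> c" using c(2) True by (simp add: rs_in)
        moreover have "rt_par T c = rt_root T" "rt_par T (\<pi> c) = rt_root T" using c(1) pc[OF c(1)] unfolding rt_children_def by auto
        ultimately show ?thesis using True wr by simp
      next
        case False
        have pv: "rt_par T v \<in> rt_nodes (rt_subtree T c)" using gt_clos[OF ch_gt[OF c(1)]] c(2) False
          unfolding rt_subtree_def by simp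
        have "rs (rt_nodes (rt_subtree T c)) w (rt_par T v) = rt_par T (rs (rt_nodes (rt_subtree T c)) w v)"
          using isoc[OF c(1)] c(2) False unfolding rt_iso_def rt_subtree_def by simp
        then show ?thesis using pv c(2) by (simp add: rs_in)
      qed
    qed
    have rank: "\<forall>v\<in>rt_nodes T. rt_rank T (w v) = rt_rank T v"
    proof
      fix v assume v: "v \<in> rt_nodes T"
      show "rt_rank T (w v) = rt_rank T v"
      proof (cases "v = rt_root T")
        case True then show ?thesis using wr by simp
      next
        case False
        then obtain c where c: "c \<in> rt_children T" "v \<in> rt_nodes (rt_subtree T c)" using sub_cover[OF gt] v by blast
        have "\<forall>v\<in>rt_nodes (rt_subtree T c). rt_rank (rt_subtree T (\<pi> c)) (rs (rt_nodes (rt_subtree T c)) w v) = rt_rank (rt_subtree T c) v"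
          using isoc[OF c(1)] unfolding rt_iso_def by blast
        then have "rt_rank T (rs (rt_nodes (rt_subtree T c)) w v) = rt_rank T v"
          using c(2) by (simp add: sub_rank)
        then show ?thesis using c(2) by (simp add: rs_in)
      qed
    qed
    have "rt_iso T T w" unfolding rt_iso_def using bij wr par rank by blast
    moreover have "\<forall>x. x \<notin> rt_nodes T \<longrightarrow> w x = x" using out Xn by blast
    ultimately show "w \<in> carrier (rt_aut T)" unfolding rt_aut_def by simp
  qed
qed

lemma some_reps: "rt_reps T (rt_some_reps T)"
proof -
  have "\<exists>cs. rt_reps T cs"
  proof -
    have "\<exists>cs. set cs \<subseteq> rt_children T \<and>
       (\<forall>x\<in>rt_children T. \<exists>y\<in>set cs. tIso T x y \<noteq> {}) \<and>
       (\<forall>i<length cs. \<forall>j<length cs. i \<noteq> j \<longrightarrow> \<not> tIso T (cs!i) (cs!j) \<noteq> {})"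
      by (rule reps_exist[OF tr.finC tr.R_refl tr.R_sym tr.R_trans])
    then obtain cs where cs: "set cs \<subseteq> rt_children T" "\<forall>x\<in>rt_children T. \<exists>y\<in>set cs. tIso T x y \<noteq> {}"
       "\<forall>i<length cs. \<forall>j<length cs. i \<noteq> j \<longrightarrow> \<not> tIso T (cs!i) (cs!j) \<noteq> {}" by blast
    have c2: "\<forall>c\<in>rt_children T. \<exists>d\<in>set cs. rt_isomorphic (rt_subtree T c) (rt_subtree T d)"
    proof
      fix c assume c: "c \<in> rt_children T"
      then obtain d where "d \<in> set cs" "tIso T c d \<noteq> {}" using cs(2) by blast
      then show "\<exists>d\<in>set cs. rt_isomorphic (rt_subtree T c) (rt_subtree T d)" using tIso_ne[OF c] by blast
    qed
    have c3: "\<forall>i<length cs. \<forall>j<length cs. i \<noteq> j \<longrightarrow> \<not> rt_isomorphic (rt_subtree T (cs ! i)) (rt_subtree T (cs ! j))"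
    proof (intro allI impI)
      fix i j assume i: "i < length cs" and j: "j < length cs" and ij: "i \<noteq> j"
      have ci: "cs ! i \<in> rt_children T" using cs(1) nth_mem[OF i] by blast
      show "\<not> rt_isomorphic (rt_subtree T (cs ! i)) (rt_subtree T (cs ! j))"
        using cs(3) i j ij tIso_ne[OF ci] by blast
    qed
    have "rt_reps T cs" unfolding rt_reps_def using cs(1) c2 c3 by blast
    then show ?thesis by blast
  qed
  then show ?thesis unfolding rt_some_reps_def by (rule someI_ex)
qed

theorem aut_decomp:
  "rt_aut T \<cong> dprod (map (\<lambda>c. wreath (rt_mult T c) (rt_aut (rt_subtree T c))) (rt_some_reps T))"
proof -
  define cs where "cs = rt_some_reps T"
  have r: "rt_reps T cs" unfolding cs_def using some_reps .
  have csC: "set cs \<subseteq> rt_children T" using r unfolding rt_reps_def by blast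
  interpret rr: rbij_reps "rt_children T" "\<lambda>c. rt_nodes (rt_subtree T c)" "tIso T" cs "rt_mult T" "\<lambda>c. rt_aut (rt_subtree T c)"
  proof
    show "set cs \<subseteq> rt_children T" using csC .
    show "\<exists>d\<in>set cs. tIso T c d \<noteq> {}" if c: "c \<in> rt_children T" for c
    proof -
      obtain d where "d \<in> set cs" "rt_isomorphic (rt_subtree T c) (rt_subtree T d)"
        using r c unfolding rt_reps_def by blast
      then show ?thesis using tIso_ne[OF c] by blast
    qed
    show "tIso T (cs ! i) (cs ! j) = {}" if i: "i < length cs" and j: "j < length cs" and ij: "i \<noteq> j" for i j
    proof -
      have ci: "cs ! i \<in> rt_children T" using csC nth_mem[OF i] by blast
      have "\<not> rt_isomorphic (rt_subtree T (cs ! i)) (rt_subtree T (cs ! j))"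
        using r i j ij unfolding rt_reps_def by blast
      then show ?thesis using tIso_ne[OF ci] by blast
    qed
    show "\<And>c. c \<in> set cs \<Longrightarrow> rt_mult T c = card {d \<in> rt_children T. tIso T d c \<noteq> {}}"
      unfolding rt_mult_def using tIso_ne by (metis (no_types, lifting) Collect_cong)
    show "\<And>c. c \<in> set cs \<Longrightarrow> carrier (rt_aut (rt_subtree T c)) = tIso T c c"
      unfolding rt_aut_def tIso_def by simp
    show "\<And>c x y. c \<in> set cs \<Longrightarrow> x \<in> tIso T c c \<Longrightarrow> y \<in> tIso T c c \<Longrightarrow>
        x \<otimes>\<^bsub>rt_aut (rt_subtree T c)\<^esub> y = rcomp (rt_nodes (rt_subtree T c)) x y"
    proof -
      fix c x y assume "c \<in> set cs" "x \<in> tIso T c c" "y \<in> tIso T c c"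
      then have "\<forall>z. z \<notin> rt_nodes (rt_subtree T c) \<longrightarrow> x z = z" "\<forall>z. z \<notin> rt_nodes (rt_subtree T c) \<longrightarrow> y z = z"
        unfolding tIso_def by auto
      then show "x \<otimes>\<^bsub>rt_aut (rt_subtree T c)\<^esub> y = rcomp (rt_nodes (rt_subtree T c)) x y"
        unfolding rt_aut_def rcomp_def by (auto intro!: ext)
    qed
  qed
  have "rt_aut T \<cong> tr.glob" using aut_glob .
  also have "tr.glob \<cong> dprod (map (\<lambda>c. wreath (rt_mult T c) (rt_aut (rt_subtree T c))) cs)"
    using rr.glob_dprod .
  finally show ?thesis unfolding cs_def .
qed

end

lemma same_part_mono: "same_part p A l a b \<Longrightarrow> l \<le> l' \<Longrightarrow> same_part p A l' a b"
  unfolding same_part_def by auto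
lemma same_part_refl: "same_part p A l a a" unfolding same_part_def by auto
lemma same_part_sym: "same_part p A l a b \<Longrightarrow> same_part p A l b a" unfolding same_part_def by auto
lemma same_part_trans: "same_part p A l a b \<Longrightarrow> same_part p A l b c \<Longrightarrow> same_part p A l a c"
  unfolding same_part_def by auto
lemma same_part_top: "p < l \<Longrightarrow> same_part p A l a b" unfolding same_part_def by auto

definition pres :: "nat \<Rightarrow> (nat \<Rightarrow> nat \<Rightarrow> complex) \<Rightarrow> (nat \<Rightarrow> nat) \<Rightarrow> nat set \<Rightarrow> bool" where
  "pres p A w M \<longleftrightarrow> (\<forall>l\<ge>1. \<forall>a\<in>M. \<forall>b\<in>M. same_part p A l a b \<longleftrightarrow> same_part p A l (w a) (w b))"

definition SG :: "nat \<Rightarrow> (nat \<Rightarrow> nat \<Rightarrow> complex) \<Rightarrow> nat set \<Rightarrow> (nat \<Rightarrow> nat) monoid" where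
  "SG p A M = \<lparr>carrier = {w. w permutes M \<and> pres p A w M}, mult = (\<circ>), one = id\<rparr>"

context
  fixes n p :: nat and A :: "nat \<Rightarrow> nat \<Rightarrow> complex"
  assumes n1: "n \<ge> 1" and p1: "p \<ge> 1"
begin

abbreviation "Pt l a \<equiv> {b \<in> {1..n}. same_part p A l a b}"
abbreviation "FT \<equiv> fission_tree n p A"
abbreviation "ST m M \<equiv> rt_subtree FT (m, M)"

lemma parts_eq: "parts n p A l = (\<lambda>a. Pt l a) ` {1..n}" unfolding parts_def ..

lemma Pt_self: "a \<in> {1..n} \<Longrightarrow> a \<in> Pt l a" using same_part_refl by auto
lemma Pt_eq: "b \<in> Pt l a \<Longrightarrow> Pt l b = Pt l a"
  using same_part_sym same_part_trans by blast
lemma Pt_mono: "l \<le> l' \<Longrightarrow> Pt l a \<subseteq> Pt l' a" using same_part_mono by blast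
lemma Pt_top: "p < l \<Longrightarrow> Pt l a = {1..n}" using same_part_top by blast
lemma Pt_sub: "Pt l a \<subseteq> {1..n}" by blast
lemma Pt_iff: "a \<in> {1..n} \<Longrightarrow> b \<in> {1..n} \<Longrightarrow> Pt l a = Pt l b \<longleftrightarrow> same_part p A l a b"
  using Pt_eq Pt_self by blast

lemma FT_nodes: "rt_nodes FT = {(l, L). l \<in> {1..p+1} \<and> L \<in> parts n p A l}"
  unfolding fission_tree_def by simp
lemma FT_root: "rt_root FT = (p + 1, {1..n})" unfolding fission_tree_def by simp
lemma FT_rank: "rt_rank FT = (\<lambda>(l, L). card L)" unfolding fission_tree_def by simp

lemma FT_par: assumes a: "a \<in> {1..n}" shows "rt_par FT (l, Pt l a) = (Suc l, Pt (Suc l) a)"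
proof -
  have "(THE L'. L' \<in> parts n p A (l + 1) \<and> Pt l a \<subseteq> L') = Pt (Suc l) a"
  proof (rule the_equality)
    show "Pt (Suc l) a \<in> parts n p A (l + 1) \<and> Pt l a \<subseteq> Pt (Suc l) a"
      unfolding parts_eq using a Pt_mono[of l "Suc l" a] by auto
    fix L' assume L': "L' \<in> parts n p A (l + 1) \<and> Pt l a \<subseteq> L'"
    then obtain b where b: "b \<in> {1..n}" "L' = Pt (Suc l) b" unfolding parts_eq by auto
    have "a \<in> L'" using L' Pt_self[OF a] by blast
    then show "L' = Pt (Suc l) a" using b Pt_eq by blast
  qed
  then show ?thesis unfolding fission_tree_def by simp
qed

lemma FT_fst_par: "fst (rt_par FT v) = Suc (fst v)"
  unfolding fission_tree_def by (simp add: case_prod_beta)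

lemma FT_parpow: "a \<in> {1..n} \<Longrightarrow> (rt_par FT ^^ k) (l, Pt l a) = (l + k, Pt (l + k) a)"
proof (induction k)
  case 0 then show ?case by simp
next
  case (Suc k) then show ?case using FT_par by simp
qed

lemma root_part: "{1..n} = Pt (p+1) 1" using Pt_top[of "p+1"] by simp

lemma gt_FT: "gt FT"
  unfolding gt_def
proof (intro conjI)
  have "rt_nodes FT \<subseteq> {1..p+1} \<times> Pow {1..n}" unfolding FT_nodes parts_eq by auto
  then show "finite (rt_nodes FT)" using finite_subset by blast
  show "rt_root FT \<in> rt_nodes FT" unfolding FT_root FT_nodes parts_eq using n1 Pt_top[of "p+1"]
    by (auto intro!: image_eqI[of _ _ 1])
  show "\<forall>v. fst (rt_par FT v) = Suc (fst v)" using FT_fst_par by blast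
  show "\<forall>v\<in>rt_nodes FT. \<exists>k. (rt_par FT ^^ k) v = rt_root FT"
  proof
    fix v assume "v \<in> rt_nodes FT"
    then obtain l a where v: "v = (l, Pt l a)" "l \<in> {1..p+1}" "a \<in> {1..n}" unfolding FT_nodes parts_eq by auto
    have "(rt_par FT ^^ (p + 1 - l)) v = (p + 1, Pt (p+1) a)" using FT_parpow[OF v(3)] v by simp
    also have "... = rt_root FT" unfolding FT_root using Pt_top[of "p+1"] by simp
    finally show "\<exists>k. (rt_par FT ^^ k) v = rt_root FT" by blast
  qed
  show "\<forall>v\<in>rt_nodes FT - {rt_root FT}. rt_par FT v \<in> rt_nodes FT"
  proof
    fix v assume v0: "v \<in> rt_nodes FT - {rt_root FT}"
    then obtain l a where v: "v = (l, Pt l a)" "l \<in> {1..p+1}" "a \<in> {1..n}" unfolding FT_nodes parts_eq by auto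
    have "l \<noteq> p + 1" using v0 v Pt_top[of "p+1"] unfolding FT_root by auto
    then show "rt_par FT v \<in> rt_nodes FT" unfolding v(1) FT_par[OF v(3)] FT_nodes parts_eq using v by auto
  qed
qed

lemma ST_nodes: assumes m: "1 \<le> m" "m \<le> p + 1" and a0: "a0 \<in> {1..n}"
  shows "rt_nodes (ST m (Pt m a0)) = {(l, Pt l a) | l a. 1 \<le> l \<and> l \<le> m \<and> a \<in> Pt m a0}"
proof
  show "rt_nodes (ST m (Pt m a0)) \<subseteq> {(l, Pt l a) | l a. 1 \<le> l \<and> l \<le> m \<and> a \<in> Pt m a0}"
  proof
    fix v assume "v \<in> rt_nodes (ST m (Pt m a0))"
    then obtain k where k: "(rt_par FT ^^ k) v = (m, Pt m a0)" "v \<in> rt_nodes FT" unfolding sub_nodes[OF gt_FT] by blast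
    then obtain l a where v: "v = (l, Pt l a)" "l \<in> {1..p+1}" "a \<in> {1..n}" unfolding FT_nodes parts_eq by auto
    have e: "(l + k, Pt (l + k) a) = (m, Pt m a0)" using k(1) unfolding v(1) FT_parpow[OF v(3)] .
    have e1: "l + k = m" using e by (metis fst_conv)
    have e2: "Pt (l + k) a = Pt m a0" using e by (metis snd_conv)
    have "Pt m a = Pt m a0" using e2 unfolding e1 .
    then have "a \<in> Pt m a0" using Pt_self[OF v(3)] by blast
    then show "v \<in> {(l, Pt l a) | l a. 1 \<le> l \<and> l \<le> m \<and> a \<in> Pt m a0}" using v \<open>l + k = m\<close> by auto
  qed
  show "{(l, Pt l a) | l a. 1 \<le> l \<and> l \<le> m \<and> a \<in> Pt m a0} \<subseteq> rt_nodes (ST m (Pt m a0))"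
  proof
    fix v assume "v \<in> {(l, Pt l a) | l a. 1 \<le> l \<and> l \<le> m \<and> a \<in> Pt m a0}"
    then obtain l a where v: "v = (l, Pt l a)" "1 \<le> l" "l \<le> m" "a \<in> Pt m a0" by blast
    have a: "a \<in> {1..n}" using v(4) by blast
    have vn: "v \<in> rt_nodes FT" unfolding v(1) FT_nodes parts_eq using v m a by auto
    have "(rt_par FT ^^ (m - l)) v = (m, Pt m a)" using FT_parpow[OF a] v by simp
    also have "... = (m, Pt m a0)" using Pt_eq[OF v(4)] by simp
    finally show "v \<in> rt_nodes (ST m (Pt m a0))" unfolding sub_nodes[OF gt_FT] using vn by blast
  qed
qed

lemma ST_node_in: "m \<le> p + 1 \<Longrightarrow> 1 \<le> m \<Longrightarrow> a0 \<in> {1..n} \<Longrightarrow> (m, Pt m a0) \<in> rt_nodes FT"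
  unfolding FT_nodes parts_eq by auto

lemma ST_gt: "m \<le> p + 1 \<Longrightarrow> 1 \<le> m \<Longrightarrow> a0 \<in> {1..n} \<Longrightarrow> gt (ST m (Pt m a0))"
  using gt_sub[OF gt_FT] ST_node_in by blast

lemma ST_children: assumes m: "2 \<le> m" "m \<le> p + 1" and a0: "a0 \<in> {1..n}"
  shows "rt_children (ST m (Pt m a0)) = {(m - 1, Pt (m - 1) a) | a. a \<in> Pt m a0}"
proof
  have g: "gt (ST m (Pt m a0))" using ST_gt m a0 by simp
  have nodes: "rt_nodes (ST m (Pt m a0)) = {(l, Pt l a) | l a. 1 \<le> l \<and> l \<le> m \<and> a \<in> Pt m a0}"
    using ST_nodes[of m a0] m a0 by simp
  show "rt_children (ST m (Pt m a0)) \<subseteq> {(m - 1, Pt (m - 1) a) | a. a \<in> Pt m a0}"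
  proof
    fix c assume c: "c \<in> rt_children (ST m (Pt m a0))"
    have f: "Suc (fst c) = m" using child_fst[OF g c] by simp
    have "c \<in> rt_nodes (ST m (Pt m a0))" using c unfolding rt_children_def by blast
    then have "c \<in> {(l, Pt l a) | l a. 1 \<le> l \<and> l \<le> m \<and> a \<in> Pt m a0}" using ST_nodes[OF _ m(2) a0] m by simp
    then obtain l a where la: "c = (l, Pt l a)" "a \<in> Pt m a0" by blast
    have "l = m - 1" using f la(1) by simp
    then show "c \<in> {(m - 1, Pt (m - 1) a) | a. a \<in> Pt m a0}" using la by blast
  qed
  show "{(m - 1, Pt (m - 1) a) | a. a \<in> Pt m a0} \<subseteq> rt_children (ST m (Pt m a0))"
  proof
    fix c assume "c \<in> {(m - 1, Pt (m - 1) a) | a. a \<in> Pt m a0}"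
    then obtain a where c: "c = (m - 1, Pt (m - 1) a)" "a \<in> Pt m a0" by blast
    have a: "a \<in> {1..n}" using c(2) by blast
    have "c \<in> rt_nodes (ST m (Pt m a0))" unfolding nodes using c m by force
    moreover have "c \<noteq> (m, Pt m a0)" using c m by auto
    moreover have "rt_par FT c = (m, Pt m a0)" unfolding c(1) using FT_par[OF a, of "m - 1"] Pt_eq[OF c(2)] m
      by (simp add: Suc_diff_Suc numeral_2_eq_2)
    ultimately show "c \<in> rt_children (ST m (Pt m a0))" unfolding rt_children_def by simp
  qed
qed

lemma ST_single: assumes a0: "a0 \<in> {1..n}" shows "rt_nodes (ST 1 (Pt 1 a0)) = {(1, Pt 1 a0)}"
proof -
  have "rt_nodes (ST 1 (Pt 1 a0)) = {(l, Pt l a) | l a. 1 \<le> l \<and> l \<le> 1 \<and> a \<in> Pt 1 a0}"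
    using ST_nodes[of 1 a0] a0 p1 by simp
  also have "... = {(1, Pt 1 a0)}" using Pt_eq Pt_self[OF a0] by fastforce
  finally show ?thesis .
qed

end

context rbij begin
lemma glue_bij:
  assumes perm: "\<pi> permutes C" and iso: "\<And>c. c \<in> C \<Longrightarrow> rs (S c) w \<in> Iso c (\<pi> c)"
  shows "bij_betw w (\<Union>c\<in>C. S c) (\<Union>c\<in>C. S c)"
proof -
  have pc: "\<And>c. c \<in> C \<Longrightarrow> \<pi> c \<in> C" using permutes_in_image[OF perm] by simp
  have rbw: "rs (S c) w \<in> rb (S c) (S (\<pi> c))" if c: "c \<in> C" for c using Iso_rb[OF c pc[OF c] iso[OF c]] .
  have wS: "w v \<in> S (\<pi> c)" if c: "c \<in> C" and v: "v \<in> S c" for c v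
    using rb_in[OF rbw[OF c] v] v by (simp add: rs_in)
  have inj: "inj_on w (\<Union>c\<in>C. S c)"
  proof
    fix x y assume x: "x \<in> (\<Union>c\<in>C. S c)" and y: "y \<in> (\<Union>c\<in>C. S c)" and e: "w x = w y"
    obtain c where c: "c \<in> C" "x \<in> S c" using x by blast
    obtain d where d: "d \<in> C" "y \<in> S d" using y by blast
    have "\<pi> c = \<pi> d" using cell_unique[OF pc[OF c(1)] pc[OF d(1)] wS[OF c]] wS[OF d] e by simp
    then have cd: "c = d" using permutes_inj[OF perm] by (meson injD)
    have "rs (S c) w x = rs (S c) w y" using e c(2) d(2) cd by (simp add: rs_in)
    then show "x = y" using rb_inj[OF rbw[OF c(1)] c(2)] d(2) cd by blast
  qed
  have img: "w ` (\<Union>c\<in>C. S c) = (\<Union>c\<in>C. S c)"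
  proof
    show "w ` (\<Union>c\<in>C. S c) \<subseteq> (\<Union>c\<in>C. S c)" using wS pc by blast
    show "(\<Union>c\<in>C. S c) \<subseteq> w ` (\<Union>c\<in>C. S c)"
    proof
      fix y assume "y \<in> (\<Union>c\<in>C. S c)"
      then obtain d where d: "d \<in> C" "y \<in> S d" by blast
      define c where "c = inv_into UNIV \<pi> d"
      have c: "c \<in> C" "\<pi> c = d" unfolding c_def
        using permutes_in_image[OF permutes_inv[OF perm]] d(1) permutes_inverses(1)[OF perm] by auto
      have "y \<in> rs (S c) w ` S c" using rb_img[OF rbw[OF c(1)]] c(2) d(2) by simp
      then obtain x where x: "x \<in> S c" "y = w x" by (auto simp: rs_in)
      then show "y \<in> w ` (\<Union>c\<in>C. S c)" using c(1) by blast
    qed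
  qed
  show ?thesis using inj img unfolding bij_betw_def by blast
qed
end

context
  fixes n p :: nat and A :: "nat \<Rightarrow> nat \<Rightarrow> complex"
  assumes n1: "n \<ge> 1" and p1: "p \<ge> 1"
begin

lemma Pt_in_top: "a \<in> Pt n p A m a0 \<Longrightarrow> l \<le> m \<Longrightarrow> Pt n p A l a \<subseteq> Pt n p A m a0"
  using Pt_mono[OF n1 p1] Pt_eq[OF n1 p1] by blast

lemma img_part:
  assumes w: "w \<in> rb (Pt n p A m a0) (Pt n p A m b0)" and pw: "pres p A w (Pt n p A m a0)"
    and l: "1 \<le> l" "l \<le> m" and a: "a \<in> Pt n p A m a0"
  shows "w ` Pt n p A l a = Pt n p A l (w a)"
proof
  have wa: "w a \<in> Pt n p A m b0" using rb_in[OF w a] .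
  have sub1: "Pt n p A l a \<subseteq> Pt n p A m a0" using Pt_in_top[OF a l(2)] .
  have sub2: "Pt n p A l (w a) \<subseteq> Pt n p A m b0" using Pt_in_top[OF wa l(2)] .
  show "w ` Pt n p A l a \<subseteq> Pt n p A l (w a)"
  proof
    fix y assume "y \<in> w ` Pt n p A l a"
    then obtain x where x: "x \<in> Pt n p A l a" "y = w x" by blast
    have xM: "x \<in> Pt n p A m a0" using sub1 x(1) by blast
    have "same_part p A l (w a) (w x)" using pw x(1) a xM l(1) unfolding pres_def by blast
    moreover have "w x \<in> {1..n}" using rb_in[OF w xM] by blast
    ultimately show "y \<in> Pt n p A l (w a)" using x(2) by blast
  qed
  show "Pt n p A l (w a) \<subseteq> w ` Pt n p A l a"
  proof
    fix y assume y: "y \<in> Pt n p A l (w a)"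
    have "y \<in> w ` Pt n p A m a0" using sub2 y rb_img[OF w] by blast
    then obtain x where x: "x \<in> Pt n p A m a0" "y = w x" by blast
    have "same_part p A l (w a) (w x)" using y x(2) by blast
    then have "same_part p A l a x" using pw x(1) a l(1) unfolding pres_def by blast
    then show "y \<in> w ` Pt n p A l a" using x by blast
  qed
qed

lemma treeiso_of_pres:
  assumes m: "1 \<le> m" "m \<le> p + 1" and a0: "a0 \<in> {1..n}" and b0: "b0 \<in> {1..n}"
    and w: "w \<in> rb (Pt n p A m a0) (Pt n p A m b0)" and pw: "pres p A w (Pt n p A m a0)"
  shows "rt_isomorphic (ST n p A m (Pt n p A m a0)) (ST n p A m (Pt n p A m b0))"
proof -
  define M where "M = Pt n p A m a0"
  define M' where "M' = Pt n p A m b0"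
  define g where "g = (\<lambda>(l::nat, L::nat set). (l, w ` L))"
  have N1: "rt_nodes (ST n p A m M) = {(l, Pt n p A l a) | l a. 1 \<le> l \<and> l \<le> m \<and> a \<in> M}"
    unfolding M_def using ST_nodes[OF n1 p1 m a0] .
  have N2: "rt_nodes (ST n p A m M') = {(l, Pt n p A l a) | l a. 1 \<le> l \<and> l \<le> m \<and> a \<in> M'}"
    unfolding M'_def using ST_nodes[OF n1 p1 m b0] .
  have w': "w \<in> rb M M'" unfolding M_def M'_def using w .
  have gv: "g (l, Pt n p A l a) = (l, Pt n p A l (w a))" if "1 \<le> l" "l \<le> m" "a \<in> M" for l a
    unfolding g_def using img_part[OF w pw that[unfolded M_def]] by simp
  have bij: "bij_betw g (rt_nodes (ST n p A m M)) (rt_nodes (ST n p A m M'))"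
    unfolding bij_betw_def
  proof
    show "inj_on g (rt_nodes (ST n p A m M))"
    proof
      fix x y assume x: "x \<in> rt_nodes (ST n p A m M)" and y: "y \<in> rt_nodes (ST n p A m M)" and e: "g x = g y"
      obtain l a where xa: "x = (l, Pt n p A l a)" "1 \<le> l" "l \<le> m" "a \<in> M" using x unfolding N1 by blast
      obtain l' b where yb: "y = (l', Pt n p A l' b)" "1 \<le> l'" "l' \<le> m" "b \<in> M" using y unfolding N1 by blast
      have e2: "(l, Pt n p A l (w a)) = (l', Pt n p A l' (w b))"
        using e gv[OF xa(2-4)] gv[OF yb(2-4)] xa(1) yb(1) by metis
      then have ll: "l = l'" by simp
      have e3: "Pt n p A l (w a) = Pt n p A l' (w b)" using e2 by (metis snd_conv)
      have "Pt n p A l (w a) = Pt n p A l (w b)" using e3 unfolding ll[symmetric] .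
      moreover have "w a \<in> {1..n}" "w b \<in> {1..n}" using rb_in[OF w' xa(4)] rb_in[OF w' yb(4)] unfolding M'_def by auto
      ultimately have "same_part p A l (w a) (w b)" using Pt_iff[OF n1 p1] by blast
      then have "same_part p A l a b" using pw xa(2,4) yb(4) unfolding pres_def M_def by blast
      then have "Pt n p A l a = Pt n p A l b" using Pt_iff[OF n1 p1] xa(4) yb(4) unfolding M_def by blast
      then show "x = y" using xa yb ll by simp
    qed
    show "g ` rt_nodes (ST n p A m M) = rt_nodes (ST n p A m M')"
    proof
      show "g ` rt_nodes (ST n p A m M) \<subseteq> rt_nodes (ST n p A m M')"
      proof
        fix y assume "y \<in> g ` rt_nodes (ST n p A m M)"
        then obtain l a where la: "y = g (l, Pt n p A l a)" "1 \<le> l" "l \<le> m" "a \<in> M" unfolding N1 by blast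
        have "w a \<in> M'" using rb_in[OF w' la(4)] .
        then show "y \<in> rt_nodes (ST n p A m M')" unfolding N2 la(1) gv[OF la(2-4)] using la by blast
      qed
      show "rt_nodes (ST n p A m M') \<subseteq> g ` rt_nodes (ST n p A m M)"
      proof
        fix y assume "y \<in> rt_nodes (ST n p A m M')"
        then obtain l b where lb: "y = (l, Pt n p A l b)" "1 \<le> l" "l \<le> m" "b \<in> M'" unfolding N2 by blast
        obtain a where a: "a \<in> M" "b = w a" using lb(4) rb_img[OF w'] by blast
        have "(l, Pt n p A l a) \<in> rt_nodes (ST n p A m M)" unfolding N1 using lb a by blast
        moreover have "g (l, Pt n p A l a) = y" using gv[OF lb(2,3) a(1)] lb(1) a(2) by simp
        ultimately show "y \<in> g ` rt_nodes (ST n p A m M)" by blast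
      qed
    qed
  qed
  have a0M: "a0 \<in> M" unfolding M_def using Pt_self[OF n1 p1 a0] .
  have groot: "g (m, M) = (m, M')" unfolding g_def using rb_img[OF w'] by simp
  have par: "\<forall>v\<in>rt_nodes (ST n p A m M) - {(m, M)}. g (rt_par (FT n p A) v) = rt_par (FT n p A) (g v)"
  proof
    fix v assume v: "v \<in> rt_nodes (ST n p A m M) - {(m, M)}"
    obtain l a where la: "v = (l, Pt n p A l a)" "1 \<le> l" "l \<le> m" "a \<in> M" using v unfolding N1 by blast
    have a1: "a \<in> {1..n}" using la(4) unfolding M_def by blast
    have "l \<noteq> m" using v la Pt_eq[OF n1 p1] unfolding M_def by auto
    then have lm: "Suc l \<le> m" using la by simp
    have wa: "w a \<in> {1..n}" using rb_in[OF w' la(4)] unfolding M'_def by blast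
    have "g (rt_par (FT n p A) v) = g (Suc l, Pt n p A (Suc l) a)" unfolding la(1) FT_par[OF n1 p1 a1] ..
    also have "... = (Suc l, Pt n p A (Suc l) (w a))" using gv[OF _ lm la(4)] by simp
    also have "... = rt_par (FT n p A) (l, Pt n p A l (w a))" using FT_par[OF n1 p1 wa] by simp
    also have "... = rt_par (FT n p A) (g v)" unfolding la(1) gv[OF la(2-4)] ..
    finally show "g (rt_par (FT n p A) v) = rt_par (FT n p A) (g v)" .
  qed
  have rank: "\<forall>v\<in>rt_nodes (ST n p A m M). rt_rank (ST n p A m M') (g v) = rt_rank (ST n p A m M) v"
  proof
    fix v assume v: "v \<in> rt_nodes (ST n p A m M)"
    obtain l a where la: "v = (l, Pt n p A l a)" "1 \<le> l" "l \<le> m" "a \<in> M" using v unfolding N1 by blast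
    have sub: "Pt n p A l a \<subseteq> M" unfolding M_def using Pt_in_top la(3,4) unfolding M_def by blast
    have "inj_on w M" using w' unfolding rb_def bij_betw_def by blast
    then have "card (w ` Pt n p A l a) = card (Pt n p A l a)" using sub by (meson card_image inj_on_subset)
    then show "rt_rank (ST n p A m M') (g v) = rt_rank (ST n p A m M) v"
      unfolding la(1) g_def by (simp add: FT_rank[OF n1 p1])
  qed
  have "rt_iso (ST n p A m M) (ST n p A m M') g"
    unfolding rt_iso_def using bij groot par rank by simp
  then show ?thesis unfolding rt_isomorphic_def M_def M'_def by blast
qed

lemma pres_glue:
  assumes m: "2 \<le> m" and a0: "a0 \<in> {1..n}" and b0: "b0 \<in> {1..n}"
    and wM: "\<And>a. a \<in> Pt n p A m a0 \<Longrightarrow> w a \<in> Pt n p A m b0"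
    and cell: "\<And>a b. a \<in> Pt n p A m a0 \<Longrightarrow> b \<in> Pt n p A m a0 \<Longrightarrow>
        same_part p A (m - 1) a b \<longleftrightarrow> same_part p A (m - 1) (w a) (w b)"
    and inside: "\<And>a b l. a \<in> Pt n p A m a0 \<Longrightarrow> b \<in> Pt n p A m a0 \<Longrightarrow> same_part p A (m - 1) a b \<Longrightarrow> 1 \<le> l \<Longrightarrow>
        same_part p A l a b \<longleftrightarrow> same_part p A l (w a) (w b)"
  shows "pres p A w (Pt n p A m a0)"
  unfolding pres_def
proof (intro allI impI ballI)
  fix l a b :: nat assume l: "1 \<le> l" and a: "a \<in> Pt n p A m a0" and b: "b \<in> Pt n p A m a0"
  show "same_part p A l a b \<longleftrightarrow> same_part p A l (w a) (w b)"
  proof (cases "same_part p A (m - 1) a b")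
    case True then show ?thesis using inside a b l by blast
  next
    case False
    show ?thesis
    proof (cases "m \<le> l")
      case True
      have "same_part p A m a b" using a b same_part_sym same_part_trans by blast
      moreover have "same_part p A m (w a) (w b)" using wM[OF a] wM[OF b] same_part_sym same_part_trans by blast
      ultimately show ?thesis using same_part_mono True by blast
    next
      case lm: False
      have lm1: "l \<le> m - 1" using lm by simp
      have "\<not> same_part p A l a b" using False same_part_mono[OF _ lm1] by blast
      moreover have "\<not> same_part p A l (w a) (w b)"
        using False cell[OF a b] same_part_mono[OF _ lm1] by blast
      ultimately show ?thesis by blast
    qed
  qed
qed

end

context
  fixes n p :: nat and A :: "nat \<Rightarrow> nat \<Rightarrow> complex"
  assumes n1: "n \<ge> 1" and p1: "p \<ge> 1"
begin

lemma pres_base: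
  assumes a0: "a0 \<in> {1..n}" and b0: "b0 \<in> {1..n}"
    and f: "rt_iso (ST n p A 1 (Pt n p A 1 a0)) (ST n p A 1 (Pt n p A 1 b0)) f"
  shows "\<exists>w. w \<in> rb (Pt n p A 1 a0) (Pt n p A 1 b0) \<and> pres p A w (Pt n p A 1 a0)"
proof -
  define M where "M = Pt n p A 1 a0"
  define M' where "M' = Pt n p A 1 b0"
  have root: "(1, M) \<in> rt_nodes (ST n p A 1 M)" using ST_single[OF n1 p1 a0] unfolding M_def by simp
  have froot: "f (1, M) = (1, M')" using f unfolding rt_iso_def M_def M'_def by simp
  have "rt_rank (ST n p A 1 M') (f (1, M)) = rt_rank (ST n p A 1 M) (1, M)"
    using f root unfolding rt_iso_def M_def M'_def by blast
  then have cM: "card M' = card M" unfolding froot by (simp add: FT_rank[OF n1 p1])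
  have fin: "finite M" "finite M'" unfolding M_def M'_def by auto
  obtain h where h: "bij_betw h M M'" using finite_same_card_bij[OF fin cM[symmetric]] by blast
  have "bij_betw (rs M h) M M'" using h bij_betw_cong[of M "rs M h" h M'] by (simp add: rs_in)
  then have w: "rs M h \<in> rb M M'" unfolding rb_def by (simp add: rs_out)
  have "pres p A (rs M h) M"
    unfolding pres_def
  proof (intro allI impI ballI)
    fix l a b :: nat assume l: "1 \<le> l" and a: "a \<in> M" and b: "b \<in> M"
    have "same_part p A 1 a b" using a b same_part_sym same_part_trans unfolding M_def by blast
    moreover have "same_part p A 1 (rs M h a) (rs M h b)"
      using rb_in[OF w a] rb_in[OF w b] same_part_sym same_part_trans unfolding M'_def by blast
    ultimately show "same_part p A l a b \<longleftrightarrow> same_part p A l (rs M h a) (rs M h b)"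
      using same_part_mono l by blast
  qed
  then show ?thesis using w unfolding M_def M'_def by blast
qed

lemma pres_step:
  assumes m: "1 \<le> m" "Suc m \<le> p + 1" and a0: "a0 \<in> {1..n}" and b0: "b0 \<in> {1..n}"
    and IH: "\<And>a b f. a \<in> {1..n} \<Longrightarrow> b \<in> {1..n} \<Longrightarrow> rt_iso (ST n p A m (Pt n p A m a)) (ST n p A m (Pt n p A m b)) f
       \<Longrightarrow> \<exists>w. w \<in> rb (Pt n p A m a) (Pt n p A m b) \<and> pres p A w (Pt n p A m a)"
    and f: "rt_iso (ST n p A (Suc m) (Pt n p A (Suc m) a0)) (ST n p A (Suc m) (Pt n p A (Suc m) b0)) f"
  shows "\<exists>w. w \<in> rb (Pt n p A (Suc m) a0) (Pt n p A (Suc m) b0) \<and> pres p A w (Pt n p A (Suc m) a0)"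
proof -
  define M where "M = Pt n p A (Suc m) a0"
  define M' where "M' = Pt n p A (Suc m) b0"
  define T1 where "T1 = ST n p A (Suc m) M"
  define T2 where "T2 = ST n p A (Suc m) M'"
  have m2: "2 \<le> Suc m" using m by simp
  have g1: "gt T1" unfolding T1_def M_def using ST_gt[OF n1 p1 m(2) _ a0] by simp
  have g2: "gt T2" unfolding T2_def M'_def using ST_gt[OF n1 p1 m(2) _ b0] by simp
  have f': "rt_iso T1 T2 f" using f unfolding T1_def T2_def M_def M'_def .
  have C1: "rt_children T1 = {(m, Pt n p A m a) | a. a \<in> M}"
    unfolding T1_def M_def using ST_children[OF n1 p1 m2 m(2) a0] by simp
  have C2: "rt_children T2 = {(m, Pt n p A m a) | a. a \<in> M'}"
    unfolding T2_def M'_def using ST_children[OF n1 p1 m2 m(2) b0] by simp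
  have M1: "M \<subseteq> {1..n}" "M' \<subseteq> {1..n}" unfolding M_def M'_def by auto
  have cM: "(m, Pt n p A m a) \<in> rt_children T1" if "a \<in> M" for a using that C1 by blast
  define tgt where "tgt L = snd (f (m, L))" for L
  have tgt: "\<exists>b\<in>M'. f (m, Pt n p A m a) = (m, Pt n p A m b) \<and> tgt (Pt n p A m a) = Pt n p A m b"
    if a: "a \<in> M" for a
  proof -
    have "f (m, Pt n p A m a) \<in> rt_children T2" using rt_iso_child[OF g1 f' cM[OF a]] .
    then obtain b where b: "b \<in> M'" "f (m, Pt n p A m a) = (m, Pt n p A m b)" unfolding C2 by blast
    moreover have "tgt (Pt n p A m a) = Pt n p A m b" unfolding tgt_def using b(2) by simp
    ultimately show ?thesis by blast
  qed
  have subiso: "\<exists>w. w \<in> rb (Pt n p A m a) (tgt (Pt n p A m a)) \<and> pres p A w (Pt n p A m a)"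
    if a: "a \<in> M" for a
  proof -
    obtain b where b: "b \<in> M'" "f (m, Pt n p A m a) = (m, Pt n p A m b)" "tgt (Pt n p A m a) = Pt n p A m b"
      using tgt[OF a] by blast
    have iso: "rt_iso (rt_subtree T1 (m, Pt n p A m a)) (rt_subtree T2 (m, Pt n p A m b)) f"
      using rt_iso_sub(2)[OF g1 g2 f' cM[OF a]] b(2) by simp
    have "(m, Pt n p A m a) \<in> rt_nodes T1" using cM[OF a] children_sub[OF g1] by blast
    then have s1: "rt_subtree T1 (m, Pt n p A m a) = ST n p A m (Pt n p A m a)"
      unfolding T1_def using sub_sub[OF gt_FT[OF n1 p1]] by blast
    have "(m, Pt n p A m b) \<in> rt_children T2" using C2 b(1) by blast
    then have "(m, Pt n p A m b) \<in> rt_nodes T2" using children_sub[OF g2] by blast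
    then have s2: "rt_subtree T2 (m, Pt n p A m b) = ST n p A m (Pt n p A m b)"
      unfolding T2_def using sub_sub[OF gt_FT[OF n1 p1]] by blast
    have "\<exists>w. w \<in> rb (Pt n p A m a) (Pt n p A m b) \<and> pres p A w (Pt n p A m a)"
      using IH[of a b f] iso unfolding s1 s2 using M1 a b(1) by blast
    then show ?thesis using b(3) by simp
  qed
  define FL where "FL L = (SOME w. w \<in> rb L (tgt L) \<and> pres p A w L)" for L
  have FL: "FL (Pt n p A m a) \<in> rb (Pt n p A m a) (tgt (Pt n p A m a)) \<and> pres p A (FL (Pt n p A m a)) (Pt n p A m a)"
    if a: "a \<in> M" for a
    unfolding FL_def using someI_ex[OF subiso[OF a]] .
  define W where "W x = (if x \<in> M then FL (Pt n p A m x) x else x)" for x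
  have aPa: "a \<in> Pt n p A m a" if "a \<in> M" for a using Pt_self[OF n1 p1] that M1 by blast
  have WT: "W a \<in> tgt (Pt n p A m a)" if a: "a \<in> M" for a
    unfolding W_def using a rb_in[OF conjunct1[OF FL[OF a]] aPa[OF a]] by simp
  have PtW: "Pt n p A m (W a) = tgt (Pt n p A m a)" if a: "a \<in> M" for a
  proof -
    obtain b where b: "b \<in> M'" "tgt (Pt n p A m a) = Pt n p A m b" using tgt[OF a] by blast
    show ?thesis using WT[OF a] b(2) Pt_eq[OF n1 p1] by metis
  qed
  have WM: "W a \<in> M'" if a: "a \<in> M" for a
  proof -
    obtain b where b: "b \<in> M'" "tgt (Pt n p A m a) = Pt n p A m b" using tgt[OF a] by blast
    have "Pt n p A m b \<subseteq> M'" unfolding M'_def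
      using Pt_in_top[OF n1 p1 b(1)[unfolded M'_def], of m] by simp
    then show ?thesis using WT[OF a] b(2) by blast
  qed
  have finj: "inj_on f (rt_nodes T1)" using f' unfolding rt_iso_def bij_betw_def by blast
  have cellW: "Pt n p A m a = Pt n p A m b \<longleftrightarrow> Pt n p A m (W a) = Pt n p A m (W b)"
    if a: "a \<in> M" and b: "b \<in> M" for a b
  proof
    assume "Pt n p A m a = Pt n p A m b" then show "Pt n p A m (W a) = Pt n p A m (W b)"
      using PtW[OF a] PtW[OF b] by simp
  next
    assume e: "Pt n p A m (W a) = Pt n p A m (W b)"
    obtain ba where ba: "f (m, Pt n p A m a) = (m, Pt n p A m ba)" "tgt (Pt n p A m a) = Pt n p A m ba" using tgt[OF a] by blast
    obtain bb where bb: "f (m, Pt n p A m b) = (m, Pt n p A m bb)" "tgt (Pt n p A m b) = Pt n p A m bb" using tgt[OF b] by blast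
    have "f (m, Pt n p A m a) = f (m, Pt n p A m b)" using e PtW[OF a] PtW[OF b] ba bb by simp
    moreover have "(m, Pt n p A m a) \<in> rt_nodes T1" "(m, Pt n p A m b) \<in> rt_nodes T1"
      using cM[OF a] cM[OF b] children_sub[OF g1] by blast+
    ultimately show "Pt n p A m a = Pt n p A m b" using inj_onD[OF finj] by blast
  qed
  have bij: "bij_betw W M M'"
    unfolding bij_betw_def
  proof
    show "inj_on W M"
    proof
      fix x y assume x: "x \<in> M" and y: "y \<in> M" and e: "W x = W y"
      have P: "Pt n p A m x = Pt n p A m y" using cellW[OF x y] e by simp
      have "FL (Pt n p A m x) x = FL (Pt n p A m x) y" using e P x y unfolding W_def by simp
      moreover have "y \<in> Pt n p A m x" using P aPa[OF y] by simp
      ultimately show "x = y" using rb_inj[OF conjunct1[OF FL[OF x]] aPa[OF x]] by blast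
    qed
    show "W ` M = M'"
    proof
      show "W ` M \<subseteq> M'" using WM by blast
      show "M' \<subseteq> W ` M"
      proof
        fix y assume y: "y \<in> M'"
        define d where "d = (m, Pt n p A m y)"
        have d: "d \<in> rt_children T2" unfolding d_def C2 using y by blast
        define g where "g = inv_into (rt_nodes T1) f"
        have gi: "rt_iso T2 T1 g" unfolding g_def using rt_iso_inv[OF g1 f'] .
        have gd: "g d \<in> rt_children T1" using rt_iso_child[OF g2 gi d] .
        have dn: "d \<in> rt_nodes T2" using d children_sub[OF g2] by blast
        have fgd: "f (g d) = d" unfolding g_def using f' dn unfolding rt_iso_def
          by (meson bij_betw_inv_into_right)
        obtain x0 where x0: "g d = (m, Pt n p A m x0)" "x0 \<in> M" using gd unfolding C1 by blast
        have "tgt (Pt n p A m x0) = Pt n p A m y" unfolding tgt_def using fgd x0(1) d_def by simp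
        then have "y \<in> FL (Pt n p A m x0) ` Pt n p A m x0"
          using rb_img[OF conjunct1[OF FL[OF x0(2)]]] Pt_self[OF n1 p1] y M1 by auto
        then obtain x where x: "x \<in> Pt n p A m x0" "y = FL (Pt n p A m x0) x" by blast
        have xM: "x \<in> M" using x(1) Pt_in_top[OF n1 p1 x0(2)[unfolded M_def], of m] unfolding M_def by auto
        have "Pt n p A m x = Pt n p A m x0" using Pt_eq[OF n1 p1 x(1)] .
        then have "W x = y" unfolding W_def using xM x(2) by simp
        then show "y \<in> W ` M" using xM by blast
      qed
    qed
  qed
  have w: "W \<in> rb M M'" unfolding rb_def using bij by (simp add: W_def)
  have "pres p A W M" unfolding M_def
  proof (rule pres_glue[OF n1 p1 m2 a0 b0])
    show "\<And>a. a \<in> Pt n p A (Suc m) a0 \<Longrightarrow> W a \<in> Pt n p A (Suc m) b0" using WM unfolding M_def M'_def by blast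
    fix a b assume a: "a \<in> Pt n p A (Suc m) a0" and b: "b \<in> Pt n p A (Suc m) a0"
    have aM: "a \<in> M" and bM: "b \<in> M" using a b unfolding M_def by auto
    have ab: "a \<in> {1..n}" "b \<in> {1..n}" "W a \<in> {1..n}" "W b \<in> {1..n}" using aM bM WM[OF aM] WM[OF bM] M1 by blast+
    show "same_part p A (Suc m - 1) a b \<longleftrightarrow> same_part p A (Suc m - 1) (W a) (W b)"
      using cellW[OF aM bM] Pt_iff[OF n1 p1 ab(1,2)] Pt_iff[OF n1 p1 ab(3,4)] by simp
    fix l :: nat assume s: "same_part p A (Suc m - 1) a b" and l: "1 \<le> l"
    have P: "Pt n p A m a = Pt n p A m b" using s Pt_iff[OF n1 p1 ab(1,2)] by simp
    have bP: "b \<in> Pt n p A m a" using P aPa[OF bM] by simp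
    have "W a = FL (Pt n p A m a) a" "W b = FL (Pt n p A m a) b" unfolding W_def using aM bM P by simp_all
    then show "same_part p A l a b \<longleftrightarrow> same_part p A l (W a) (W b)"
      using conjunct2[OF FL[OF aM]] aPa[OF aM] bP l unfolding pres_def by simp
  qed
  then show ?thesis using w unfolding M_def M'_def by blast
qed

lemma pres_of_treeiso:
  "1 \<le> m \<Longrightarrow> m \<le> p + 1 \<Longrightarrow> a0 \<in> {1..n} \<Longrightarrow> b0 \<in> {1..n} \<Longrightarrow>
   rt_iso (ST n p A m (Pt n p A m a0)) (ST n p A m (Pt n p A m b0)) f \<Longrightarrow>
   \<exists>w. w \<in> rb (Pt n p A m a0) (Pt n p A m b0) \<and> pres p A w (Pt n p A m a0)"
proof (induction m arbitrary: a0 b0 f)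
  case 0 then show ?case by simp
next
  case (Suc m)
  show ?case
  proof (cases "m = 0")
    case True then show ?thesis using pres_base Suc.prems by simp
  next
    case False
    show ?thesis
    proof (rule pres_step[of m a0 b0 f])
      show "1 \<le> m" using False by simp
      show "Suc m \<le> p + 1" using Suc.prems by simp
      show "a0 \<in> {1..n}" "b0 \<in> {1..n}" using Suc.prems by auto
      show "rt_iso (ST n p A (Suc m) (Pt n p A (Suc m) a0)) (ST n p A (Suc m) (Pt n p A (Suc m) b0)) f"
        using Suc.prems by simp
      fix a b f assume "a \<in> {1..n}" "b \<in> {1..n}" "rt_iso (ST n p A m (Pt n p A m a)) (ST n p A m (Pt n p A m b)) f"
      then show "\<exists>w. w \<in> rb (Pt n p A m a) (Pt n p A m b) \<and> pres p A w (Pt n p A m a)"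
        using Suc.IH False Suc.prems(2) by simp
    qed
  qed
qed

end

definition sIso :: "nat \<Rightarrow> (nat \<Rightarrow> nat \<Rightarrow> complex) \<Rightarrow> nat \<times> nat set \<Rightarrow> nat \<times> nat set \<Rightarrow> (nat \<Rightarrow> nat) set" where
  "sIso p A c d = {w. w \<in> rb (snd c) (snd d) \<and> pres p A w (snd c)}"

lemma permutes_rb: "w permutes L \<longleftrightarrow> w \<in> rb L L"
proof
  assume w: "w permutes L"
  show "w \<in> rb L L" unfolding rb_def using permutes_imp_bij[OF w] permutes_not_in[OF w] by blast
next
  assume "w \<in> rb L L"
  then show "w permutes L" unfolding rb_def using bij_imp_permutes by blast
qed

lemma pres_id: "pres p A id L" unfolding pres_def by simp

context
  fixes n p :: nat and A :: "nat \<Rightarrow> nat \<Rightarrow> complex"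
  assumes n1: "n \<ge> 1" and p1: "p \<ge> 1"
begin

lemma stab_rbij:
  assumes m: "2 \<le> m" "m \<le> p + 1" and a0: "a0 \<in> {1..n}"
  shows "rbij (rt_children (ST n p A m (Pt n p A m a0))) snd (sIso p A)"
proof
  define C where "C = rt_children (ST n p A m (Pt n p A m a0))"
  have C: "C = {(m - 1, Pt n p A (m - 1) a) | a. a \<in> Pt n p A m a0}"
    unfolding C_def using ST_children[OF n1 p1 m a0] .
  have g: "gt (ST n p A m (Pt n p A m a0))" using ST_gt[OF n1 p1 m(2) _ a0] m by simp
  show "finite (rt_children (ST n p A m (Pt n p A m a0)))"
    using gt_fin[OF g] children_sub[OF g] finite_subset by blast
  fix c assume c: "c \<in> rt_children (ST n p A m (Pt n p A m a0))"
  then obtain a where a: "c = (m - 1, Pt n p A (m - 1) a)" "a \<in> Pt n p A m a0" using C unfolding C_def by blast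
  have a1: "a \<in> {1..n}" using a(2) by simp
  show "snd c \<noteq> {}" using Pt_self[OF n1 p1 a1] a(1) by auto
next
  fix c d assume c: "c \<in> rt_children (ST n p A m (Pt n p A m a0))" and d: "d \<in> rt_children (ST n p A m (Pt n p A m a0))"
    and cd: "c \<noteq> d"
  obtain a where a: "c = (m - 1, Pt n p A (m - 1) a)" "a \<in> Pt n p A m a0" using c ST_children[OF n1 p1 m a0] by blast
  obtain b where b: "d = (m - 1, Pt n p A (m - 1) b)" "b \<in> Pt n p A m a0" using d ST_children[OF n1 p1 m a0] by blast
  show "snd c \<inter> snd d = {}"
  proof (rule ccontr)
    assume "snd c \<inter> snd d \<noteq> {}"
    then obtain x where x1: "x \<in> Pt n p A (m - 1) a" and x2: "x \<in> Pt n p A (m - 1) b" using a b by auto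
    have "Pt n p A (m - 1) a = Pt n p A (m - 1) b" using Pt_eq[OF n1 p1 x1] Pt_eq[OF n1 p1 x2] by simp
    then show False using cd a b by simp
  qed
next
  fix c d f assume "f \<in> sIso p A c d"
  then show "f \<in> rb (snd c) (snd d)" unfolding sIso_def by blast
next
  fix c show "id \<in> sIso p A c c" unfolding sIso_def using rb_id pres_id by blast
next
  fix c d e f g assume f: "f \<in> sIso p A c d" and g: "g \<in> sIso p A d e"
  have fr: "f \<in> rb (snd c) (snd d)" and fp: "pres p A f (snd c)" using f unfolding sIso_def by auto
  have gr: "g \<in> rb (snd d) (snd e)" and gp: "pres p A g (snd d)" using g unfolding sIso_def by auto
  have "pres p A (rcomp (snd c) g f) (snd c)"
    unfolding pres_def
  proof (intro allI impI ballI)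
    fix l a b :: nat assume l: "1 \<le> l" and a: "a \<in> snd c" and b: "b \<in> snd c"
    have "same_part p A l a b \<longleftrightarrow> same_part p A l (f a) (f b)" using fp l a b unfolding pres_def by blast
    also have "... \<longleftrightarrow> same_part p A l (g (f a)) (g (f b))" using gp l rb_in[OF fr a] rb_in[OF fr b] unfolding pres_def by blast
    finally show "same_part p A l a b \<longleftrightarrow> same_part p A l (rcomp (snd c) g f a) (rcomp (snd c) g f b)"
      using a b by (simp add: rcomp_in)
  qed
  then show "rcomp (snd c) g f \<in> sIso p A c e" unfolding sIso_def using rb_comp[OF fr gr] by blast
next
  fix c d f assume f: "f \<in> sIso p A c d"
  have fr: "f \<in> rb (snd c) (snd d)" and fp: "pres p A f (snd c)" using f unfolding sIso_def by auto
  have "pres p A (rinv (snd c) f) (snd d)"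
    unfolding pres_def
  proof (intro allI impI ballI)
    fix l a b :: nat assume l: "1 \<le> l" and a: "a \<in> snd d" and b: "b \<in> snd d"
    have "same_part p A l (rinv (snd c) f a) (rinv (snd c) f b) \<longleftrightarrow> same_part p A l (f (rinv (snd c) f a)) (f (rinv (snd c) f b))"
      using fp l rinv_in[OF fr a] rinv_in[OF fr b] unfolding pres_def by blast
    then show "same_part p A l a b \<longleftrightarrow> same_part p A l (rinv (snd c) f a) (rinv (snd c) f b)"
      using rinv_right[OF fr a] rinv_right[OF fr b] by simp
  qed
  then show "rinv (snd c) f \<in> sIso p A d c" unfolding sIso_def using rb_rinv[OF fr] by blast
qed

lemma SG_glob:
  assumes m: "2 \<le> m" "m \<le> p + 1" and a0: "a0 \<in> {1..n}"
  shows "SG p A (Pt n p A m a0) \<cong> rbij.glob (rt_children (ST n p A m (Pt n p A m a0))) snd (sIso p A)"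
proof -
  define M where "M = Pt n p A m a0"
  define C where "C = rt_children (ST n p A m M)"
  interpret sr: rbij C snd "sIso p A" unfolding C_def M_def using stab_rbij[OF m a0] .
  have Ceq: "C = {(m - 1, Pt n p A (m - 1) a) | a. a \<in> M}"
    unfolding C_def M_def using ST_children[OF n1 p1 m a0] .
  have m1: "1 \<le> m - 1" "m - 1 \<le> m" using m by auto
  have M1: "M \<subseteq> {1..n}" unfolding M_def by auto
  have aPa: "a \<in> Pt n p A (m - 1) a" if "a \<in> M" for a using Pt_self[OF n1 p1] that M1 by blast
  have cellM: "Pt n p A (m - 1) a \<subseteq> M" if "a \<in> M" for a
    unfolding M_def using Pt_in_top[OF n1 p1 that[unfolded M_def] m1(2)] .
  have cC: "(m - 1, Pt n p A (m - 1) a) \<in> C" if "a \<in> M" for a using that Ceq by blast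
  have U: "(\<Union>c\<in>C. snd c) = M"
  proof
    show "(\<Union>c\<in>C. snd c) \<subseteq> M"
    proof
      fix x assume "x \<in> (\<Union>c\<in>C. snd c)"
      then obtain a where "a \<in> M" "x \<in> Pt n p A (m - 1) a" unfolding Ceq by auto
      then show "x \<in> M" using cellM by blast
    qed
    show "M \<subseteq> (\<Union>c\<in>C. snd c)" using aPa cC by fastforce
  qed
  have fstC: "fst c = m - 1" if "c \<in> C" for c using that Ceq by auto
  have carr: "carrier (SG p A M) = {w. (\<forall>x. x \<notin> (\<Union>c\<in>C. snd c) \<longrightarrow> w x = x) \<and>
       (\<exists>\<pi>. \<pi> permutes C \<and> (\<forall>c\<in>C. rs (snd c) w \<in> sIso p A c (\<pi> c)))}"
  proof (intro equalityI subsetI CollectI)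
    fix w assume "w \<in> carrier (SG p A M)"
    then have wp: "w permutes M" and pw: "pres p A w M" unfolding SG_def by auto
    have wr: "w \<in> rb M M" using wp permutes_rb by blast
    have img: "w ` Pt n p A (m - 1) a = Pt n p A (m - 1) (w a)" if "a \<in> M" for a
      using img_part[OF n1 p1 wr[unfolded M_def] pw[unfolded M_def] m1 that[unfolded M_def]] .
    define \<pi> where "\<pi> c = (if c \<in> C then (fst c, w ` snd c) else c)" for c
    have pC: "\<pi> c \<in> C" if c: "c \<in> C" for c
    proof -
      obtain a where a: "c = (m - 1, Pt n p A (m - 1) a)" "a \<in> M" using c Ceq by blast
      have "\<pi> c = (m - 1, Pt n p A (m - 1) (w a))" unfolding \<pi>_def using c a img by simp
      then show ?thesis using cC rb_in[OF wr a(2)] by simp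
    qed
    have winj: "inj_on w M" using wr unfolding rb_def bij_betw_def by blast
    have pinj: "inj_on \<pi> C"
    proof
      fix c d assume c: "c \<in> C" and d: "d \<in> C" and e: "\<pi> c = \<pi> d"
      have "w ` snd c = w ` snd d" using e c d unfolding \<pi>_def by simp
      moreover have "snd c \<subseteq> M" "snd d \<subseteq> M" using U c d by blast+
      ultimately have "snd c = snd d" using winj by (meson inj_on_image_eq_iff)
      then show "c = d" using fstC[OF c] fstC[OF d] by (simp add: prod_eq_iff)
    qed
    have pimg: "\<pi> ` C = C" using endo_inj_surj[OF sr.finC _ pinj] pC by blast
    have pperm: "\<pi> permutes C"
      using bij_imp_permutes[of \<pi> C] pinj pimg unfolding bij_betw_def \<pi>_def by simp
    have iso: "rs (snd c) w \<in> sIso p A c (\<pi> c)" if c: "c \<in> C" for c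
    proof -
      have sM: "snd c \<subseteq> M" using U c by blast
      have "bij_betw w (snd c) (w ` snd c)" using inj_on_subset[OF winj sM] unfolding bij_betw_def by blast
      then have "bij_betw (rs (snd c) w) (snd c) (snd (\<pi> c))"
        using bij_betw_cong[of "snd c" "rs (snd c) w" w] c unfolding \<pi>_def by (simp add: rs_in)
      then have r: "rs (snd c) w \<in> rb (snd c) (snd (\<pi> c))" unfolding rb_def by (simp add: rs_out)
      have "pres p A (rs (snd c) w) (snd c)" using pw sM unfolding pres_def by (simp add: rs_in subset_iff)
      then show ?thesis unfolding sIso_def using r by blast
    qed
    have out: "\<forall>x. x \<notin> (\<Union>c\<in>C. snd c) \<longrightarrow> w x = x" unfolding U using permutes_not_in[OF wp] by blast
    show "(\<forall>x. x \<notin> (\<Union>c\<in>C. snd c) \<longrightarrow> w x = x) \<and> (\<exists>\<pi>. \<pi> permutes C \<and> (\<forall>c\<in>C. rs (snd c) w \<in> sIso p A c (\<pi> c)))"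
      using out pperm iso by blast
  next
    fix w assume "w \<in> {w. (\<forall>x. x \<notin> (\<Union>c\<in>C. snd c) \<longrightarrow> w x = x) \<and>
       (\<exists>\<pi>. \<pi> permutes C \<and> (\<forall>c\<in>C. rs (snd c) w \<in> sIso p A c (\<pi> c)))}"
    then obtain \<pi> where out: "\<forall>x. x \<notin> (\<Union>c\<in>C. snd c) \<longrightarrow> w x = x" and perm: "\<pi> permutes C"
      and iso: "\<And>c. c \<in> C \<Longrightarrow> rs (snd c) w \<in> sIso p A c (\<pi> c)" by blast
    have pc: "\<And>c. c \<in> C \<Longrightarrow> \<pi> c \<in> C" using permutes_in_image[OF perm] by simp
    have bij: "bij_betw w M M" using sr.glue_bij[OF perm iso] unfolding U .
    have wp: "w permutes M" using bij_imp_permutes[OF bij] out unfolding U by blast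
    have rbw: "rs (snd c) w \<in> rb (snd c) (snd (\<pi> c))" if "c \<in> C" for c using iso[OF that] unfolding sIso_def by blast
    have pwc: "pres p A (rs (snd c) w) (snd c)" if "c \<in> C" for c using iso[OF that] unfolding sIso_def by blast
    define ca where "ca a = (m - 1, Pt n p A (m - 1) a)" for a
    have wca: "w a \<in> snd (\<pi> (ca a))" if a: "a \<in> M" for a
    proof -
      have r: "rs (snd (ca a)) w \<in> rb (snd (ca a)) (snd (\<pi> (ca a)))" using rbw cC[OF a] unfolding ca_def by blast
      have aa: "a \<in> snd (ca a)" using aPa[OF a] unfolding ca_def by simp
      show ?thesis using rb_in[OF r aa] aa by (simp add: rs_in)
    qed
    have Pwa: "Pt n p A (m - 1) (w a) = snd (\<pi> (ca a))" if a: "a \<in> M" for a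
    proof -
      obtain x where x: "\<pi> (ca a) = (m - 1, Pt n p A (m - 1) x)" "x \<in> M" using pc[OF cC[OF a]] Ceq unfolding ca_def by blast
      show ?thesis using wca[OF a] x Pt_eq[OF n1 p1] by simp
    qed
    have wM: "w a \<in> M" if "a \<in> M" for a using bij that unfolding bij_betw_def by blast
    have "pres p A w (Pt n p A m a0)"
    proof (rule pres_glue[OF n1 p1 m(1) a0 a0])
      show "\<And>a. a \<in> Pt n p A m a0 \<Longrightarrow> w a \<in> Pt n p A m a0" using wM unfolding M_def by blast
      fix a b assume a: "a \<in> Pt n p A m a0" and b: "b \<in> Pt n p A m a0"
      have aM: "a \<in> M" and bM: "b \<in> M" using a b unfolding M_def by auto
      have ab: "a \<in> {1..n}" "b \<in> {1..n}" "w a \<in> {1..n}" "w b \<in> {1..n}" using aM bM wM[OF aM] wM[OF bM] M1 by blast+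
      have "same_part p A (m - 1) a b \<longleftrightarrow> ca a = ca b" unfolding ca_def using Pt_iff[OF n1 p1 ab(1,2)] by simp
      also have "... \<longleftrightarrow> \<pi> (ca a) = \<pi> (ca b)" using permutes_inj[OF perm] by (metis injD)
      also have "... \<longleftrightarrow> snd (\<pi> (ca a)) = snd (\<pi> (ca b))"
        using fstC[OF pc[OF cC[OF aM]]] fstC[OF pc[OF cC[OF bM]]] unfolding ca_def by (simp add: prod_eq_iff)
      also have "... \<longleftrightarrow> same_part p A (m - 1) (w a) (w b)" using Pwa[OF aM, symmetric] Pwa[OF bM, symmetric] Pt_iff[OF n1 p1 ab(3,4)] by simp
      finally show "same_part p A (m - 1) a b \<longleftrightarrow> same_part p A (m - 1) (w a) (w b)" .
      fix l :: nat assume s: "same_part p A (m - 1) a b" and l: "1 \<le> l"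
      have "ca a = ca b" unfolding ca_def using s Pt_iff[OF n1 p1 ab(1,2)] by simp
      then have bc: "b \<in> snd (ca a)" using aPa[OF bM] unfolding ca_def by simp
      have ac: "a \<in> snd (ca a)" using aPa[OF aM] unfolding ca_def by simp
      have "same_part p A l a b \<longleftrightarrow> same_part p A l (rs (snd (ca a)) w a) (rs (snd (ca a)) w b)"
        using pwc[OF cC[OF aM]] l ac bc unfolding pres_def ca_def by blast
      then show "same_part p A l a b \<longleftrightarrow> same_part p A l (w a) (w b)" using ac bc by (simp add: rs_in)
    qed
    then show "w \<in> carrier (SG p A M)" unfolding SG_def M_def using wp[unfolded M_def] by simp
  qed
  have "SG p A M \<cong> sr.glob"
    using sr.glob_iso[OF carr] by (simp add: SG_def)
  then show ?thesis unfolding M_def C_def .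
qed

end

lemma count_conv:
  assumes g: "g permutes X" and fin: "finite X"
    and fw: "\<And>a b. a \<in> X \<Longrightarrow> b \<in> X \<Longrightarrow> R a b \<Longrightarrow> R (g a) (g b)"
    and a: "a \<in> X" and b: "b \<in> X" and r: "R (g a) (g b)"
  shows "R a b"
proof -
  define P where "P = {(x, y). x \<in> X \<and> y \<in> X \<and> R x y}"
  define h where "h = (\<lambda>(x, y). (g x, g y))"
  have "P \<subseteq> X \<times> X" unfolding P_def by auto
  then have fP: "finite P" using finite_subset fin by blast
  have sub: "h ` P \<subseteq> P" unfolding P_def h_def using fw permutes_in_image[OF g] by auto
  have ginj: "inj g" using permutes_inj[OF g] .
  have inj: "inj_on h P" unfolding h_def inj_on_def using ginj by (auto dest: injD)
  have eq: "h ` P = P" using endo_inj_surj[OF fP sub inj] .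
  have "(g a, g b) \<in> P" unfolding P_def using r a b permutes_in_image[OF g] by auto
  then have "(g a, g b) \<in> h ` P" using eq by simp
  then obtain x y where xy: "(x, y) \<in> P" "(g a, g b) = (g x, g y)" unfolding h_def by auto
  then have "a = x" "b = y" using ginj by (auto dest: injD)
  then show ?thesis using xy(1) unfolding P_def by simp
qed

context
  fixes n p :: nat and A :: "nat \<Rightarrow> nat \<Rightarrow> complex"
  assumes n1: "n \<ge> 1" and p1: "p \<ge> 1"
begin

lemma sep:
  assumes a: "a \<in> {1..n}" and b: "b \<in> {1..n}" and ns: "\<not> same_part p A l a b"
  shows "\<exists>x\<in>Ukf n p A l. x a \<noteq> x b"
proof -
  define P where "P = Pt n p A l a"
  define Q where "Q = Pt n p A l b"
  define \<alpha> :: complex where "\<alpha> = of_nat (card Q)"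
  define \<beta> :: complex where "\<beta> = - of_nat (card P)"
  define x where "x c = (if c \<in> P then \<alpha> else if c \<in> Q then \<beta> else 0)" for c
  have PQ: "P \<inter> Q = {}"
  proof (rule ccontr)
    assume "P \<inter> Q \<noteq> {}"
    then obtain c where "c \<in> P" "c \<in> Q" by blast
    then have "same_part p A l a c" "same_part p A l b c" unfolding P_def Q_def by auto
    then show False using ns same_part_sym same_part_trans by blast
  qed
  have Psub: "P \<subseteq> {1..n}" and Qsub: "Q \<subseteq> {1..n}" unfolding P_def Q_def by auto
  have aP: "a \<in> P" unfolding P_def using Pt_self[OF n1 p1 a] .
  have bQ: "b \<in> Q" unfolding Q_def using Pt_self[OF n1 p1 b] .
  have bP: "b \<notin> P" using bQ PQ by blast
  have finP: "finite P" and finQ: "finite Q" using Psub Qsub finite_subset by auto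
  have cP: "card P \<ge> 1" using aP finP by (metis One_nat_def Suc_leI card_gt_0_iff empty_iff)
  have cQ: "card Q \<ge> 1" using bQ finQ by (metis One_nat_def Suc_leI card_gt_0_iff empty_iff)
  have s1: "(\<Sum>c\<in>{1..n}. x c) = sum (\<lambda>_. \<alpha>) ({1..n} \<inter> {c. c \<in> P}) +
      (\<Sum>c\<in>{1..n} \<inter> - {c. c \<in> P}. if c \<in> Q then \<beta> else 0)"
    unfolding x_def by (rule sum.If_cases, simp)
  have s2: "(\<Sum>c\<in>{1..n} \<inter> - {c. c \<in> P}. if c \<in> Q then \<beta> else 0) =
      sum (\<lambda>_. \<beta>) ({1..n} \<inter> - {c. c \<in> P} \<inter> {c. c \<in> Q}) + sum (\<lambda>_. 0) ({1..n} \<inter> - {c. c \<in> P} \<inter> - {c. c \<in> Q})"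
    by (rule sum.If_cases, simp)
  have e1: "{1..n} \<inter> {c. c \<in> P} = P" using Psub by blast
  have e2: "{1..n} \<inter> - {c. c \<in> P} \<inter> {c. c \<in> Q} = Q" using Qsub PQ by blast
  have "(\<Sum>c\<in>{1..n}. x c) = of_nat (card P) * \<alpha> + of_nat (card Q) * \<beta>"
    using s1 s2 unfolding e1 e2 by simp
  also have "... = 0" unfolding \<alpha>_def \<beta>_def by (simp add: algebra_simps)
  finally have sum0: "(\<Sum>c\<in>{1..n}. x c) = 0" .
  have out: "\<forall>c. c \<notin> {1..n} \<longrightarrow> x c = 0" unfolding x_def using Psub Qsub by auto
  have const: "\<forall>c\<in>{1..n}. \<forall>d\<in>{1..n}. same_part p A l c d \<longrightarrow> x c = x d"
  proof (intro ballI impI)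
    fix c d assume c: "c \<in> {1..n}" and d: "d \<in> {1..n}" and s: "same_part p A l c d"
    have "c \<in> P \<longleftrightarrow> d \<in> P" unfolding P_def using c d s same_part_sym same_part_trans by blast
    moreover have "c \<in> Q \<longleftrightarrow> d \<in> Q" unfolding Q_def using c d s same_part_sym same_part_trans by blast
    ultimately show "x c = x d" unfolding x_def by simp
  qed
  have xU: "x \<in> Ukf n p A l" unfolding Ukf_def cartan_t_def using sum0 out const by blast
  have "x a = \<alpha>" "x b = \<beta>" unfolding x_def using aP bP bQ by auto
  moreover have "\<alpha> \<noteq> \<beta>"
  proof
    assume "\<alpha> = \<beta>"
    then have "(of_nat (card Q + card P) :: complex) = 0" unfolding \<alpha>_def \<beta>_def by (simp add: algebra_simps)
    then have "card Q + card P = 0" by (simp only: of_nat_eq_0_iff)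
    then show False using cP by simp
  qed
  ultimately show ?thesis using xU by metis
qed

lemma Ukf_inv_iff:
  assumes w: "w permutes {1..n}"
  shows "perm_act w ` Ukf n p A l \<subseteq> Ukf n p A l \<longleftrightarrow>
    (\<forall>a\<in>{1..n}. \<forall>b\<in>{1..n}. same_part p A l a b \<longleftrightarrow> same_part p A l (w a) (w b))"
proof
  define iw where "iw = inv_into UNIV w"
  have iw: "iw permutes {1..n}" unfolding iw_def using permutes_inv[OF w] .
  have iww: "iw (w a) = a" for a unfolding iw_def using permutes_inverses(2)[OF w] by simp
  have wiw: "w (iw a) = a" for a unfolding iw_def using permutes_inverses(1)[OF w] by simp
  have win: "a \<in> {1..n} \<Longrightarrow> w a \<in> {1..n}" for a using permutes_in_image[OF w] by simp
  have iwin: "a \<in> {1..n} \<Longrightarrow> iw a \<in> {1..n}" for a using permutes_in_image[OF iw] by simp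
  {
    assume inv: "perm_act w ` Ukf n p A l \<subseteq> Ukf n p A l"
    have fw: "same_part p A l (iw a) (iw b)" if a: "a \<in> {1..n}" and b: "b \<in> {1..n}" and s: "same_part p A l a b" for a b
    proof (rule ccontr)
      assume ns: "\<not> same_part p A l (iw a) (iw b)"
      obtain x where x: "x \<in> Ukf n p A l" "x (iw a) \<noteq> x (iw b)" using sep[OF iwin[OF a] iwin[OF b] ns] by blast
      have "perm_act w x \<in> Ukf n p A l" using inv x(1) by blast
      then have "perm_act w x a = perm_act w x b" using a b s unfolding Ukf_def by blast
      then show False using x(2) unfolding perm_act_def iw_def by simp
    qed
    have bw: "same_part p A l a b" if a: "a \<in> {1..n}" and b: "b \<in> {1..n}" and s: "same_part p A l (iw a) (iw b)" for a b
      using count_conv[of iw "{1..n}" "same_part p A l", OF iw _ fw a b s] by simp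
    show "\<forall>a\<in>{1..n}. \<forall>b\<in>{1..n}. same_part p A l a b \<longleftrightarrow> same_part p A l (w a) (w b)"
    proof (intro ballI iffI)
      fix a b assume a: "a \<in> {1..n}" and b: "b \<in> {1..n}"
      {
        assume "same_part p A l a b"
        then show "same_part p A l (w a) (w b)" using bw[OF win[OF a] win[OF b]] iww by simp
      next
        assume "same_part p A l (w a) (w b)"
        then show "same_part p A l a b" using fw[OF win[OF a] win[OF b]] iww by simp
      }
    qed
  }
  {
    assume pr: "\<forall>a\<in>{1..n}. \<forall>b\<in>{1..n}. same_part p A l a b \<longleftrightarrow> same_part p A l (w a) (w b)"
    show "perm_act w ` Ukf n p A l \<subseteq> Ukf n p A l"
    proof
      fix y assume "y \<in> perm_act w ` Ukf n p A l"
      then obtain x where x: "x \<in> Ukf n p A l" "y = perm_act w x" by blast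
      have yv: "y c = x (iw c)" for c unfolding x(2) perm_act_def iw_def by simp
      have xo: "\<forall>c. c \<notin> {1..n} \<longrightarrow> x c = 0" and xs: "(\<Sum>c=1..n. x c) = 0"
        and xc: "\<forall>c\<in>{1..n}. \<forall>d\<in>{1..n}. same_part p A l c d \<longrightarrow> x c = x d"
        using x(1) unfolding Ukf_def cartan_t_def by auto
      have "\<forall>c. c \<notin> {1..n} \<longrightarrow> y c = 0" using xo permutes_not_in[OF iw] yv by simp
      moreover have "(\<Sum>c=1..n. y c) = 0"
      proof -
        have "(\<Sum>c=1..n. y c) = (\<Sum>c=1..n. (x \<circ> iw) c)" using yv by simp
        also have "... = (\<Sum>c=1..n. x c)" using sum.permute[OF iw, of x] by simp
        finally show ?thesis using xs by simp
      qed
      moreover have "\<forall>c\<in>{1..n}. \<forall>d\<in>{1..n}. same_part p A l c d \<longrightarrow> y c = y d"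
      proof (intro ballI impI)
        fix c d assume c: "c \<in> {1..n}" and d: "d \<in> {1..n}" and s: "same_part p A l c d"
        have "same_part p A l (iw c) (iw d)" using pr iwin[OF c] iwin[OF d] s wiw by metis
        then show "y c = y d" using xc iwin[OF c] iwin[OF d] yv by simp
      qed
      ultimately show "y \<in> Ukf n p A l" unfolding Ukf_def cartan_t_def by blast
    qed
  }
qed

lemma stab_SG: "stab_group n p A = SG p A {1..n}"
proof -
  have "carrier (stab_group n p A) = carrier (SG p A {1..n})"
  proof (intro equalityI subsetI)
    fix w assume "w \<in> carrier (stab_group n p A)"
    then have w: "w permutes {1..n}" and inv: "\<forall>l\<in>{1..p}. perm_act w ` Ukf n p A l \<subseteq> Ukf n p A l"
      unfolding stab_group_def by auto
    have "pres p A w {1..n}" unfolding pres_def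
    proof (intro allI impI ballI)
      fix l a b :: nat assume l: "1 \<le> l" and a: "a \<in> {1..n}" and b: "b \<in> {1..n}"
      show "same_part p A l a b \<longleftrightarrow> same_part p A l (w a) (w b)"
      proof (cases "l \<le> p")
        case True then show ?thesis using inv l Ukf_inv_iff[OF w] a b by auto
      next
        case False then show ?thesis using same_part_top by simp
      qed
    qed
    then show "w \<in> carrier (SG p A {1..n})" unfolding SG_def using w by simp
  next
    fix w assume "w \<in> carrier (SG p A {1..n})"
    then have w: "w permutes {1..n}" and pw: "pres p A w {1..n}" unfolding SG_def by auto
    have "\<forall>l\<in>{1..p}. perm_act w ` Ukf n p A l \<subseteq> Ukf n p A l"
      using Ukf_inv_iff[OF w] pw unfolding pres_def by auto
    then show "w \<in> carrier (stab_group n p A)" unfolding stab_group_def using w by simp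
  qed
  then show ?thesis unfolding stab_group_def SG_def by simp
qed

end

context
  fixes n p :: nat and A :: "nat \<Rightarrow> nat \<Rightarrow> complex"
  assumes n1: "n \<ge> 1" and p1: "p \<ge> 1"
begin

lemma main_base:
  assumes a0: "a0 \<in> {1..n}"
  shows "SG p A (Pt n p A 1 a0) \<cong> atilde_aux k (ST n p A 1 (Pt n p A 1 a0))"
proof -
  define M where "M = Pt n p A 1 a0"
  have nodes: "rt_nodes (ST n p A 1 M) = {(1, M)}" unfolding M_def using ST_single[OF n1 p1 a0] .
  have at: "atilde_aux k (ST n p A 1 M) = gsym (card M)"
  proof (cases k)
    case 0 then show ?thesis by (simp add: FT_rank[OF n1 p1])
  next
    case (Suc k') then show ?thesis using nodes by (simp add: FT_rank[OF n1 p1])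
  qed
  have pr: "pres p A w M" if w: "w permutes M" for w
    unfolding pres_def
  proof (intro allI impI ballI)
    fix l a b :: nat assume l: "1 \<le> l" and a: "a \<in> M" and b: "b \<in> M"
    have wa: "w a \<in> M" "w b \<in> M" using permutes_in_image[OF w] a b by auto
    have "same_part p A 1 a b" using a b same_part_sym same_part_trans unfolding M_def by blast
    moreover have "same_part p A 1 (w a) (w b)" using wa same_part_sym same_part_trans unfolding M_def by blast
    ultimately show "same_part p A l a b \<longleftrightarrow> same_part p A l (w a) (w b)" using same_part_mono l by blast
  qed
  have "SG p A M = \<lparr>carrier = {w. w permutes M}, mult = (\<circ>), one = id\<rparr>"
    unfolding SG_def using pr by auto
  moreover have "finite M" unfolding M_def by simp
  ultimately have "SG p A M \<cong> symg (card M)" using iso_perm_symg by simp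
  also have "symg (card M) \<cong> gsym (card M)" unfolding gsym_def
    by (rule iso_transport, simp add: inj_on_def)
  finally have "SG p A M \<cong> gsym (card M)" .
  then show ?thesis using at unfolding M_def by simp
qed

lemma main_ind:
  "1 \<le> m \<Longrightarrow> m \<le> p + 1 \<Longrightarrow> a0 \<in> {1..n} \<Longrightarrow> m - 1 \<le> k \<Longrightarrow>
   SG p A (Pt n p A m a0) \<cong> atilde_aux k (ST n p A m (Pt n p A m a0))"
proof (induction m arbitrary: a0 k)
  case 0 then show ?case by simp
next
  case (Suc m)
  show ?case
  proof (cases "m = 0")
    case True then show ?thesis using main_base Suc.prems by simp
  next
    case False
    have m1: "1 \<le> m" using False by simp
    have m2: "2 \<le> Suc m" using m1 by simp
    have mp: "Suc m \<le> p + 1" using Suc.prems by simp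
    have a0: "a0 \<in> {1..n}" using Suc.prems by simp
    obtain k' where k: "k = Suc k'" "m - 1 \<le> k'" using Suc.prems(4) m1 by (cases k, auto)
    define M where "M = Pt n p A (Suc m) a0"
    define T where "T = ST n p A (Suc m) M"
    have g: "gt T" unfolding T_def M_def using ST_gt[OF n1 p1 mp _ a0] by simp
    have C: "rt_children T = {(m, Pt n p A m a) | a. a \<in> M}"
      unfolding T_def M_def using ST_children[OF n1 p1 m2 mp a0] by simp
    have M1: "M \<subseteq> {1..n}" unfolding M_def by auto
    have Tr: "rt_root T = (Suc m, M)" unfolding T_def by simp
    have cn: "(m, Pt n p A m a0) \<in> rt_nodes T" using C children_sub[OF g] Pt_self[OF n1 p1 a0] unfolding M_def by blast
    have nr: "rt_nodes T \<noteq> {rt_root T}" using cn Tr by auto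
    define cs where "cs = rt_some_reps T"
    have at: "atilde_aux k T = gprod (map (\<lambda>c. gwreath (rt_mult T c) (atilde_aux k' (rt_subtree T c))) cs)"
      unfolding k(1) cs_def using nr by simp
    have subT: "rt_subtree T (m, Pt n p A m a) = ST n p A m (Pt n p A m a)" if a: "a \<in> M" for a
    proof -
      have "(m, Pt n p A m a) \<in> rt_nodes T" using C children_sub[OF g] a by blast
      then show ?thesis unfolding T_def using sub_sub[OF gt_FT[OF n1 p1]] by blast
    qed
    interpret sr: rbij "rt_children T" snd "sIso p A"
      unfolding T_def M_def using stab_rbij[OF n1 p1 m2 mp a0] .
    have key: "sIso p A c d \<noteq> {} \<longleftrightarrow> rt_isomorphic (rt_subtree T c) (rt_subtree T d)"
      if c: "c \<in> rt_children T" and d: "d \<in> rt_children T" for c d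
    proof -
      obtain a where a: "c = (m, Pt n p A m a)" "a \<in> M" using c C by blast
      obtain b where b: "d = (m, Pt n p A m b)" "b \<in> M" using d C by blast
      have ab: "a \<in> {1..n}" "b \<in> {1..n}" using a b M1 by auto
      have mm: "m \<le> p + 1" using mp by simp
      show ?thesis
      proof
        assume "sIso p A c d \<noteq> {}"
        then obtain w where "w \<in> rb (Pt n p A m a) (Pt n p A m b)" "pres p A w (Pt n p A m a)"
          unfolding sIso_def a b by auto
        then show "rt_isomorphic (rt_subtree T c) (rt_subtree T d)"
          unfolding a(1) b(1) subT[OF a(2)] subT[OF b(2)] using treeiso_of_pres[OF n1 p1 m1 mm ab] by blast
      next
        assume "rt_isomorphic (rt_subtree T c) (rt_subtree T d)"
        then obtain f where "rt_iso (ST n p A m (Pt n p A m a)) (ST n p A m (Pt n p A m b)) f"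
          unfolding a(1) b(1) subT[OF a(2)] subT[OF b(2)] rt_isomorphic_def by blast
        then obtain w where "w \<in> rb (Pt n p A m a) (Pt n p A m b)" "pres p A w (Pt n p A m a)"
          using pres_of_treeiso[OF n1 p1 m1 mm ab] by blast
        then show "sIso p A c d \<noteq> {}" unfolding sIso_def a b by auto
      qed
    qed
    have r: "rt_reps T cs" unfolding cs_def using some_reps[OF g] .
    have csC: "set cs \<subseteq> rt_children T" using r unfolding rt_reps_def by blast
    interpret rr: rbij_reps "rt_children T" snd "sIso p A" cs "rt_mult T" "\<lambda>c. SG p A (snd c)"
    proof
      show "set cs \<subseteq> rt_children T" using csC .
      show "\<exists>d\<in>set cs. sIso p A c d \<noteq> {}" if c: "c \<in> rt_children T" for c
      proof -
        obtain d where "d \<in> set cs" "rt_isomorphic (rt_subtree T c) (rt_subtree T d)"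
          using r c unfolding rt_reps_def by blast
        then show ?thesis using key c csC by blast
      qed
      show "sIso p A (cs ! i) (cs ! j) = {}" if i: "i < length cs" and j: "j < length cs" and ij: "i \<noteq> j" for i j
      proof -
        have "\<not> rt_isomorphic (rt_subtree T (cs ! i)) (rt_subtree T (cs ! j))"
          using r i j ij unfolding rt_reps_def by blast
        then show ?thesis using key csC nth_mem[OF i] nth_mem[OF j] by blast
      qed
      show "rt_mult T c = card {d \<in> rt_children T. sIso p A d c \<noteq> {}}" if c: "c \<in> set cs" for c
      proof -
        have "{d \<in> rt_children T. sIso p A d c \<noteq> {}} = {d \<in> rt_children T. rt_isomorphic (rt_subtree T d) (rt_subtree T c)}"
          using key c csC by blast
        then show ?thesis unfolding rt_mult_def by simp
      qed
      show "carrier (SG p A (snd c)) = sIso p A c c" if "c \<in> set cs" for c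
        unfolding SG_def sIso_def using permutes_rb by auto
      show "x \<otimes>\<^bsub>SG p A (snd c)\<^esub> y = rcomp (snd c) x y"
        if c: "c \<in> set cs" and x: "x \<in> sIso p A c c" and y: "y \<in> sIso p A c c" for c x y
      proof -
        have yo: "\<forall>z. z \<notin> snd c \<longrightarrow> y z = z" using y unfolding sIso_def rb_def by blast
        have xo: "\<forall>z. z \<notin> snd c \<longrightarrow> x z = z" using x unfolding sIso_def rb_def by blast
        show ?thesis unfolding SG_def rcomp_def using yo xo by (auto intro!: ext)
      qed
    qed
    have "SG p A M \<cong> sr.glob" unfolding M_def T_def using SG_glob[OF n1 p1 m2 mp a0] by simp
    also have "sr.glob \<cong> dprod (map (\<lambda>c. wreath (rt_mult T c) (SG p A (snd c))) cs)" using rr.glob_dprod .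
    also have "dprod (map (\<lambda>c. wreath (rt_mult T c) (SG p A (snd c))) cs) \<cong>
        dprod (map (\<lambda>c. gwreath (rt_mult T c) (atilde_aux k' (rt_subtree T c))) cs)"
    proof (rule iso_dprod)
      show "length (map (\<lambda>c. wreath (rt_mult T c) (SG p A (snd c))) cs) =
          length (map (\<lambda>c. gwreath (rt_mult T c) (atilde_aux k' (rt_subtree T c))) cs)" by simp
      fix i assume "i < length (map (\<lambda>c. wreath (rt_mult T c) (SG p A (snd c))) cs)"
      then have i: "i < length cs" by simp
      define c where "c = cs ! i"
      have cC: "c \<in> rt_children T" unfolding c_def using csC nth_mem[OF i] by blast
      obtain a where a: "c = (m, Pt n p A m a)" "a \<in> M" using cC C by blast
      have a1: "a \<in> {1..n}" using a(2) M1 by blast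
      have "SG p A (Pt n p A m a) \<cong> atilde_aux k' (ST n p A m (Pt n p A m a))"
        using Suc.IH[OF m1 _ a1 k(2)] mp by simp
      then obtain h where h: "h \<in> iso (SG p A (snd c)) (atilde_aux k' (rt_subtree T c))"
        unfolding is_iso_def a(1) subT[OF a(2)] by auto
      have "wreath (rt_mult T c) (SG p A (snd c)) \<cong> wreath (rt_mult T c) (atilde_aux k' (rt_subtree T c))"
        using iso_wreath[OF h] .
      also have "wreath (rt_mult T c) (atilde_aux k' (rt_subtree T c)) \<cong> gwreath (rt_mult T c) (atilde_aux k' (rt_subtree T c))"
        unfolding gwreath_def by (rule iso_transport, auto simp: inj_on_def)
      finally show "map (\<lambda>c. wreath (rt_mult T c) (SG p A (snd c))) cs ! i \<cong>
          map (\<lambda>c. gwreath (rt_mult T c) (atilde_aux k' (rt_subtree T c))) cs ! i"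
        using i unfolding c_def by simp
    qed
    also have "dprod (map (\<lambda>c. gwreath (rt_mult T c) (atilde_aux k' (rt_subtree T c))) cs) \<cong>
        gprod (map (\<lambda>c. gwreath (rt_mult T c) (atilde_aux k' (rt_subtree T c))) cs)"
      unfolding gprod_def by (rule iso_transport, simp add: inj_on_def)
    finally have "SG p A M \<cong> atilde_aux k T" unfolding at .
    then show ?thesis unfolding T_def M_def .
  qed
qed

end

theorem theorem4p13:
  fixes n p :: nat and A :: "nat \<Rightarrow> nat \<Rightarrow> complex"
  assumes "n \<ge> 2" and "p \<ge> 1"
    and "\<forall>j\<in>{1..p}. (\<Sum>a=1..n. A j a) = 0"
  shows "stab_group n p A \<cong> atilde (fission_tree n p A)
    \<and> rt_aut (fission_tree n p A) \<cong>
        dprod (map (\<lambda>c. wreath (rt_mult (fission_tree n p A) c)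
                               (rt_aut (rt_subtree (fission_tree n p A) c)))
                   (rt_some_reps (fission_tree n p A)))
    \<and> (\<forall>T' :: 'v rtree. rt_nodes T' = {rt_root T'} \<longrightarrow>
         carrier (rt_aut T') = {one (rt_aut T')})"
proof (intro conjI)
  have n1: "n \<ge> 1" using assms(1) by simp
  note p1 = assms(2)
  have g: "gt (fission_tree n p A)" using gt_FT[OF n1 p1] .
  have one: "1 \<in> {1..n}" using n1 by simp
  have rt: "rt_root (fission_tree n p A) = (p + 1, Pt n p A (p + 1) 1)"
    using FT_root[OF n1 p1] root_part[OF n1 p1] by simp
  have FT: "fission_tree n p A = ST n p A (p + 1) (Pt n p A (p + 1) 1)"
    using sub_root_self[OF g] rt by simp
  have "(\<lambda>l. (l, Pt n p A l 1)) ` {1..p+1} \<subseteq> rt_nodes (fission_tree n p A)"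
    unfolding FT_nodes[OF n1 p1] parts_eq[OF n1 p1] using one by auto
  moreover have "card ((\<lambda>l. (l, Pt n p A l 1)) ` {1..p+1}) = p + 1"
    by (subst card_image, auto simp: inj_on_def)
  ultimately have cn: "p + 1 \<le> card (rt_nodes (fission_tree n p A))"
    using card_mono[OF gt_fin[OF g]] by metis
  have "SG p A (Pt n p A (p + 1) 1) \<cong> atilde_aux (card (rt_nodes (fission_tree n p A))) (ST n p A (p + 1) (Pt n p A (p + 1) 1))"
    using main_ind[OF n1 p1 _ _ one] cn by simp
  then show "stab_group n p A \<cong> atilde (fission_tree n p A)"
    unfolding atilde_def stab_SG[OF n1 p1] root_part[OF n1 p1, symmetric] using FT root_part[OF n1 p1] by simp
  show "rt_aut (fission_tree n p A) \<cong>
        dprod (map (\<lambda>c. wreath (rt_mult (fission_tree n p A) c)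
                               (rt_aut (rt_subtree (fission_tree n p A) c)))
                   (rt_some_reps (fission_tree n p A)))"
    using aut_decomp[OF g] .
  show "\<forall>T' :: 'v rtree. rt_nodes T' = {rt_root T'} \<longrightarrow> carrier (rt_aut T') = {one (rt_aut T')}"
  proof (intro allI impI)
    fix T' :: "'v rtree" assume s: "rt_nodes T' = {rt_root T'}"
    have "f = id" if f: "f \<in> carrier (rt_aut T')" for f
    proof
      fix x show "f x = id x"
      proof (cases "x = rt_root T'")
        case True then show ?thesis using f unfolding rt_aut_def rt_iso_def by simp
      next
        case False then show ?thesis using f s unfolding rt_aut_def by simp
      qed
    qed
    moreover have "id \<in> carrier (rt_aut T')" unfolding rt_aut_def rt_iso_def by (simp add: bij_betw_id)
    ultimately show "carrier (rt_aut T') = {one (rt_aut T')}" unfolding rt_aut_def by auto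
  qed
qed


end
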